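(* Let $k$ be a commutative ring, $n$ a positive integer and $R=(R^{ij}_{uv})\in M_n(k)\otimes M_n(k)$ a solution of the quantum Yang–Baxter equation $R^{12}R^{13}R^{23}=R^{23}R^{13}R^{12}$. Then the smash product $S_R(n)\#A(R)$ has the structure of an $S_R(n)$-bialgebroid with source, target, comultiplication and counit determined by $s(\xi_i)=\xi_i\#1$, $t(\xi_i)=\xi_u\#c^u_i$, $\Delta(\xi_i\#c^u_v)=\xi_i\#c^u_l\otimes_{S_R(n)}1\#c^l_v$, $\epsilon(\xi_i\#c^u_v)=\delta_{u,v}\xi_i$, for $i,u,v=1,\dots,n$ (summation over repeated indices).
   Context: Einstein summation convention. $A(R)$ (FRT bialgebra) is the $k$-algebra generated by $c^i_j$, $i,j=1,\dots,n$, subject to $R^{ij}_{vu}c^u_kc^v_l=R^{vu}_{lk}c^i_vc^j_u$ for all $i,j,k,l$, with matrix bialgebra structure $\Delta(c^i_j)=c^i_l\otimes c^l_j$, $\epsilon(c^i_j)=\delta_{ij}$. $S_R(n)$ is the $k$-algebra generated by $\xi_1,\dots,\xi_n$ subject to $\xi_u\xi_v=R^{li}_{uv}\xi_i\xi_l$ for all $u,v$. $S_R(n)$ is a left $A(R)$-module algebra and right $A(R)$-comodule via $c^j_v\cdot\xi_u=R^{ij}_{uv}\xi_i$ and $\xi_v\mapsto\xi_u\otimes c^u_v$. For a bialgebra $H$ and left $H$-module algebra $A$, the smash product $A\#H$ is $A\otimes H$ with product $(a\#g)(b\#h)=a(g_{(1)}\cdot b)\#g_{(2)}h$. An $A$-bialgebroid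 $(H,s,t,\Delta,\epsilon)$: $H$ a $k$-algebra, $s:A\to H$ an algebra map, $t:A\to H$ an anti-algebra map with $s(a)t(b)=t(b)s(a)$; $H$ is an $A$-bimodule via $a\cdot h=s(a)h$, $h\cdot a=t(a)h$, and $H\otimes_AH$ an $A$-bimodule via $a(g\otimes_Ah)b=s(a)g\otimes_At(b)h$; (B1) $\Delta:H\to H\otimes_AH$, $\epsilon:H\to A$ are $A$-bimodule maps forming a coassociative counital $A$-coring; (B2) $\mathrm{Im}\Delta\subseteq\Gamma:=\{\sum g^1\otimes_Ag^2:\sum g^1t(a)\otimes_Ag^2=\sum g^1\otimes_Ag^2s(a)\ \forall a\}$ and $\Delta:H\to\Gamma$ is an algebra map for the componentwise product on $\Gamma$; (B3) $\epsilon(1_H)=1_A$ and $\epsilon(gh)=\epsilon(gs(\epsilon(h)))=\epsilon(gt(\epsilon(h)))$ for all $g,h\in H$. *)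

theory Defs
  imports "HOL-Library.Poly_Mapping"
begin

definition psmult :: "'k::comm_ring_1 \<Rightarrow> ('a \<Rightarrow>\<^sub>0 'k) \<Rightarrow> ('a \<Rightarrow>\<^sub>0 'k)" where
  "psmult c p = (\<Sum>x\<in>Poly_Mapping.keys p. Poly_Mapping.single x (c * Poly_Mapping.lookup p x))"

definition bas :: "'a \<Rightarrow> ('a \<Rightarrow>\<^sub>0 'k::comm_ring_1)" where
  "bas x = Poly_Mapping.single x 1"

definition lin :: "('a \<Rightarrow> ('b \<Rightarrow>\<^sub>0 'k::comm_ring_1)) \<Rightarrow> ('a \<Rightarrow>\<^sub>0 'k) \<Rightarrow> ('b \<Rightarrow>\<^sub>0 'k)" where
  "lin f p = (\<Sum>x\<in>Poly_Mapping.keys p. psmult (Poly_Mapping.lookup p x) (f x))"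

definition bilin :: "('a \<Rightarrow> 'b \<Rightarrow> ('c \<Rightarrow>\<^sub>0 'k::comm_ring_1)) \<Rightarrow> ('a \<Rightarrow>\<^sub>0 'k) \<Rightarrow> ('b \<Rightarrow>\<^sub>0 'k) \<Rightarrow> ('c \<Rightarrow>\<^sub>0 'k)" where
  "bilin f p q = (\<Sum>x\<in>Poly_Mapping.keys p. \<Sum>y\<in>Poly_Mapping.keys q. psmult (Poly_Mapping.lookup p x * Poly_Mapping.lookup q y) (f x y))"

definition ptens :: "('a \<Rightarrow>\<^sub>0 'k::comm_ring_1) \<Rightarrow> ('b \<Rightarrow>\<^sub>0 'k) \<Rightarrow> ('a \<times> 'b \<Rightarrow>\<^sub>0 'k)" where
  "ptens p q = bilin (\<lambda>x y. bas (x, y)) p q"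

inductive_set kspan :: "('a \<Rightarrow>\<^sub>0 'k::comm_ring_1) set \<Rightarrow> ('a \<Rightarrow>\<^sub>0 'k) set" for G where
  kspan_zero: "0 \<in> kspan G"
| kspan_gen: "g \<in> G \<Longrightarrow> g \<in> kspan G"
| kspan_add: "x \<in> kspan G \<Longrightarrow> y \<in> kspan G \<Longrightarrow> x + y \<in> kspan G"
| kspan_smult: "x \<in> kspan G \<Longrightarrow> psmult c x \<in> kspan G"

definition fmul :: "('g list \<Rightarrow>\<^sub>0 'k::comm_ring_1) \<Rightarrow> ('g list \<Rightarrow>\<^sub>0 'k) \<Rightarrow> ('g list \<Rightarrow>\<^sub>0 'k)" where
  "fmul p q = bilin (\<lambda>x y. bas (x @ y)) p q"

definition fone :: "('g list \<Rightarrow>\<^sub>0 'k::comm_ring_1)" where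
  "fone = bas []"

definition fgen :: "'g \<Rightarrow> ('g list \<Rightarrow>\<^sub>0 'k::comm_ring_1)" where
  "fgen g = bas [g]"

definition fideal :: "('g list \<Rightarrow>\<^sub>0 'k::comm_ring_1) set \<Rightarrow> ('g list \<Rightarrow>\<^sub>0 'k) set" where
  "fideal Rel = kspan {fmul a (fmul r b) | a r b. r \<in> Rel}"

text \<open>\<open>R i j u v\<close> is the entry \<open>R^{ij}_{uv}\<close> of
  \<open>R = \<Sum> R^{ij}_{uv} E_{iu} \<otimes> E_{jv}\<close>; QYBE \<open>R^{12}R^{13}R^{23} = R^{23}R^{13}R^{12}\<close>
  written in coordinates.\<close>
definition QYBE :: "('n::finite \<Rightarrow> 'n \<Rightarrow> 'n \<Rightarrow> 'n \<Rightarrow> 'k::comm_ring_1) \<Rightarrow> bool" where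
  "QYBE R \<longleftrightarrow> (\<forall>x y z a b c.
     (\<Sum>i\<in>UNIV. \<Sum>j\<in>UNIV. \<Sum>k\<in>UNIV. R x y i j * R i z a k * R j k b c)
   = (\<Sum>i\<in>UNIV. \<Sum>j\<in>UNIV. \<Sum>k\<in>UNIV. R i j a b * R x k i c * R y z j k))"

text \<open>S_R(n): generators \<open>\<xi>_u\<close> (u :: 'n), relations \<open>\<xi>_u\<xi>_v = R^{li}_{uv}\<xi>_i\<xi>_l\<close>\<close>
definition SR_rel :: "('n::finite \<Rightarrow> 'n \<Rightarrow> 'n \<Rightarrow> 'n \<Rightarrow> 'k::comm_ring_1) \<Rightarrow> ('n list \<Rightarrow>\<^sub>0 'k) set" where
  "SR_rel R = {fmul (fgen u) (fgen v)
       - (\<Sum>i\<in>UNIV. \<Sum>l\<in>UNIV. psmult (R l i u v) (fmul (fgen i) (fgen l))) | u v. True}"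

definition SR_ker :: "('n::finite \<Rightarrow> 'n \<Rightarrow> 'n \<Rightarrow> 'n \<Rightarrow> 'k::comm_ring_1) \<Rightarrow> ('n list \<Rightarrow>\<^sub>0 'k) set" where
  "SR_ker R = fideal (SR_rel R)"

text \<open>A(R): generators \<open>c^i_j\<close> = (i,j), relations
  \<open>R^{ij}_{vu}c^u_kc^v_l = R^{vu}_{lk}c^i_vc^j_u\<close>\<close>
definition AR_rel :: "('n::finite \<Rightarrow> 'n \<Rightarrow> 'n \<Rightarrow> 'n \<Rightarrow> 'k::comm_ring_1) \<Rightarrow> (('n \<times> 'n) list \<Rightarrow>\<^sub>0 'k) set" where
  "AR_rel R = {(\<Sum>u\<in>UNIV. \<Sum>v\<in>UNIV. psmult (R i j v u) (fmul (fgen (u,k)) (fgen (v,l))))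
       - (\<Sum>u\<in>UNIV. \<Sum>v\<in>UNIV. psmult (R v u l k) (fmul (fgen (i,v)) (fgen (j,u)))) | i j k l. True}"

definition AR_ker :: "('n::finite \<Rightarrow> 'n \<Rightarrow> 'n \<Rightarrow> 'n \<Rightarrow> 'k::comm_ring_1) \<Rightarrow> (('n \<times> 'n) list \<Rightarrow>\<^sub>0 'k) set" where
  "AR_ker R = fideal (AR_rel R)"

text \<open>Comultiplication of A(R) on words: \<open>\<Delta>(c^i_j) = c^i_l \<otimes> c^l_j\<close>, multiplicative\<close>
primrec dA :: "('n::finite \<times> 'n) list \<Rightarrow> (('n \<times> 'n) list \<times> ('n \<times> 'n) list \<Rightarrow>\<^sub>0 'k::comm_ring_1)" where
  "dA [] = bas ([], [])"
| "dA (g # w) = (\<Sum>l\<in>UNIV. lin (\<lambda>(p, q). bas ((fst g, l) # p, (l, snd g) # q)) (dA w))"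

text \<open>Action of a generator \<open>c^j_v\<close> on a word in the \<open>\<xi>\<close>'s, via
  \<open>c^j_v\<cdot>\<xi>_u = R^{ij}_{uv}\<xi>_i\<close>, \<open>h\<cdot>(ab) = (h_1\<cdot>a)(h_2\<cdot>b)\<close>, \<open>h\<cdot>1 = \<epsilon>(h)1\<close>\<close>
fun acg :: "('n::finite \<Rightarrow> 'n \<Rightarrow> 'n \<Rightarrow> 'n \<Rightarrow> 'k::comm_ring_1) \<Rightarrow> 'n \<times> 'n \<Rightarrow> 'n list \<Rightarrow> ('n list \<Rightarrow>\<^sub>0 'k)" where
  "acg R g [] = (if fst g = snd g then fone else 0)"
| "acg R g (u # x) = (\<Sum>l\<in>UNIV. \<Sum>i\<in>UNIV. psmult (R i (fst g) u l) (fmul (fgen i) (acg R (l, snd g) x)))"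

primrec act :: "('n::finite \<Rightarrow> 'n \<Rightarrow> 'n \<Rightarrow> 'n \<Rightarrow> 'k::comm_ring_1) \<Rightarrow> ('n \<times> 'n) list \<Rightarrow> ('n list \<Rightarrow>\<^sub>0 'k) \<Rightarrow> ('n list \<Rightarrow>\<^sub>0 'k)" where
  "act R [] p = p"
| "act R (g # w) p = lin (acg R g) (act R w p)"

text \<open>Represented on the free module with basis (word in \<open>\<xi>\<close>, word in \<open>c\<close>),
  i.e. \<open>F_S \<otimes> F_A\<close>, modulo \<open>I_S \<otimes> F_A + F_S \<otimes> I_A\<close>;
  \<open>(a#g)(b#h) = a(g_1\<cdot>b) # g_2h\<close>.\<close>
definition smash_mul :: "('n::finite \<Rightarrow> 'n \<Rightarrow> 'n \<Rightarrow> 'n \<Rightarrow> 'k::comm_ring_1)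
   \<Rightarrow> ('n list \<times> ('n \<times> 'n) list \<Rightarrow>\<^sub>0 'k) \<Rightarrow> ('n list \<times> ('n \<times> 'n) list \<Rightarrow>\<^sub>0 'k) \<Rightarrow> ('n list \<times> ('n \<times> 'n) list \<Rightarrow>\<^sub>0 'k)" where
  "smash_mul R = bilin (\<lambda>(x, w) (y, w').
      lin (\<lambda>(w1, w2). ptens (fmul (bas x) (act R w1 (bas y))) (bas (w2 @ w'))) (dA w))"

definition smash_one :: "('n list \<times> ('n \<times> 'n) list \<Rightarrow>\<^sub>0 'k::comm_ring_1)" where
  "smash_one = bas ([], [])"

definition smash_ker :: "('n::finite \<Rightarrow> 'n \<Rightarrow> 'n \<Rightarrow> 'n \<Rightarrow> 'k::comm_ring_1) \<Rightarrow> ('n list \<times> ('n \<times> 'n) list \<Rightarrow>\<^sub>0 'k) set" where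
  "smash_ker R = kspan ({ptens x y | x y. x \<in> SR_ker R} \<union> {ptens x y | x y. y \<in> AR_ker R})"

section \<open>Bialgebroids (algebras given as free module modulo a kernel)\<close>

text \<open>\<open>(mul, one)\<close> induces a k-algebra structure on the quotient by \<open>N\<close>\<close>
definition quot_alg :: "(('a \<Rightarrow>\<^sub>0 'k::comm_ring_1) \<Rightarrow> ('a \<Rightarrow>\<^sub>0 'k) \<Rightarrow> ('a \<Rightarrow>\<^sub>0 'k)) \<Rightarrow> ('a \<Rightarrow>\<^sub>0 'k) \<Rightarrow> ('a \<Rightarrow>\<^sub>0 'k) set \<Rightarrow> bool" where
  "quot_alg mul one N \<longleftrightarrow>
     0 \<in> N \<and> (\<forall>x\<in>N. \<forall>y\<in>N. x + y \<in> N) \<and> (\<forall>c. \<forall>x\<in>N. psmult c x \<in> N) \<and>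
     (\<forall>x\<in>N. \<forall>y. mul x y \<in> N \<and> mul y x \<in> N) \<and>
     (\<forall>x y z. mul (x + y) z - (mul x z + mul y z) \<in> N \<and> mul z (x + y) - (mul z x + mul z y) \<in> N) \<and>
     (\<forall>c x y. mul (psmult c x) y - psmult c (mul x y) \<in> N \<and> mul x (psmult c y) - psmult c (mul x y) \<in> N) \<and>
     (\<forall>x y z. mul (mul x y) z - mul x (mul y z) \<in> N) \<and>
     (\<forall>x. mul one x - x \<in> N \<and> mul x one - x \<in> N)"

text \<open>\<open>f\<close> induces a k-linear map between the quotients by \<open>N\<close> and \<open>N'\<close>\<close>
definition lin_mod :: "('a \<Rightarrow>\<^sub>0 'k::comm_ring_1) set \<Rightarrow> (('a \<Rightarrow>\<^sub>0 'k) \<Rightarrow> ('b \<Rightarrow>\<^sub>0 'k)) \<Rightarrow> ('b \<Rightarrow>\<^sub>0 'k) set \<Rightarrow> bool" where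
  "lin_mod N f N' \<longleftrightarrow> (\<forall>x\<in>N. f x \<in> N') \<and>
     (\<forall>x y. f (x + y) - (f x + f y) \<in> N') \<and> (\<forall>c x. f (psmult c x) - psmult c (f x) \<in> N')"

text \<open>Kernel presenting \<open>H \<otimes>_A H\<close> (with \<open>h\<cdot>a = t(a)h\<close>, \<open>a\<cdot>h = s(a)h\<close>)\<close>
definition tker2 :: "(('h \<Rightarrow>\<^sub>0 'k::comm_ring_1) \<Rightarrow> ('h \<Rightarrow>\<^sub>0 'k) \<Rightarrow> ('h \<Rightarrow>\<^sub>0 'k)) \<Rightarrow> ('h \<Rightarrow>\<^sub>0 'k) set
    \<Rightarrow> (('a \<Rightarrow>\<^sub>0 'k) \<Rightarrow> ('h \<Rightarrow>\<^sub>0 'k)) \<Rightarrow> (('a \<Rightarrow>\<^sub>0 'k) \<Rightarrow> ('h \<Rightarrow>\<^sub>0 'k)) \<Rightarrow> ('h \<times> 'h \<Rightarrow>\<^sub>0 'k) set" where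
  "tker2 mulH NH s t = kspan ({ptens x y | x y. x \<in> NH} \<union> {ptens x y | x y. y \<in> NH}
      \<union> {ptens (mulH (t a) g) h - ptens g (mulH (s a) h) | a g h. True})"

text \<open>Kernel presenting \<open>H \<otimes>_A H \<otimes>_A H\<close>\<close>
definition tker3 :: "(('h \<Rightarrow>\<^sub>0 'k::comm_ring_1) \<Rightarrow> ('h \<Rightarrow>\<^sub>0 'k) \<Rightarrow> ('h \<Rightarrow>\<^sub>0 'k)) \<Rightarrow> ('h \<Rightarrow>\<^sub>0 'k) set
    \<Rightarrow> (('a \<Rightarrow>\<^sub>0 'k) \<Rightarrow> ('h \<Rightarrow>\<^sub>0 'k)) \<Rightarrow> (('a \<Rightarrow>\<^sub>0 'k) \<Rightarrow> ('h \<Rightarrow>\<^sub>0 'k)) \<Rightarrow> ('h \<times> 'h \<times> 'h \<Rightarrow>\<^sub>0 'k) set" where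
  "tker3 mulH NH s t = kspan ({ptens x (ptens y z) | x y z. x \<in> NH}
      \<union> {ptens x (ptens y z) | x y z. y \<in> NH} \<union> {ptens x (ptens y z) | x y z. z \<in> NH}
      \<union> {ptens (mulH (t a) x) (ptens y z) - ptens x (ptens (mulH (s a) y) z) | a x y z. True}
      \<union> {ptens x (ptens (mulH (t a) y) z) - ptens x (ptens y (mulH (s a) z)) | a x y z. True})"

definition bialgebroid ::
  "(('a \<Rightarrow>\<^sub>0 'k::comm_ring_1) \<Rightarrow> ('a \<Rightarrow>\<^sub>0 'k) \<Rightarrow> ('a \<Rightarrow>\<^sub>0 'k)) \<Rightarrow> ('a \<Rightarrow>\<^sub>0 'k) \<Rightarrow> ('a \<Rightarrow>\<^sub>0 'k) set \<Rightarrow>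
   (('h \<Rightarrow>\<^sub>0 'k) \<Rightarrow> ('h \<Rightarrow>\<^sub>0 'k) \<Rightarrow> ('h \<Rightarrow>\<^sub>0 'k)) \<Rightarrow> ('h \<Rightarrow>\<^sub>0 'k) \<Rightarrow> ('h \<Rightarrow>\<^sub>0 'k) set \<Rightarrow>
   (('a \<Rightarrow>\<^sub>0 'k) \<Rightarrow> ('h \<Rightarrow>\<^sub>0 'k)) \<Rightarrow> (('a \<Rightarrow>\<^sub>0 'k) \<Rightarrow> ('h \<Rightarrow>\<^sub>0 'k)) \<Rightarrow>
   (('h \<Rightarrow>\<^sub>0 'k) \<Rightarrow> ('h \<times> 'h \<Rightarrow>\<^sub>0 'k)) \<Rightarrow> (('h \<Rightarrow>\<^sub>0 'k) \<Rightarrow> ('a \<Rightarrow>\<^sub>0 'k)) \<Rightarrow> bool" where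
  "bialgebroid mulA oneA NA mulH oneH NH s t D E \<longleftrightarrow>
   quot_alg mulA oneA NA \<and> quot_alg mulH oneH NH \<and>
   \<comment> \<open>s algebra map, t anti-algebra map, commuting images\<close>
   lin_mod NA s NH \<and> (\<forall>a b. s (mulA a b) - mulH (s a) (s b) \<in> NH) \<and> s oneA - oneH \<in> NH \<and>
   lin_mod NA t NH \<and> (\<forall>a b. t (mulA a b) - mulH (t b) (t a) \<in> NH) \<and> t oneA - oneH \<in> NH \<and>
   (\<forall>a b. mulH (s a) (t b) - mulH (t b) (s a) \<in> NH) \<and>
   \<comment> \<open>(B1) A-coring structure\<close>
   lin_mod NH D (tker2 mulH NH s t) \<and> lin_mod NH E NA \<and>
   (\<forall>a b h. D (mulH (s a) (mulH (t b) h))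
      - lin (\<lambda>(x, y). ptens (mulH (s a) (bas x)) (mulH (t b) (bas y))) (D h) \<in> tker2 mulH NH s t) \<and>
   (\<forall>a b h. E (mulH (s a) (mulH (t b) h)) - mulA a (mulA (E h) b) \<in> NA) \<and>
   (\<forall>h. lin (\<lambda>(x, y). lin (\<lambda>(p, q). bas (p, q, y)) (D (bas x))) (D h)
      - lin (\<lambda>(x, y). ptens (bas x) (D (bas y))) (D h) \<in> tker3 mulH NH s t) \<and>
   (\<forall>h. lin (\<lambda>(x, y). mulH (s (E (bas x))) (bas y)) (D h) - h \<in> NH) \<and>
   (\<forall>h. lin (\<lambda>(x, y). mulH (t (E (bas y))) (bas x)) (D h) - h \<in> NH) \<and>
   \<comment> \<open>(B2) image in the Takeuchi product, multiplicative\<close>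
   (\<forall>h a. lin (\<lambda>(x, y). ptens (mulH (bas x) (t a)) (bas y)) (D h)
      - lin (\<lambda>(x, y). ptens (bas x) (mulH (bas y) (s a))) (D h) \<in> tker2 mulH NH s t) \<and>
   (\<forall>g h. D (mulH g h) - bilin (\<lambda>(x, y) (x', y'). ptens (mulH (bas x) (bas x')) (mulH (bas y) (bas y')))
      (D g) (D h) \<in> tker2 mulH NH s t) \<and>
   D oneH - ptens oneH oneH \<in> tker2 mulH NH s t \<and>
   \<comment> \<open>(B3)\<close>
   E oneH - oneA \<in> NA \<and>
   (\<forall>g h. E (mulH g h) - E (mulH g (s (E h))) \<in> NA \<and> E (mulH g h) - E (mulH g (t (E h))) \<in> NA)"

end

theory Submission
  imports Defs HOL.Modules
begin


lemma lookup_psmult[simp]: "Poly_Mapping.lookup (psmult c p) x = c * Poly_Mapping.lookup p x"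
proof -
  have "Poly_Mapping.lookup (psmult c p) x =
     (\<Sum>y\<in>Poly_Mapping.keys p. (c * Poly_Mapping.lookup p y when y = x))"
    unfolding psmult_def by (simp add: lookup_sum lookup_single)
  also have "\<dots> = c * Poly_Mapping.lookup p x"
  proof (cases "x \<in> Poly_Mapping.keys p")
    case True
    then show ?thesis by (simp add: sum.delta' when_def)
  next
    case False
    then show ?thesis
      by (auto simp: when_def in_keys_iff intro!: sum.neutral)
  qed
  finally show ?thesis .
qed

interpretation pm: module psmult
  by standard (auto intro!: poly_mapping_eqI simp: lookup_add algebra_simps)

lemma lookup_bas: "Poly_Mapping.lookup (bas x) y = (if x = y then 1 else 0)"
  by (simp add: bas_def lookup_single when_def)

lemma keys_bas[simp]: "Poly_Mapping.keys (bas x :: _ \<Rightarrow>\<^sub>0 'k::comm_ring_1) = {x}"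
  by (simp add: bas_def)

lemma keys_psmult: "Poly_Mapping.keys (psmult c p) \<subseteq> Poly_Mapping.keys p"
  by (auto simp: in_keys_iff)

lemma lin_superset:
  assumes "finite A" "Poly_Mapping.keys p \<subseteq> A"
  shows "lin f p = (\<Sum>x\<in>A. psmult (Poly_Mapping.lookup p x) (f x))"
  unfolding lin_def
  by (rule sum.mono_neutral_left) (use assms in \<open>auto simp: in_keys_iff\<close>)

lemma lin_add: "lin f (p + q) = lin f p + lin f q"
proof -
  let ?A = "Poly_Mapping.keys p \<union> Poly_Mapping.keys q"
  have "Poly_Mapping.keys (p + q) \<subseteq> ?A" by (rule keys_add)
  then have "lin f (p + q) = (\<Sum>x\<in>?A. psmult (Poly_Mapping.lookup (p+q) x) (f x))"
    by (intro lin_superset) auto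
  also have "\<dots> = (\<Sum>x\<in>?A. psmult (Poly_Mapping.lookup p x) (f x)) + (\<Sum>x\<in>?A. psmult (Poly_Mapping.lookup q x) (f x))"
    by (simp add: lookup_add pm.scale_left_distrib sum.distrib)
  also have "\<dots> = lin f p + lin f q"
    by (subst (1 2) lin_superset[symmetric]) auto
  finally show ?thesis .
qed

lemma lin_psmult: "lin f (psmult c p) = psmult c (lin f p)"
proof -
  have "lin f (psmult c p) = (\<Sum>x\<in>Poly_Mapping.keys p. psmult (Poly_Mapping.lookup (psmult c p) x) (f x))"
    by (rule lin_superset) (auto simp: keys_psmult)
  then show ?thesis by (simp add: lin_def pm.scale_sum_right)
qed

lemma lin_zero[simp]: "lin f 0 = 0"
  by (simp add: lin_def)

lemma lin_bas[simp]: "lin f (bas x) = f x"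
  by (simp add: lin_def bas_def)

lemma lin_uminus: "lin f (- p) = - lin f p"
  using lin_psmult[of f "-1" p] by (simp add: pm.scale_minus_left[symmetric])

lemma psmult_minus1: "psmult (-1) p = - p"
  by (simp add: pm.scale_minus_left)

lemma lin_diff: "lin f (p - q) = lin f p - lin f q"
  using lin_add[of f p "-q"] by (simp add: lin_uminus)

lemma lin_sum: "lin f (sum g A) = (\<Sum>a\<in>A. lin f (g a))"
  by (induct A rule: infinite_finite_induct) (auto simp: lin_add)

lemma lin_cong: "(\<And>x. x \<in> Poly_Mapping.keys p \<Longrightarrow> f x = g x) \<Longrightarrow> lin f p = lin g p"
  by (simp add: lin_def)

lemma lin_expand: "lin bas p = p"
proof (rule poly_mapping_eqI)
  fix y
  have "Poly_Mapping.lookup (lin bas p) y = (\<Sum>x\<in>Poly_Mapping.keys p. (if x = y then Poly_Mapping.lookup p x else 0))"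
    by (simp add: lin_def lookup_sum lookup_bas if_distrib cong: if_cong)
  also have "\<dots> = Poly_Mapping.lookup p y"
    by (simp add: sum.delta in_keys_iff)
  finally show "Poly_Mapping.lookup (lin bas p) y = Poly_Mapping.lookup p y" .
qed

lemma lin_zero_fun[simp]: "lin (\<lambda>x. 0) p = 0"
  by (simp add: lin_def)

lemma lin_add_fun: "lin (\<lambda>x. f x + g x) p = lin f p + lin g p"
  by (simp add: lin_def pm.scale_right_distrib sum.distrib)

lemma lin_diff_fun: "lin (\<lambda>x. f x - g x) p = lin f p - lin g p"
  by (simp add: lin_def pm.scale_right_diff_distrib sum_subtractf)

lemma lin_sum_fun: "lin (\<lambda>x. \<Sum>a\<in>A. f a x) p = (\<Sum>a\<in>A. lin (f a) p)"
  by (induct A rule: infinite_finite_induct) (auto simp: lin_add_fun)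

lemma lin_psmult_fun: "lin (\<lambda>x. psmult c (f x)) p = psmult c (lin f p)"
  by (simp add: lin_def pm.scale_sum_right mult.commute)

definition islin :: "(('a \<Rightarrow>\<^sub>0 'k::comm_ring_1) \<Rightarrow> ('b \<Rightarrow>\<^sub>0 'k)) \<Rightarrow> bool" where
  "islin F \<longleftrightarrow> (\<forall>p q. F (p + q) = F p + F q) \<and> (\<forall>c p. F (psmult c p) = psmult c (F p))"

lemma islin_lin[simp]: "islin (lin f)"
  by (simp add: islin_def lin_add lin_psmult)

lemma islin_zero: "islin F \<Longrightarrow> F 0 = 0"
  unfolding islin_def by (metis add_cancel_right_right)

lemma islin_sum: "islin F \<Longrightarrow> F (sum g A) = (\<Sum>a\<in>A. F (g a))"
  by (induct A rule: infinite_finite_induct) (auto simp: islin_zero islin_def)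

lemma islin_eq_lin: assumes "islin F" shows "F p = lin (\<lambda>x. F (bas x)) p"
proof -
  have "F p = F (lin bas p)" by (simp add: lin_expand)
  also have "\<dots> = (\<Sum>x\<in>Poly_Mapping.keys p. F (psmult (Poly_Mapping.lookup p x) (bas x)))"
    by (simp add: lin_def islin_sum[OF assms])
  also have "\<dots> = lin (\<lambda>x. F (bas x)) p"
    using assms by (simp add: lin_def islin_def)
  finally show ?thesis .
qed

lemma islin_minus: assumes "islin F" shows "F (p - q) = F p - F q"
proof -
  have "F (p - q) + F q = F p" using assms unfolding islin_def by (metis diff_add_cancel)
  then show ?thesis by (simp add: eq_diff_eq)
qed

lemma islin_uminus: "islin F \<Longrightarrow> F (- p) = - F p"
  using islin_minus[of F 0 p] by (simp add: islin_zero)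

lemma lin_eqI: "islin F \<Longrightarrow> islin G \<Longrightarrow> (\<And>x. F (bas x) = G (bas x)) \<Longrightarrow> F p = G p"
  by (subst (1 2) islin_eq_lin[where p=p]) auto

lemma islin_comp: "islin F \<Longrightarrow> islin G \<Longrightarrow> islin (\<lambda>p. F (G p))"
  by (simp add: islin_def)

lemma lin_lin: "lin g (lin f p) = lin (\<lambda>x. lin g (f x)) p"
  by (rule lin_eqI[where p=p]) (auto intro: islin_comp)

lemma lin_comp_islin: "islin F \<Longrightarrow> F (lin f p) = lin (\<lambda>x. F (f x)) p"
  by (rule lin_eqI[where p=p]) (auto intro: islin_comp)

lemma bilin_lin: "bilin f p q = lin (\<lambda>x. lin (\<lambda>y. f x y) q) p"
  by (simp add: bilin_def lin_def pm.scale_sum_right mult.commute)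

lemma bilin_bas[simp]: "bilin f (bas x) (bas y) = f x y"
  by (simp add: bilin_lin)

lemma islin_bilin1: "islin (\<lambda>p. bilin f p q)"
  by (simp add: bilin_lin)

lemma islin_bilin2: "islin (\<lambda>q. bilin f p q)"
  unfolding bilin_lin islin_def
  by (auto simp: lin_add lin_psmult lin_add_fun lin_psmult_fun)

lemma bilin_add1: "bilin f (p + p') q = bilin f p q + bilin f p' q"
  and bilin_add2: "bilin f p (q + q') = bilin f p q + bilin f p q'"
  and bilin_psmult1: "bilin f (psmult c p) q = psmult c (bilin f p q)"
  and bilin_psmult2: "bilin f p (psmult c q) = psmult c (bilin f p q)"
  using islin_bilin1[of f q] islin_bilin2[of f p] unfolding islin_def by auto

lemma bilin_diff1: "bilin f (p - p') q = bilin f p q - bilin f p' q"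
  and bilin_diff2: "bilin f p (q - q') = bilin f p q - bilin f p q'"
  and bilin_sum1: "bilin f (sum g A) q = (\<Sum>a\<in>A. bilin f (g a) q)"
  and bilin_sum2: "bilin f p (sum g A) = (\<Sum>a\<in>A. bilin f p (g a))"
  and bilin_zero1[simp]: "bilin f 0 q = 0"
  and bilin_zero2[simp]: "bilin f p 0 = 0"
  and bilin_uminus1: "bilin f (- p) q = - bilin f p q"
  and bilin_uminus2: "bilin f p (- q) = - bilin f p q"
  using islin_minus[OF islin_bilin1[of f q]] islin_minus[OF islin_bilin2[of f p]]
    islin_sum[OF islin_bilin1[of f q]] islin_sum[OF islin_bilin2[of f p]]
    islin_zero[OF islin_bilin1[of f q]] islin_zero[OF islin_bilin2[of f p]]
    islin_uminus[OF islin_bilin1[of f q]] islin_uminus[OF islin_bilin2[of f p]]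
  by auto

lemma bilin_bas1: "bilin f (bas x) q = lin (f x) q"
  by (simp add: bilin_lin)

lemma bilin_bas2: "bilin f p (bas y) = lin (\<lambda>x. f x y) p"
  by (simp add: bilin_lin)

lemma bilin_eqI:
  assumes "\<And>q. islin (\<lambda>p. B p q)" "\<And>p. islin (\<lambda>q. B p q)"
    "\<And>x y. B (bas x) (bas y) = f x y"
  shows "B p q = bilin f p q"
proof -
  have "B p q = lin (\<lambda>x. B (bas x) q) p" by (rule islin_eq_lin[OF assms(1)])
  also have "\<dots> = lin (\<lambda>x. lin (\<lambda>y. f x y) q) p"
    by (rule lin_cong, subst islin_eq_lin[OF assms(2)]) (simp add: assms(3))
  finally show ?thesis by (simp add: bilin_lin)
qed

lemma kspan_diff: "x \<in> kspan G \<Longrightarrow> y \<in> kspan G \<Longrightarrow> x - y \<in> kspan G"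
  by (metis diff_conv_add_uminus kspan_add kspan_smult psmult_minus1)

lemma kspan_uminus: "x \<in> kspan G \<Longrightarrow> - x \<in> kspan G"
  by (metis kspan_smult psmult_minus1)

lemma kspan_sum: "(\<And>a. a \<in> A \<Longrightarrow> f a \<in> kspan G) \<Longrightarrow> sum f A \<in> kspan G"
  by (induct A rule: infinite_finite_induct) (auto intro: kspan.intros)

lemma kspan_lin: "(\<And>x. f x \<in> kspan G) \<Longrightarrow> lin f p \<in> kspan G"
  unfolding lin_def by (intro kspan_sum kspan_smult) auto

lemma kspan_mono: assumes "G \<subseteq> kspan H" "x \<in> kspan G" shows "x \<in> kspan H"
  using assms(2) by induct (use assms(1) in \<open>auto intro: kspan.intros\<close>)

lemma kspan_mono': "G \<subseteq> H \<Longrightarrow> x \<in> kspan G \<Longrightarrow> x \<in> kspan H"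
  using kspan_mono by (metis kspan_gen subset_iff)

lemma kspan_islin_image:
  assumes "islin F" "\<And>g. g \<in> G \<Longrightarrow> F g \<in> kspan H" "x \<in> kspan G"
  shows "F x \<in> kspan H"
  using assms(3)
  by (induct x rule: kspan.induct)
     (use assms(1,2) in \<open>auto simp: islin_zero islin_def intro: kspan.intros\<close>)

lemma kspan_cong_diff: "a - b \<in> kspan G \<Longrightarrow> b - c \<in> kspan G \<Longrightarrow> a - c \<in> kspan G"
  using kspan_add[of "a - b" G "b - c"] by simp



lemma bilin_eqI2:
  assumes "\<And>q. islin (\<lambda>p. F p q)" "\<And>p. islin (\<lambda>q. F p q)"
    "\<And>q. islin (\<lambda>p. G p q)" "\<And>p. islin (\<lambda>q. G p q)"
    "\<And>x y. F (bas x) (bas y) = G (bas x) (bas y)"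
  shows "F p q = G p q"
proof -
  have "F (bas x) q = G (bas x) q" for x
    by (rule lin_eqI[where p=q]) (use assms in auto)
  then show ?thesis by (intro lin_eqI[where p=p, of "\<lambda>p. F p q" "\<lambda>p. G p q"]) (use assms in auto)
qed

lemma trilin_eqI:
  assumes "\<And>q r. islin (\<lambda>p. F p q r)" "\<And>p r. islin (\<lambda>q. F p q r)" "\<And>p q. islin (\<lambda>r. F p q r)"
    "\<And>q r. islin (\<lambda>p. G p q r)" "\<And>p r. islin (\<lambda>q. G p q r)" "\<And>p q. islin (\<lambda>r. G p q r)"
    "\<And>x y z. F (bas x) (bas y) (bas z) = G (bas x) (bas y) (bas z)"
  shows "F p q r = G p q r"
proof -
  have "F (bas x) q r = G (bas x) q r" for x
    by (rule bilin_eqI2[of "F (bas x)" "G (bas x)"]) (use assms in auto)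
  then show ?thesis by (intro lin_eqI[where p=p, of "\<lambda>p. F p q r" "\<lambda>p. G p q r"]) (use assms in auto)
qed

lemma islin_bilin1'[simp]: "islin (\<lambda>p. bilin f p q)" by (rule islin_bilin1)
lemma islin_bilin2'[simp]: "islin (bilin f p)" using islin_bilin2 by blast
lemma islin_const_bilin2: "islin F \<Longrightarrow> islin (\<lambda>q. bilin f (F q) r)"
  by (rule islin_comp[OF islin_bilin1 ])

lemma islin_id[simp]: "islin (\<lambda>p. p)" by (simp add: islin_def)

lemma islin_add_fun: "islin F \<Longrightarrow> islin G \<Longrightarrow> islin (\<lambda>p. F p + G p)"
  by (simp add: islin_def pm.scale_right_distrib algebra_simps)
lemma islin_diff_fun: "islin F \<Longrightarrow> islin G \<Longrightarrow> islin (\<lambda>p. F p - G p)"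
  by (simp add: islin_def pm.scale_right_diff_distrib algebra_simps)
lemma islin_sum_fun: "(\<And>a. a \<in> A \<Longrightarrow> islin (F a)) \<Longrightarrow> islin (\<lambda>p. \<Sum>a\<in>A. F a p)"
  by (induct A rule: infinite_finite_induct) (auto simp: islin_def sum.distrib pm.scale_sum_right pm.scale_right_distrib)
lemma islin_psmult_fun: "islin F \<Longrightarrow> islin (\<lambda>p. psmult c (F p))"
  by (simp add: islin_def pm.scale_right_distrib mult.commute)
lemma islin_lin_fun: "(\<And>x. islin (\<lambda>p. f p x)) \<Longrightarrow> islin (\<lambda>p. lin (f p) q)"
  unfolding lin_def islin_def by (auto simp: pm.scale_right_distrib sum.distrib pm.scale_sum_right mult.commute)

lemma islin_bilin_c1: "islin F \<Longrightarrow> islin (\<lambda>p. bilin f (F p) q)"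
  using islin_comp[OF islin_bilin1 ] by blast
lemma islin_bilin_c2: "islin F \<Longrightarrow> islin (\<lambda>p. bilin f q (F p))"
  using islin_comp[OF islin_bilin2 ] by blast
lemma islin_lin_c: "islin F \<Longrightarrow> islin (\<lambda>p. lin f (F p))"
  using islin_comp[OF islin_lin] by blast

lemma fmul_bas[simp]: "fmul (bas x) (bas y) = bas (x @ y)"
  by (simp add: fmul_def)

lemma fmul_add1: "fmul (p + p') q = fmul p q + fmul p' q"
  and fmul_add2: "fmul p (q + q') = fmul p q + fmul p q'"
  and fmul_psmult1: "fmul (psmult c p) q = psmult c (fmul p q)"
  and fmul_psmult2: "fmul p (psmult c q) = psmult c (fmul p q)"
  and fmul_diff1: "fmul (p - p') q = fmul p q - fmul p' q"
  and fmul_diff2: "fmul p (q - q') = fmul p q - fmul p q'"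
  and fmul_sum1: "fmul (sum g A) q = (\<Sum>a\<in>A. fmul (g a) q)"
  and fmul_sum2: "fmul p (sum g A) = (\<Sum>a\<in>A. fmul p (g a))"
  and fmul_zero1[simp]: "fmul 0 q = 0"
  and fmul_zero2[simp]: "fmul p 0 = 0"
  by (simp_all add: fmul_def bilin_add1 bilin_add2 bilin_psmult1 bilin_psmult2 bilin_diff1 bilin_diff2
      bilin_sum1 bilin_sum2)

lemma islin_fmul1[simp]: "islin (\<lambda>p. fmul p q)" and islin_fmul2[simp]: "islin (fmul p)"
  by (simp_all add: islin_def fmul_add1 fmul_add2 fmul_psmult1 fmul_psmult2)

lemmas fmul_lin = fmul_add1 fmul_add2 fmul_psmult1 fmul_psmult2 fmul_diff1 fmul_diff2 fmul_sum1 fmul_sum2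

lemma fmul_assoc: "fmul (fmul p q) r = fmul p (fmul q r)"
  by (rule trilin_eqI[of "\<lambda>p q r. fmul (fmul p q) r" "\<lambda>p q r. fmul p (fmul q r)"])
     (simp_all add: islin_def fmul_add1 fmul_add2 fmul_psmult1 fmul_psmult2)

lemma fone_fmul[simp]: "fmul fone p = p"
  by (rule lin_eqI[of "fmul fone" "\<lambda>p. p"]) (auto simp: fone_def)

lemma fmul_fone[simp]: "fmul p fone = p"
  by (rule lin_eqI[of "\<lambda>p. fmul p fone" "\<lambda>p. p"]) (auto simp: fone_def)

lemma fgen_fgen: "fmul (fgen u) (fgen v) = bas [u, v]"
  by (simp add: fgen_def)

lemma fideal_mul:
  assumes "x \<in> fideal Rel"
  shows "fmul x y \<in> fideal Rel" "fmul y x \<in> fideal Rel"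
proof -
  let ?G = "{fmul a (fmul r b) | a r b. r \<in> Rel}"
  have 1: "fmul g y \<in> kspan ?G" if g: "g \<in> ?G" for g
  proof -
    obtain a r b where "g = fmul a (fmul r b)" "r \<in> Rel" using g by blast
    moreover have "fmul (fmul a (fmul r b)) y = fmul a (fmul r (fmul b y))" by (simp add: fmul_assoc)
    ultimately show ?thesis by (intro kspan_gen) auto
  qed
  have 2: "fmul y g \<in> kspan ?G" if g: "g \<in> ?G" for g
  proof -
    obtain a r b where "g = fmul a (fmul r b)" "r \<in> Rel" using g by blast
    moreover have "fmul y (fmul a (fmul r b)) = fmul (fmul y a) (fmul r b)" by (simp add: fmul_assoc)
    ultimately show ?thesis by (intro kspan_gen) auto
  qed
  show "fmul x y \<in> fideal Rel"
    using assms unfolding fideal_def by (rule kspan_islin_image[rotated 2]) (use 1 in auto)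
  show "fmul y x \<in> fideal Rel"
    using assms unfolding fideal_def by (rule kspan_islin_image[rotated 2]) (use 2 in auto)
qed

lemma fideal_gen: "r \<in> Rel \<Longrightarrow> r \<in> fideal Rel"
proof -
  assume "r \<in> Rel"
  moreover have "r = fmul fone (fmul r fone)" by simp
  ultimately show ?thesis unfolding fideal_def by (intro kspan_gen) blast
qed

lemma fideal_mul3: "r \<in> fideal Rel \<Longrightarrow> fmul a (fmul r b) \<in> fideal Rel"
  by (intro fideal_mul)

lemma quot_alg_free: "quot_alg fmul fone (fideal Rel)"
  unfolding quot_alg_def
  by (auto simp: fideal_def[symmetric] fmul_lin fmul_assoc intro: fideal_mul
      kspan.intros[where G="{fmul a (fmul r b) | a r b. r \<in> Rel}", folded fideal_def])

lemma ptens_bas[simp]: "ptens (bas x) (bas y) = bas (x, y)"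
  by (simp add: ptens_def)

lemma ptens_add1: "ptens (p + p') q = ptens p q + ptens p' q"
  and ptens_add2: "ptens p (q + q') = ptens p q + ptens p q'"
  and ptens_psmult1: "ptens (psmult c p) q = psmult c (ptens p q)"
  and ptens_psmult2: "ptens p (psmult c q) = psmult c (ptens p q)"
  by (simp_all add: ptens_def bilin_add1 bilin_add2 bilin_psmult1 bilin_psmult2)

lemma islin_ptens1[simp]: "islin (\<lambda>p. ptens p q)" and islin_ptens2[simp]: "islin (ptens p)"
  by (simp_all add: islin_def ptens_add1 ptens_add2 ptens_psmult1 ptens_psmult2)

lemma ptens_diff1: "ptens (p - p') q = ptens p q - ptens p' q"
  and ptens_diff2: "ptens p (q - q') = ptens p q - ptens p q'"
  and ptens_sum1: "ptens (sum g A) q = (\<Sum>a\<in>A. ptens (g a) q)"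
  and ptens_sum2: "ptens p (sum g A) = (\<Sum>a\<in>A. ptens p (g a))"
  and ptens_zero1[simp]: "ptens 0 q = 0"
  and ptens_zero2[simp]: "ptens p 0 = 0"
  and ptens_uminus1: "ptens (- p) q = - ptens p q"
  and ptens_uminus2: "ptens p (- q) = - ptens p q"
  using islin_minus[OF islin_ptens1[of q]] islin_minus[OF islin_ptens2[of p]]
    islin_sum[OF islin_ptens1[of q]] islin_sum[OF islin_ptens2[of p]]
    islin_zero[OF islin_ptens1[of q]] islin_zero[OF islin_ptens2[of p]]
    islin_uminus[OF islin_ptens1[of q]] islin_uminus[OF islin_ptens2[of p]]
  by auto

lemmas ptens_lin = ptens_add1 ptens_add2 ptens_psmult1 ptens_psmult2 ptens_diff1 ptens_diff2 ptens_sum1 ptens_sum2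

lemma ptens_lin1: "ptens p q = lin (\<lambda>x. ptens (bas x) q) p"
  by (rule islin_eq_lin) simp

lemma ptens_lin2: "ptens p q = lin (\<lambda>y. ptens p (bas y)) q"
  by (rule islin_eq_lin) simp

definition tm :: "(('a \<Rightarrow>\<^sub>0 'k::comm_ring_1) \<Rightarrow> ('a \<Rightarrow>\<^sub>0 'k) \<Rightarrow> ('a \<Rightarrow>\<^sub>0 'k)) \<Rightarrow> ('a \<times> 'a \<Rightarrow>\<^sub>0 'k) \<Rightarrow> ('a \<times> 'a \<Rightarrow>\<^sub>0 'k) \<Rightarrow> ('a \<times> 'a \<Rightarrow>\<^sub>0 'k)" where
  "tm mul X Y = bilin (\<lambda>(x, y) (x', y'). ptens (mul (bas x) (bas x')) (mul (bas y) (bas y'))) X Y"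

lemma tm_bas: "tm mul (bas (x, y)) (bas (x', y')) = ptens (mul (bas x) (bas x')) (mul (bas y) (bas y'))"
  by (simp add: tm_def)

lemma tm_add1: "tm mul (p + p') q = tm mul p q + tm mul p' q"
  and tm_add2: "tm mul p (q + q') = tm mul p q + tm mul p q'"
  and tm_psmult1: "tm mul (psmult c p) q = psmult c (tm mul p q)"
  and tm_psmult2: "tm mul p (psmult c q) = psmult c (tm mul p q)"
  and tm_diff1: "tm mul (p - p') q = tm mul p q - tm mul p' q"
  and tm_diff2: "tm mul p (q - q') = tm mul p q - tm mul p q'"
  and tm_sum1: "tm mul (sum g A) q = (\<Sum>a\<in>A. tm mul (g a) q)"
  and tm_sum2: "tm mul p (sum g A) = (\<Sum>a\<in>A. tm mul p (g a))"
  and tm_zero1[simp]: "tm mul 0 q = 0"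
  and tm_zero2[simp]: "tm mul p 0 = 0"
  by (simp_all add: tm_def bilin_add1 bilin_add2 bilin_psmult1 bilin_psmult2 bilin_diff1 bilin_diff2
      bilin_sum1 bilin_sum2)

lemma tm_ptens:
  assumes "\<And>q. islin (\<lambda>p. mul p q)" "\<And>p. islin (mul p)"
  shows "tm mul (ptens a b) (ptens c d) = ptens (mul a c) (mul b d)"
proof -
  have L1: "islin (\<lambda>p. ptens (mul p q) r)" "islin (\<lambda>p. ptens (mul q p) r)"
    "islin (\<lambda>p. ptens r (mul p q))" "islin (\<lambda>p. ptens r (mul q p))" for q r
    using assms unfolding islin_def by (simp_all add: ptens_lin)
  have L2: "islin (\<lambda>p. tm mul (ptens p q) r)" "islin (\<lambda>p. tm mul (ptens q p) r)"
    "islin (\<lambda>p. tm mul r (ptens p q))" "islin (\<lambda>p. tm mul r (ptens q p))" for q r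
    unfolding islin_def by (simp_all add: ptens_lin tm_add1 tm_add2 tm_psmult1 tm_psmult2)
  have B: "tm mul (ptens (bas x) (bas y)) (ptens c d) = ptens (mul (bas x) c) (mul (bas y) d)" for x y
    by (rule bilin_eqI2[of "\<lambda>c d. tm mul (ptens (bas x) (bas y)) (ptens c d)"])
       (simp_all only: tm_bas ptens_bas L1 L2)
  show ?thesis
    by (rule bilin_eqI2[of "\<lambda>a b. tm mul (ptens a b) (ptens c d)" "\<lambda>a b. ptens (mul a c) (mul b d)"])
       (simp_all only: L1 L2 B)
qed

lemma islin_tm1[simp]: "islin (\<lambda>X. tm mul X Y)" and islin_tm2[simp]: "islin (tm mul X)"
  by (simp_all add: islin_def tm_add1 tm_add2 tm_psmult1 tm_psmult2)

lemma tm_assoc: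
  assumes "\<And>q. islin (\<lambda>p. mul p q)" "\<And>p. islin (mul p)"
    "\<And>p q r. mul (mul p q) r = mul p (mul q r)"
  shows "tm mul (tm mul X Y) Z = tm mul X (tm mul Y Z)"
proof (rule trilin_eqI[of "\<lambda>X Y Z. tm mul (tm mul X Y) Z" "\<lambda>X Y Z. tm mul X (tm mul Y Z)"])
  fix x y z :: "'a \<times> 'a"
  obtain x1 x2 y1 y2 z1 z2 where "x = (x1, x2)" "y = (y1, y2)" "z = (z1, z2)" by (metis prod.exhaust)
  then show "tm mul (tm mul (bas x) (bas y)) (bas z) = tm mul (bas x) (tm mul (bas y) (bas z))"
    by (simp add: tm_bas ptens_bas[symmetric] tm_ptens assms del: ptens_bas)
qed (unfold islin_def; simp add: tm_add1 tm_add2 tm_psmult1 tm_psmult2)+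



lemma sum_swap_in: "(\<Sum>a\<in>A. \<Sum>b\<in>B. \<Sum>c\<in>C. f a b c) = (\<Sum>a\<in>A. \<Sum>c\<in>C. \<Sum>b\<in>B. f a b c)"
  by (simp only: sum.swap[of _ B C])

lemma sum_rot3: "(\<Sum>a\<in>A. \<Sum>b\<in>B. \<Sum>c\<in>C. f a b c) = (\<Sum>c\<in>C. \<Sum>a\<in>A. \<Sum>b\<in>B. f a b c)"
  by (simp only: sum.swap[of _ B C] sum.swap[of _ A C])

lemma sum_rot3': "(\<Sum>c\<in>C. \<Sum>a\<in>A. \<Sum>b\<in>B. f a b c) = (\<Sum>a\<in>A. \<Sum>b\<in>B. \<Sum>c\<in>C. f a b c)"
  by (rule sum_rot3[symmetric])

definition LS :: "nat \<Rightarrow> 'n list set" where "LS m = {L. length L = m}"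

lemma finite_LS[simp]: "finite (LS m :: ('n::finite) list set)"
proof -
  show ?thesis using finite_lists_length_eq[of "UNIV::'n set" m] by (simp add: LS_def)
qed

lemma LS_0[simp]: "LS 0 = {[]}" by (auto simp: LS_def)

lemma sum_LS_Suc: "(\<Sum>L\<in>LS (Suc m). f L) = (\<Sum>l\<in>(UNIV::'n::finite set). \<Sum>L\<in>LS m. f (l # L))"
proof -
  have e: "LS (Suc m) = (\<lambda>(l, L). l # L) ` (UNIV \<times> LS m)"
    by (auto simp: LS_def image_iff length_Suc_conv)
  have i: "inj_on (\<lambda>(l, L). l # L) (UNIV \<times> (LS m :: 'n list set))"
    by (auto simp: inj_on_def)
  show ?thesis
    by (subst e, subst sum.reindex[OF i]) (simp add: sum.cartesian_product split_def)
qed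

lemma sum_LS_add: "(\<Sum>L\<in>LS (m + k). f L) = (\<Sum>L1\<in>(LS m :: ('n::finite) list set). \<Sum>L2\<in>LS k. f (L1 @ L2))"
proof (induct m arbitrary: f)
  case 0
  then show ?case by simp
next
  case (Suc m)
  have "(\<Sum>L\<in>LS (Suc m + k). f L) = (\<Sum>l\<in>UNIV. \<Sum>L\<in>LS (m + k). f (l # L))"
    by (simp add: sum_LS_Suc)
  also have "\<dots> = (\<Sum>l\<in>UNIV. \<Sum>L1\<in>LS m. \<Sum>L2\<in>LS k. f (l # L1 @ L2))"
    using Suc by simp
  also have "\<dots> = (\<Sum>L1\<in>LS (Suc m). \<Sum>L2\<in>LS k. f (L1 @ L2))"
    by (simp add: sum_LS_Suc)
  finally show ?case .
qed

definition zl :: "('a \<times> 'b) list \<Rightarrow> 'c list \<Rightarrow> ('a \<times> 'c) list" where "zl w L = zip (map fst w) L"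
definition zr :: "'c list \<Rightarrow> ('a \<times> 'b) list \<Rightarrow> ('c \<times> 'b) list" where "zr L w = zip L (map snd w)"

lemma zl_simps[simp]: "zl [] L = []" "zl w [] = []" "zl (g # w) (l # L) = (fst g, l) # zl w L"
  by (simp_all add: zl_def)
lemma zr_simps[simp]: "zr L [] = []" "zr [] w = []" "zr (l # L) (g # w) = (l, snd g) # zr L w"
  by (simp_all add: zr_def)

lemma length_zl[simp]: "length L = length w \<Longrightarrow> length (zl w L) = length w"
  by (simp add: zl_def)
lemma length_zr[simp]: "length L = length w \<Longrightarrow> length (zr L w) = length w"
  by (simp add: zr_def)

lemma zl_append: "length L = length w \<Longrightarrow> zl (w @ w') (L @ L') = zl w L @ zl w' L'"
  by (simp add: zl_def)
lemma zr_append: "length L = length w \<Longrightarrow> zr (L @ L') (w @ w') = zr L w @ zr L' w'"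
  by (simp add: zr_def)

lemma zl_zl: "length L = length w \<Longrightarrow> length M = length w \<Longrightarrow> zl (zl w L) M = zl w M"
  by (simp add: zl_def)
lemma zr_zl: "length L = length w \<Longrightarrow> length M = length w \<Longrightarrow> zr M (zl w L) = zip M L"
  by (simp add: zl_def zr_def)
lemma zl_zr: "length L = length w \<Longrightarrow> length M = length w \<Longrightarrow> zl (zr M w) L = zip M L"
  by (simp add: zl_def zr_def)
lemma zr_zr: "length L = length w \<Longrightarrow> length M = length w \<Longrightarrow> zr L (zr M w) = zr L w"
  by (simp add: zr_def)

lemma dA_explicit: "dA w = (\<Sum>L\<in>LS (length w). bas (zl w L, zr L w))"
proof (induct w)
  case Nil
  then show ?case by simp
next
  case (Cons g w)
  show ?case
    by (simp add: Cons lin_sum sum_LS_Suc)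
qed

lemma lin_dA: "lin f (dA w) = (\<Sum>L\<in>LS (length w). f (zl w L, zr L w))"
  by (simp add: dA_explicit lin_sum)

definition epsA :: "('n \<times> 'n) list \<Rightarrow> 'k::comm_ring_1" where
  "epsA w = prod_list (map (\<lambda>g. if fst g = snd g then 1 else 0) w)"

lemma epsA_simps[simp]: "epsA [] = 1" "epsA (g # w) = (if fst g = snd g then epsA w else 0)"
  by (simp_all add: epsA_def)

lemma epsA_append: "epsA (w @ w') = epsA w * epsA w'"
  by (simp add: epsA_def)

lemma fgen_def': "fgen i = bas [i]" by (simp add: fgen_def)

lemma acg_single: "acg R (j, v) [u] = (\<Sum>i\<in>UNIV. psmult (R i j u v) (fgen i))"
proof -
  have "acg R (j, v) [u] = (\<Sum>l\<in>UNIV. \<Sum>i\<in>UNIV. psmult (R i j u l) (if l = v then fgen i else 0))"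
    by (simp add: if_distrib cong: if_cong)
  also have "\<dots> = (\<Sum>i\<in>UNIV. psmult (R i j u v) (fgen i))"
    by (simp add: if_distrib[of "psmult _"] sum.swap[of _ UNIV UNIV] cong: if_cong)
  finally show ?thesis .
qed

lemma acg_append: "acg R g (x @ y) = (\<Sum>l\<in>UNIV. fmul (acg R (fst g, l) x) (acg R (l, snd g) y))"
proof (induct x arbitrary: g)
  case Nil
  obtain a b where g: "g = (a, b)" by (cases g)
  have e: "fmul (if a = l then fone else 0) q = (if a = l then q else 0)" for l and q :: "'a list \<Rightarrow>\<^sub>0 'b"
    by simp
  have "(\<Sum>l\<in>UNIV. fmul (if a = l then fone else 0) (acg R (l, b) y)) = acg R (a, b) y"
    by (simp add: e sum.delta')
  then show ?case by (simp add: g)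
next
  case (Cons u x)
  have "acg R g ((u # x) @ y) = (\<Sum>l\<in>UNIV. \<Sum>i\<in>UNIV. psmult (R i (fst g) u l)
      (fmul (fgen i) (\<Sum>m\<in>UNIV. fmul (acg R (l, m) x) (acg R (m, snd g) y))))"
    using Cons[of "(_, snd g)"] by simp
  also have "\<dots> = (\<Sum>m\<in>UNIV. \<Sum>l\<in>UNIV. \<Sum>i\<in>UNIV. psmult (R i (fst g) u l)
      (fmul (fmul (fgen i) (acg R (l, m) x)) (acg R (m, snd g) y)))"
    unfolding fmul_sum2 pm.scale_sum_right fmul_assoc by (rule sum_rot3)
  also have "\<dots> = (\<Sum>m\<in>UNIV. fmul (acg R (fst g, m) (u # x)) (acg R (m, snd g) y))"
    by (simp add: fmul_sum1 fmul_psmult1)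
  finally show ?case .
qed

lemma acgl_fmul: "lin (acg R g) (fmul p q) =
    (\<Sum>l\<in>UNIV. fmul (lin (acg R (fst g, l)) p) (lin (acg R (l, snd g)) q))"
  by (rule bilin_eqI2[of "\<lambda>p q. lin (acg R g) (fmul p q)"])
     (simp_all add: islin_def lin_add lin_psmult fmul_lin sum.distrib pm.scale_sum_right acg_append)

lemma islin_act[simp]: "islin (act R w)"
  by (induct w) (auto intro: islin_comp)

lemma act_add: "act R w (p + q) = act R w p + act R w q"
  and act_psmult: "act R w (psmult c p) = psmult c (act R w p)"
  using islin_act[of R w] unfolding islin_def by auto

lemma act_diff: "act R w (p - q) = act R w p - act R w q"
  and act_sum: "act R w (sum f A) = (\<Sum>a\<in>A. act R w (f a))"
  and act_zero[simp]: "act R w 0 = 0"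
  using islin_minus[OF islin_act] islin_sum[OF islin_act] islin_zero[OF islin_act] by auto

lemmas act_lin = act_add act_psmult act_diff act_sum

lemma act_append: "act R (w @ w') p = act R w (act R w' p)"
  by (induct w) auto

lemma act_fmul: "act R w (fmul p q) =
   (\<Sum>L\<in>LS (length w). fmul (act R (zl w L) p) (act R (zr L w) q))"
proof (induct w arbitrary: p q)
  case Nil
  then show ?case by simp
next
  case (Cons g w)
  have "act R (g # w) (fmul p q) =
     (\<Sum>L\<in>LS (length w). \<Sum>l\<in>UNIV. fmul (lin (acg R (fst g, l)) (act R (zl w L) p))
        (lin (acg R (l, snd g)) (act R (zr L w) q)))"
    by (simp add: Cons lin_sum acgl_fmul)
  also have "\<dots> = (\<Sum>L\<in>LS (length (g # w)). fmul (act R (zl (g # w) L) p) (act R (zr L (g # w)) q))"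
    by (simp add: sum_LS_Suc sum.swap[of _ UNIV])
  finally show ?case .
qed

lemma act_fone: "act R w fone = psmult (epsA w) fone"
proof (induct w)
  case Nil
  then show ?case by simp
next
  case (Cons g w)
  then show ?case
    by (simp add: lin_psmult) (simp add: fone_def)
qed



definition pt :: "('n list \<Rightarrow>\<^sub>0 'k::comm_ring_1) \<Rightarrow> ('n \<times> 'n) list \<Rightarrow> ('n list \<times> ('n \<times> 'n) list \<Rightarrow>\<^sub>0 'k)" where
  "pt p w = ptens p (bas w)"

lemma pt_bas[simp]: "pt (bas x) w = bas (x, w)" by (simp add: pt_def)

lemma pt_add: "pt (p + q) w = pt p w + pt q w"
  and pt_psmult: "pt (psmult c p) w = psmult c (pt p w)"
  and pt_diff: "pt (p - q) w = pt p w - pt q w"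
  and pt_sum: "pt (sum f A) w = (\<Sum>a\<in>A. pt (f a) w)"
  and pt_zero[simp]: "pt 0 w = 0"
  by (simp_all add: pt_def ptens_lin)

lemmas pt_lin = pt_add pt_psmult pt_diff pt_sum

lemma islin_pt[simp]: "islin (\<lambda>p. pt p w)" by (simp add: islin_def pt_lin)

lemma smash_add1: "smash_mul R (p + p') q = smash_mul R p q + smash_mul R p' q"
  and smash_add2: "smash_mul R p (q + q') = smash_mul R p q + smash_mul R p q'"
  and smash_psmult1: "smash_mul R (psmult c p) q = psmult c (smash_mul R p q)"
  and smash_psmult2: "smash_mul R p (psmult c q) = psmult c (smash_mul R p q)"
  by (simp_all add: smash_mul_def bilin_add1 bilin_add2 bilin_psmult1 bilin_psmult2)

lemma islin_smash1[simp]: "islin (\<lambda>p. smash_mul R p q)" and islin_smash2[simp]: "islin (smash_mul R p)"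
  by (simp_all add: islin_def smash_add1 smash_add2 smash_psmult1 smash_psmult2)

lemma smash_diff1: "smash_mul R (p - p') q = smash_mul R p q - smash_mul R p' q"
  and smash_diff2: "smash_mul R p (q - q') = smash_mul R p q - smash_mul R p q'"
  and smash_sum1: "smash_mul R (sum g A) q = (\<Sum>a\<in>A. smash_mul R (g a) q)"
  and smash_sum2: "smash_mul R p (sum g A) = (\<Sum>a\<in>A. smash_mul R p (g a))"
  and smash_zero1[simp]: "smash_mul R 0 q = 0"
  and smash_zero2[simp]: "smash_mul R p 0 = 0"
  and smash_uminus1: "smash_mul R (- p) q = - smash_mul R p q"
  and smash_uminus2: "smash_mul R p (- q) = - smash_mul R p q"
  using islin_minus[OF islin_smash1[of R q]] islin_minus[OF islin_smash2[of R p]]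
    islin_sum[OF islin_smash1[of R q]] islin_sum[OF islin_smash2[of R p]]
    islin_zero[OF islin_smash1[of R q]] islin_zero[OF islin_smash2[of R p]]
    islin_uminus[OF islin_smash1[of R q]] islin_uminus[OF islin_smash2[of R p]]
  by auto

lemmas smash_lin = smash_add1 smash_add2 smash_psmult1 smash_psmult2 smash_diff1 smash_diff2 smash_sum1 smash_sum2

lemma smash_bas: "smash_mul R (bas (x, w)) (bas (y, w')) =
   (\<Sum>L\<in>LS (length w). pt (fmul (bas x) (act R (zl w L) (bas y))) (zr L w @ w'))"
  by (simp add: smash_mul_def lin_dA pt_def)

lemma smash_pt: "smash_mul R (pt p w) (pt q w') =
   (\<Sum>L\<in>LS (length w). pt (fmul p (act R (zl w L) q)) (zr L w @ w'))"
proof (rule bilin_eqI2[of "\<lambda>p q. smash_mul R (pt p w) (pt q w')"])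
  show "\<And>x y. smash_mul R (pt (bas x) w) (pt (bas y) w') =
     (\<Sum>L\<in>LS (length w). pt (fmul (bas x) (act R (zl w L) (bas y))) (zr L w @ w'))"
    by (simp add: smash_bas)
qed (simp_all add: islin_def pt_lin smash_lin fmul_lin act_lin sum.distrib pm.scale_sum_right)

lemma sum_if_const: "(\<Sum>x\<in>A. if P then f x else 0) = (if P then sum f A else 0)"
  by simp

lemma psmult_if0: "psmult (if P then a else 0) x = (if P then psmult a x else 0)"
  by simp

lemma counit_l: fixes w :: "('n::finite \<times> 'n) list"
  shows "(\<Sum>L\<in>(LS (length w) :: 'n list set). psmult (epsA (zl w L)) (bas (zr L w))) = (bas w :: _ \<Rightarrow>\<^sub>0 'k::comm_ring_1)"
proof (induct w)
  case Nil
  then show ?case by simp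
next
  case (Cons g w)
  have "(\<Sum>L\<in>(LS (length (g # w)) :: 'n list set). psmult (epsA (zl (g # w) L)) (bas (zr L (g # w))) :: _ \<Rightarrow>\<^sub>0 'k)
     = (\<Sum>l\<in>UNIV. \<Sum>L\<in>LS (length w). if fst g = l then psmult (epsA (zl w L)) (bas ((l, snd g) # zr L w)) else 0)"
    by (simp add: sum_LS_Suc psmult_if0)
  also have "\<dots> = (\<Sum>L\<in>LS (length w). psmult (epsA (zl w L)) (bas ((fst g, snd g) # zr L w)))"
    by (simp only: sum_if_const sum.delta' finite UNIV_I if_True)
  also have "\<dots> = lin (\<lambda>q. bas (g # q)) (\<Sum>L\<in>LS (length w). psmult (epsA (zl w L)) (bas (zr L w)) :: _ \<Rightarrow>\<^sub>0 'k)"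
    by (simp add: lin_sum lin_psmult)
  also have "\<dots> = bas (g # w)" by (simp add: Cons)
  finally show ?case .
qed

lemma counit_r: fixes w :: "('n::finite \<times> 'n) list"
  shows "(\<Sum>L\<in>(LS (length w) :: 'n list set). psmult (epsA (zr L w)) (bas (zl w L))) = (bas w :: _ \<Rightarrow>\<^sub>0 'k::comm_ring_1)"
proof (induct w)
  case Nil
  then show ?case by simp
next
  case (Cons g w)
  have "(\<Sum>L\<in>(LS (length (g # w)) :: 'n list set). psmult (epsA (zr L (g # w))) (bas (zl (g # w) L)) :: _ \<Rightarrow>\<^sub>0 'k)
     = (\<Sum>l\<in>UNIV. \<Sum>L\<in>LS (length w). if l = snd g then psmult (epsA (zr L w)) (bas ((fst g, l) # zl w L)) else 0)"
    by (simp add: sum_LS_Suc psmult_if0)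
  also have "\<dots> = (\<Sum>L\<in>LS (length w). psmult (epsA (zr L w)) (bas ((fst g, snd g) # zl w L)))"
    by (simp only: sum_if_const sum.delta finite UNIV_I if_True)
  also have "\<dots> = lin (\<lambda>q. bas (g # q)) (\<Sum>L\<in>LS (length w). psmult (epsA (zr L w)) (bas (zl w L)) :: _ \<Rightarrow>\<^sub>0 'k)"
    by (simp add: lin_sum lin_psmult)
  also have "\<dots> = bas (g # w)" by (simp add: Cons)
  finally show ?case .
qed

lemma smash_one_pt: "smash_one = pt fone []"
  by (simp add: smash_one_def fone_def)

lemma smash_one_left[simp]: "smash_mul R smash_one h = h"
proof (rule lin_eqI[of "smash_mul R smash_one" "\<lambda>h. h"])
  fix z :: "'a list \<times> ('a \<times> 'a) list"
  obtain y w where z: "z = (y, w)" by (cases z)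
  show "smash_mul R smash_one (bas z) = bas z"
    by (simp add: z smash_one_def smash_bas)
qed simp_all

lemma smash_one_right[simp]: "smash_mul R h smash_one = h"
proof (rule lin_eqI[of "\<lambda>h. smash_mul R h smash_one" "\<lambda>h. h"])
  fix z :: "'a list \<times> ('a \<times> 'a) list"
  obtain y w where z: "z = (y, w)" by (cases z)
  have "smash_mul R (bas z) smash_one = (\<Sum>L\<in>LS (length w). pt (psmult (epsA (zl w L)) (bas y)) (zr L w))"
    using act_fone[of R, unfolded fone_def] by (simp add: z smash_one_def smash_bas fmul_psmult2)
  also have "\<dots> = ptens (bas y) (\<Sum>L\<in>LS (length w). psmult (epsA (zl w L)) (bas (zr L w)))"
    by (simp add: pt_def ptens_lin)
  also have "\<dots> = bas z" by (simp add: counit_l z)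
  finally show "smash_mul R (bas z) smash_one = bas z" .
qed simp_all

lemma smash_assoc_bas:
  fixes R :: "'n::finite \<Rightarrow> 'n \<Rightarrow> 'n \<Rightarrow> 'n \<Rightarrow> 'k::comm_ring_1" and w w' w'' :: "('n \<times> 'n) list"
  shows
  "smash_mul R (smash_mul R (pt (bas x) w) (pt (bas y) w')) (pt (bas z) w'') =
   smash_mul R (pt (bas x) w) (smash_mul R (pt (bas y) w') (pt (bas z) w''))"
proof -
  let ?m = "length w" and ?m' = "length w'"
  have "smash_mul R (smash_mul R (pt (bas x) w) (pt (bas y) w')) (pt (bas z) w'') =
    (\<Sum>L\<in>(LS ?m :: 'n list set). \<Sum>M\<in>(LS (length (zr L w @ w')) :: 'n list set).
       pt (fmul (fmul (bas x) (act R (zl w L) (bas y))) (act R (zl (zr L w @ w') M) (bas z)))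
          (zr M (zr L w @ w') @ w''))"
    by (simp del: pt_bas add: smash_pt smash_sum1)
  also have "\<dots> = (\<Sum>L\<in>(LS ?m :: 'n list set). \<Sum>M1\<in>(LS ?m :: 'n list set). \<Sum>M2\<in>(LS ?m' :: 'n list set).
       pt (fmul (fmul (bas x) (act R (zl w L) (bas y))) (act R (zip L M1) (act R (zl w' M2) (bas z))))
          (zr M1 w @ zr M2 w' @ w''))"
  proof (rule sum.cong[OF refl])
    fix L :: "'n list" assume L: "L \<in> LS ?m"
    then have len: "length (zr L w @ w') = ?m + ?m'" by (simp add: LS_def)
    show "(\<Sum>M\<in>LS (length (zr L w @ w')).
       pt (fmul (fmul (bas x) (act R (zl w L) (bas y))) (act R (zl (zr L w @ w') M) (bas z)))
          (zr M (zr L w @ w') @ w'')) = (\<Sum>M1\<in>LS ?m. \<Sum>M2\<in>LS ?m'.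
       pt (fmul (fmul (bas x) (act R (zl w L) (bas y))) (act R (zip L M1) (act R (zl w' M2) (bas z))))
          (zr M1 w @ zr M2 w' @ w''))"
      unfolding len sum_LS_add
      by (rule sum.cong[OF refl], rule sum.cong[OF refl])
         (use L in \<open>simp add: LS_def zl_append zr_append act_append zl_zr zr_zr\<close>)
  qed
  also have "\<dots> = (\<Sum>M2\<in>(LS ?m' :: 'n list set). \<Sum>M1\<in>(LS ?m :: 'n list set). \<Sum>L\<in>(LS ?m :: 'n list set).
       pt (fmul (bas x) (fmul (act R (zl w L) (bas y)) (act R (zip L M1) (act R (zl w' M2) (bas z)))))
          (zr M1 w @ zr M2 w' @ w''))"
    unfolding fmul_assoc
    by (subst sum_rot3, rule sum.cong[OF refl], rule sum.swap)
  also have "\<dots> = smash_mul R (pt (bas x) w) (smash_mul R (pt (bas y) w') (pt (bas z) w''))"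
    unfolding smash_pt smash_sum2
  proof (rule sum.cong[OF refl])
    fix M2 :: "'n list" assume M2: "M2 \<in> LS ?m'"
    show "(\<Sum>M1\<in>LS ?m. \<Sum>L\<in>LS ?m.
       pt (fmul (bas x) (fmul (act R (zl w L) (bas y)) (act R (zip L M1) (act R (zl w' M2) (bas z)))))
          (zr M1 w @ zr M2 w' @ w'')) =
      (\<Sum>L\<in>LS ?m. pt (fmul (bas x) (act R (zl w L) (fmul (bas y) (act R (zl w' M2) (bas z)))))
          (zr L w @ zr M2 w' @ w''))"
      unfolding act_fmul fmul_sum2 pt_sum
      by (rule sum.cong[OF refl], rule sum.cong)
         (auto simp: LS_def zl_zl zr_zl)
  qed
  finally show ?thesis .
qed

lemma smash_assoc: "smash_mul R (smash_mul R X Y) Z = smash_mul R X (smash_mul R Y Z)"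
proof (rule trilin_eqI[of "\<lambda>X Y Z. smash_mul R (smash_mul R X Y) Z" "\<lambda>X Y Z. smash_mul R X (smash_mul R Y Z)"])
  fix a b c :: "'a list \<times> ('a \<times> 'a) list"
  obtain x w y w' z w'' where "a = (x, w)" "b = (y, w')" "c = (z, w'')" by (metis prod.exhaust)
  then show "smash_mul R (smash_mul R (bas a) (bas b)) (bas c) = smash_mul R (bas a) (smash_mul R (bas b) (bas c))"
    using smash_assoc_bas[of R x w y w' z w''] by simp
qed (simp_all add: islin_def smash_lin)



definition SRr :: "('n::finite \<Rightarrow> 'n \<Rightarrow> 'n \<Rightarrow> 'n \<Rightarrow> 'k::comm_ring_1) \<Rightarrow> 'n \<Rightarrow> 'n \<Rightarrow> ('n list \<Rightarrow>\<^sub>0 'k)" where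
  "SRr R u v = bas [u, v] - (\<Sum>i\<in>UNIV. \<Sum>l\<in>UNIV. psmult (R l i u v) (bas [i, l]))"

lemma SR_rel_eq: "SR_rel R = {SRr R u v | u v. True}"
  by (simp add: SR_rel_def SRr_def fgen_fgen)

lemma SRr_in: "SRr R u v \<in> SR_ker R"
  unfolding SR_ker_def by (rule fideal_gen) (auto simp: SR_rel_eq)

lemma SR_ker_mul: "x \<in> SR_ker R \<Longrightarrow> fmul x y \<in> SR_ker R" "x \<in> SR_ker R \<Longrightarrow> fmul y x \<in> SR_ker R"
  unfolding SR_ker_def by (auto intro: fideal_mul)

lemma SR_ker_kspan: "SR_ker R = kspan {fmul a (fmul r b) | a r b. r \<in> SR_rel R}"
  by (simp add: SR_ker_def fideal_def)

lemma SR_ker_add: "x \<in> SR_ker R \<Longrightarrow> y \<in> SR_ker R \<Longrightarrow> x + y \<in> SR_ker R"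
  and SR_ker_diff: "x \<in> SR_ker R \<Longrightarrow> y \<in> SR_ker R \<Longrightarrow> x - y \<in> SR_ker R"
  and SR_ker_psmult: "x \<in> SR_ker R \<Longrightarrow> psmult c x \<in> SR_ker R"
  and SR_ker_zero: "0 \<in> SR_ker R"
  and SR_ker_sum: "(\<And>a. a \<in> A \<Longrightarrow> f a \<in> SR_ker R) \<Longrightarrow> sum f A \<in> SR_ker R"
  and SR_ker_lin: "(\<And>x. g x \<in> SR_ker R) \<Longrightarrow> lin g p \<in> SR_ker R"
  unfolding SR_ker_kspan by (auto intro: kspan.intros kspan_diff kspan_sum kspan_lin)

definition ARr :: "('n::finite \<Rightarrow> 'n \<Rightarrow> 'n \<Rightarrow> 'n \<Rightarrow> 'k::comm_ring_1) \<Rightarrow> 'n \<Rightarrow> 'n \<Rightarrow> 'n \<Rightarrow> 'n \<Rightarrow> (('n \<times> 'n) list \<Rightarrow>\<^sub>0 'k)" where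
  "ARr R i j k l = (\<Sum>u\<in>UNIV. \<Sum>v\<in>UNIV. psmult (R i j v u) (bas [(u, k), (v, l)]))
       - (\<Sum>u\<in>UNIV. \<Sum>v\<in>UNIV. psmult (R v u l k) (bas [(i, v), (j, u)]))"

lemma AR_rel_eq: "AR_rel R = {ARr R i j k l | i j k l. True}"
  by (simp add: AR_rel_def ARr_def fgen_fgen)

lemma ARr_in: "ARr R i j k l \<in> AR_ker R"
  unfolding AR_ker_def by (rule fideal_gen) (auto simp: AR_rel_eq)

lemma AR_ker_mul: "x \<in> AR_ker R \<Longrightarrow> fmul x y \<in> AR_ker R" "x \<in> AR_ker R \<Longrightarrow> fmul y x \<in> AR_ker R"
  unfolding AR_ker_def by (auto intro: fideal_mul)

lemma AR_ker_kspan: "AR_ker R = kspan {fmul a (fmul r b) | a r b. r \<in> AR_rel R}"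
  by (simp add: AR_ker_def fideal_def)

lemma collect2: "(\<Sum>i\<in>A. \<Sum>l\<in>B. psmult (c i l) (\<Sum>p\<in>P. \<Sum>q\<in>Q. psmult (d i l p q) (f p q)))
   = (\<Sum>p\<in>P. \<Sum>q\<in>Q. psmult (\<Sum>i\<in>A. \<Sum>l\<in>B. c i l * d i l p q) (f p q))"
proof -
  have "(\<Sum>i\<in>A. \<Sum>l\<in>B. psmult (c i l) (\<Sum>p\<in>P. \<Sum>q\<in>Q. psmult (d i l p q) (f p q)))
     = (\<Sum>i\<in>A. \<Sum>l\<in>B. \<Sum>p\<in>P. \<Sum>q\<in>Q. psmult (c i l * d i l p q) (f p q))"
    by (simp add: pm.scale_sum_right)
  also have "\<dots> = (\<Sum>i\<in>A. \<Sum>p\<in>P. \<Sum>q\<in>Q. \<Sum>l\<in>B. psmult (c i l * d i l p q) (f p q))"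
    by (rule sum.cong[OF refl]) (rule sum_rot3')
  also have "\<dots> = (\<Sum>p\<in>P. \<Sum>q\<in>Q. \<Sum>i\<in>A. \<Sum>l\<in>B. psmult (c i l * d i l p q) (f p q))"
    by (simp only: sum.swap[of _ A Q] sum.swap[of _ A P])
  also have "\<dots> = (\<Sum>p\<in>P. \<Sum>q\<in>Q. psmult (\<Sum>i\<in>A. \<Sum>l\<in>B. c i l * d i l p q) (f p q))"
    by (simp add: pm.scale_sum_left)
  finally show ?thesis .
qed

section \<open>The action preserves the relations of S_R (uses QYBE)\<close>

definition Cf :: "('n::finite \<Rightarrow> 'n \<Rightarrow> 'n \<Rightarrow> 'n \<Rightarrow> 'k::comm_ring_1) \<Rightarrow> 'n \<Rightarrow> 'n \<Rightarrow> 'n \<Rightarrow> 'n \<Rightarrow> 'n \<Rightarrow> 'n \<Rightarrow> 'k" where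
  "Cf R j v u x p q = (\<Sum>l\<in>UNIV. R p j u l * R q l x v)"

lemma acg_two: "acg R (j, v) [u, x] = (\<Sum>p\<in>UNIV. \<Sum>q\<in>UNIV. psmult (Cf R j v u x p q) (bas [p, q]))"
proof -
  have "acg R (j, v) [u, x] = (\<Sum>l\<in>UNIV. \<Sum>p\<in>UNIV. psmult (R p j u l)
      (fmul (fgen p) (\<Sum>q\<in>UNIV. psmult (R q l x v) (fgen q))))"
    by (subst acg.simps(2)) (simp del: acg.simps add: acg_single)
  also have "\<dots> = (\<Sum>l\<in>UNIV. \<Sum>p\<in>UNIV. \<Sum>q\<in>UNIV. psmult (R p j u l * R q l x v) (bas [p, q]))"
    by (simp add: fmul_sum2 fmul_psmult2 pm.scale_sum_right fgen_fgen)
  also have "\<dots> = (\<Sum>p\<in>UNIV. \<Sum>q\<in>UNIV. psmult (Cf R j v u x p q) (bas [p, q]))"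
    by (subst sum_rot3') (simp only: Cf_def pm.scale_sum_left)
  finally show ?thesis .
qed

lemma QYBE_D:
  assumes "QYBE R"
  shows "(\<Sum>i\<in>UNIV. \<Sum>j\<in>UNIV. \<Sum>k\<in>UNIV. R x y i j * R i z a k * R j k b c)
   = (\<Sum>i\<in>UNIV. \<Sum>j\<in>UNIV. \<Sum>k\<in>UNIV. R i j a b * R x k i c * R y z j k)"
  using assms unfolding QYBE_def by blast

lemma acg_SRr:
  assumes Q: "QYBE R"
  shows "lin (acg R (j, v)) (SRr R u x) = (\<Sum>p\<in>UNIV. \<Sum>q\<in>UNIV. psmult (Cf R j v u x p q) (SRr R p q))"
proof -
  have c: "(\<Sum>i\<in>UNIV. \<Sum>l\<in>UNIV. R l i u x * Cf R j v i l a b) =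
        (\<Sum>p\<in>UNIV. \<Sum>q\<in>UNIV. Cf R j v u x p q * R b a p q)" for a b
  proof -
    have "(\<Sum>i\<in>UNIV. \<Sum>l\<in>UNIV. R l i u x * Cf R j v i l a b)
       = (\<Sum>l\<in>UNIV. \<Sum>i\<in>UNIV. \<Sum>m\<in>UNIV. R l i u x * R b m l v * R a j i m)"
      by (subst sum.swap) (simp add: Cf_def sum_distrib_left ac_simps)
    also have "\<dots> = (\<Sum>p\<in>UNIV. \<Sum>q\<in>UNIV. \<Sum>m\<in>UNIV. R b a p q * R p j u m * R q m x v)"
      using QYBE_D[OF Q, of b a j u x v] by simp
    also have "\<dots> = (\<Sum>p\<in>UNIV. \<Sum>q\<in>UNIV. Cf R j v u x p q * R b a p q)"
      by (simp add: Cf_def sum_distrib_right sum_distrib_left ac_simps)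
    finally show ?thesis .
  qed
  have "lin (acg R (j, v)) (SRr R u x) = (\<Sum>p\<in>UNIV. \<Sum>q\<in>UNIV. psmult (Cf R j v u x p q) (bas [p, q]))
     - (\<Sum>i\<in>UNIV. \<Sum>l\<in>UNIV. psmult (R l i u x) (\<Sum>p\<in>UNIV. \<Sum>q\<in>UNIV. psmult (Cf R j v i l p q) (bas [p, q])))"
    by (simp del: acg.simps add: SRr_def lin_diff lin_sum lin_psmult acg_two)
  also have "\<dots> = (\<Sum>p\<in>UNIV. \<Sum>q\<in>UNIV. psmult (Cf R j v u x p q) (bas [p, q]))
     - (\<Sum>p\<in>UNIV. \<Sum>q\<in>UNIV. psmult (Cf R j v u x p q) (\<Sum>i\<in>UNIV. \<Sum>l\<in>UNIV. psmult (R l i p q) (bas [i, l])))"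
    by (simp only: collect2 c)
  also have "\<dots> = (\<Sum>p\<in>UNIV. \<Sum>q\<in>UNIV. psmult (Cf R j v u x p q) (SRr R p q))"
    by (simp add: SRr_def pm.scale_right_diff_distrib sum_subtractf)
  finally show ?thesis .
qed

lemma acg_SR:
  assumes Q: "QYBE R" and x: "x \<in> SR_ker R"
  shows "lin (acg R g) x \<in> SR_ker R"
proof -
  have r: "lin (acg R h) r \<in> SR_ker R" if "r \<in> SR_rel R" for h r
  proof -
    obtain u v where r: "r = SRr R u v" using \<open>r \<in> SR_rel R\<close> by (auto simp: SR_rel_eq)
    obtain j w where h: "h = (j, w)" by (cases h)
    show ?thesis unfolding r h acg_SRr[OF Q]
      by (intro SR_ker_sum SR_ker_psmult SRr_in)
  qed
  show ?thesis using x unfolding SR_ker_kspan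
  proof (rule kspan_islin_image[rotated 2])
    fix y assume "y \<in> {fmul a (fmul r b) |a r b. r \<in> SR_rel R}"
    then obtain a r b where y: "y = fmul a (fmul r b)" "r \<in> SR_rel R" by blast
    show "lin (acg R g) y \<in> kspan {fmul a (fmul r b) |a r b. r \<in> SR_rel R}"
      unfolding y acgl_fmul fmul_sum2 SR_ker_kspan[symmetric]
      by (intro SR_ker_sum SR_ker_mul r y)
  qed simp
qed

lemma act_SR: "QYBE R \<Longrightarrow> x \<in> SR_ker R \<Longrightarrow> act R w x \<in> SR_ker R"
  by (induct w) (auto intro: acg_SR)

definition actA :: "('n::finite \<Rightarrow> 'n \<Rightarrow> 'n \<Rightarrow> 'n \<Rightarrow> 'k::comm_ring_1) \<Rightarrow> (('n \<times> 'n) list \<Rightarrow>\<^sub>0 'k) \<Rightarrow> ('n list \<Rightarrow>\<^sub>0 'k) \<Rightarrow> ('n list \<Rightarrow>\<^sub>0 'k)" where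
  "actA R y p = lin (\<lambda>w. act R w p) y"

lemma actA_bas[simp]: "actA R (bas w) p = act R w p" by (simp add: actA_def)

lemma islin_actA1[simp]: "islin (\<lambda>y. actA R y p)" by (simp add: actA_def)

lemma islin_actA2[simp]: "islin (actA R y)"
  unfolding actA_def islin_def using islin_act[of R]
  by (auto simp: lin_def islin_def pm.scale_right_distrib sum.distrib pm.scale_sum_right mult.commute)

lemma actA_SR: "QYBE R \<Longrightarrow> p \<in> SR_ker R \<Longrightarrow> actA R y p \<in> SR_ker R"
  unfolding actA_def by (intro SR_ker_lin act_SR)

lemma actA_fmulA: "actA R (fmul y y') p = actA R y (actA R y' p)"
proof (rule bilin_eqI2[of "\<lambda>y y'. actA R (fmul y y') p" "\<lambda>y y'. actA R y (actA R y' p)"])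
  show "islin (\<lambda>y'. actA R y (actA R y' p))" for y
    using islin_comp[OF islin_actA2[of R y] islin_actA1[of R p]] by simp
  show "islin (\<lambda>y'. actA R (fmul y y') p)" for y
    using islin_comp[OF islin_actA1[of R p] islin_fmul2[of y]] by simp
  show "islin (\<lambda>y. actA R (fmul y y') p)" for y'
    using islin_comp[OF islin_actA1[of R p] islin_fmul1[of y']] by simp
  show "islin (\<lambda>y. actA R y (actA R y' p))" for y' by simp
qed (simp add: act_append)

lemma actA_fmulS: "actA R y (fmul p q) = lin (\<lambda>(a, b). fmul (act R a p) (act R b q)) (lin dA y)"
proof (rule lin_eqI[of "\<lambda>y. actA R y (fmul p q)" "\<lambda>y. lin (\<lambda>(a, b). fmul (act R a p) (act R b q)) (lin dA y)"])
  show "islin (\<lambda>y. lin (\<lambda>(a, b). fmul (act R a p) (act R b q)) (lin dA y))"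
    using islin_comp[OF islin_lin islin_lin] by blast
qed (simp_all add: lin_dA act_fmul)

lemma sum_rev3: "(\<Sum>a\<in>A. \<Sum>b\<in>B. \<Sum>c\<in>C. f a b c) = (\<Sum>c\<in>C. \<Sum>b\<in>B. \<Sum>a\<in>A. f a b c)"
  by (subst sum_rot3) (rule sum.cong[OF refl], rule sum.swap)

lemma collect3: "(\<Sum>u\<in>U. \<Sum>v\<in>V. psmult (c u v) (\<Sum>p\<in>P. psmult (d u v p) (\<Sum>m\<in>M. psmult (e u v p m) (f m))))
   = (\<Sum>m\<in>M. psmult (\<Sum>u\<in>U. \<Sum>v\<in>V. \<Sum>p\<in>P. c u v * d u v p * e u v p m) (f m))"
proof -
  have "(\<Sum>u\<in>U. \<Sum>v\<in>V. psmult (c u v) (\<Sum>p\<in>P. psmult (d u v p) (\<Sum>m\<in>M. psmult (e u v p m) (f m))))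
     = (\<Sum>u\<in>U. \<Sum>v\<in>V. \<Sum>p\<in>P. \<Sum>m\<in>M. psmult (c u v * d u v p * e u v p m) (f m))"
    by (simp add: pm.scale_sum_right mult.assoc)
  also have "\<dots> = (\<Sum>m\<in>M. \<Sum>u\<in>U. \<Sum>v\<in>V. \<Sum>p\<in>P. psmult (c u v * d u v p * e u v p m) (f m))"
    by (simp only: sum.swap[of _ P M] sum.swap[of _ V M] sum.swap[of _ U M])
  also have "\<dots> = (\<Sum>m\<in>M. psmult (\<Sum>u\<in>U. \<Sum>v\<in>V. \<Sum>p\<in>P. c u v * d u v p * e u v p m) (f m))"
    by (simp add: pm.scale_sum_left)
  finally show ?thesis .
qed

lemma lin_acg_single: "lin (acg R (j, v)) (fgen u) = (\<Sum>i\<in>UNIV. psmult (R i j u v) (fgen i))"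
  unfolding fgen_def' lin_bas by (rule acg_single[unfolded fgen_def'])

lemma act_two_gen: "act R [(a, b), (c, d)] (fgen x) = (\<Sum>p\<in>UNIV. psmult (R p c x d) (\<Sum>m\<in>UNIV. psmult (R m a p b) (fgen m)))"
  by (simp only: act.simps lin_acg_single lin_sum lin_psmult)

lemma actA_ARr_gen:
  assumes Q: "QYBE R"
  shows "actA R (ARr R i j k l) (fgen x) = 0"
proof -
  have "actA R (ARr R i j k l) (fgen x) =
     (\<Sum>u\<in>UNIV. \<Sum>v\<in>UNIV. psmult (R i j v u) (\<Sum>p\<in>UNIV. psmult (R p v x l) (\<Sum>m\<in>UNIV. psmult (R m u p k) (fgen m))))
   - (\<Sum>u\<in>UNIV. \<Sum>v\<in>UNIV. psmult (R v u l k) (\<Sum>p\<in>UNIV. psmult (R p j x u) (\<Sum>m\<in>UNIV. psmult (R m i p v) (fgen m))))"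
    by (simp add: ARr_def actA_def lin_diff lin_sum lin_psmult act_two_gen del: act.simps)
  also have "\<dots> = (\<Sum>m\<in>UNIV. psmult (\<Sum>u\<in>UNIV. \<Sum>v\<in>UNIV. \<Sum>p\<in>UNIV. R i j v u * R p v x l * R m u p k) (fgen m))
     - (\<Sum>m\<in>UNIV. psmult (\<Sum>u\<in>UNIV. \<Sum>v\<in>UNIV. \<Sum>p\<in>UNIV. R v u l k * R p j x u * R m i p v) (fgen m))"
    by (simp only: collect3)
  also have "\<dots> = 0"
  proof -
    have "(\<Sum>u\<in>UNIV. \<Sum>v\<in>UNIV. \<Sum>p\<in>UNIV. R i j v u * R p v x l * R m u p k)
        = (\<Sum>u\<in>UNIV. \<Sum>v\<in>UNIV. \<Sum>p\<in>UNIV. R v u l k * R p j x u * R m i p v)" for m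
    proof -
      have "(\<Sum>u\<in>UNIV. \<Sum>v\<in>UNIV. \<Sum>p\<in>UNIV. R i j v u * R p v x l * R m u p k)
          = (\<Sum>p\<in>UNIV. \<Sum>v\<in>UNIV. \<Sum>u\<in>UNIV. R p v x l * R m u p k * R i j v u)"
        by (subst sum_rev3) (simp add: ac_simps)
      also have "\<dots> = (\<Sum>p\<in>UNIV. \<Sum>v\<in>UNIV. \<Sum>u\<in>UNIV. R m i p v * R p j x u * R v u l k)"
        using QYBE_D[OF Q, of m i j x l k] by simp
      also have "\<dots> = (\<Sum>u\<in>UNIV. \<Sum>v\<in>UNIV. \<Sum>p\<in>UNIV. R v u l k * R p j x u * R m i p v)"
        by (subst sum_rev3) (simp add: ac_simps)
      finally show ?thesis .
    qed
    then show ?thesis by simp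
  qed
  finally show ?thesis .
qed

lemma sum_swap22: "(\<Sum>a\<in>A. \<Sum>b\<in>B. \<Sum>c\<in>C. \<Sum>d\<in>D. f a b c d) = (\<Sum>c\<in>C. \<Sum>d\<in>D. \<Sum>a\<in>A. \<Sum>b\<in>B. f a b c d)"
proof -
  have "(\<Sum>a\<in>A. \<Sum>b\<in>B. \<Sum>c\<in>C. \<Sum>d\<in>D. f a b c d) = (\<Sum>a\<in>A. \<Sum>c\<in>C. \<Sum>d\<in>D. \<Sum>b\<in>B. f a b c d)"
    by (rule sum.cong[OF refl]) (rule sum_rot3')
  also have "\<dots> = (\<Sum>c\<in>C. \<Sum>d\<in>D. \<Sum>a\<in>A. \<Sum>b\<in>B. f a b c d)"
    by (rule sum_rot3')
  finally show ?thesis .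
qed

lemma dA_ARr: fixes R :: "'n::finite \<Rightarrow> 'n \<Rightarrow> 'n \<Rightarrow> 'n \<Rightarrow> 'k::comm_ring_1"
  shows "lin dA (ARr R i j k l) =
   (\<Sum>a\<in>(UNIV::'n set). \<Sum>b\<in>(UNIV::'n set). ptens (ARr R i j a b) (bas [(a, k), (b, l)]))
 + (\<Sum>v\<in>(UNIV::'n set). \<Sum>u\<in>(UNIV::'n set). ptens (bas [(i, v), (j, u)]) (ARr R v u k l))"
proof -
  define T1 where "T1 = (\<Sum>u\<in>(UNIV::'n set). \<Sum>v\<in>(UNIV::'n set). \<Sum>a\<in>(UNIV::'n set). \<Sum>b\<in>(UNIV::'n set). psmult (R i j v u) (bas ([(u,a),(v,b)],[(a,k),(b,l)])))"
  define T2 where "T2 = (\<Sum>u\<in>(UNIV::'n set). \<Sum>v\<in>(UNIV::'n set). \<Sum>a\<in>(UNIV::'n set). \<Sum>b\<in>(UNIV::'n set). psmult (R v u l k) (bas ([(i,a),(j,b)],[(a,v),(b,u)])))"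
  define X1 where "X1 = (\<Sum>a\<in>(UNIV::'n set). \<Sum>b\<in>(UNIV::'n set). \<Sum>u\<in>(UNIV::'n set). \<Sum>v\<in>(UNIV::'n set). psmult (R i j v u) (bas ([(u,a),(v,b)],[(a,k),(b,l)])))"
  define X2 where "X2 = (\<Sum>a\<in>(UNIV::'n set). \<Sum>b\<in>(UNIV::'n set). \<Sum>u\<in>(UNIV::'n set). \<Sum>v\<in>(UNIV::'n set). psmult (R v u b a) (bas ([(i,v),(j,u)],[(a,k),(b,l)])))"
  define Y1 where "Y1 = (\<Sum>v\<in>(UNIV::'n set). \<Sum>u\<in>(UNIV::'n set). \<Sum>a\<in>(UNIV::'n set). \<Sum>b\<in>(UNIV::'n set). psmult (R v u b a) (bas ([(i,v),(j,u)],[(a,k),(b,l)])))"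
  define Y2 where "Y2 = (\<Sum>v\<in>(UNIV::'n set). \<Sum>u\<in>(UNIV::'n set). \<Sum>a\<in>(UNIV::'n set). \<Sum>b\<in>(UNIV::'n set). psmult (R b a l k) (bas ([(i,v),(j,u)],[(v,b),(u,a)])))"
  have L: "lin dA (ARr R i j k l) = T1 - T2"
    by (simp add: ARr_def T1_def T2_def lin_diff lin_sum lin_psmult pm.scale_sum_right)
  have RR: "(\<Sum>a\<in>(UNIV::'n set). \<Sum>b\<in>(UNIV::'n set). ptens (ARr R i j a b) (bas [(a, k), (b, l)]))
    + (\<Sum>v\<in>(UNIV::'n set). \<Sum>u\<in>(UNIV::'n set). ptens (bas [(i, v), (j, u)]) (ARr R v u k l)) = (X1 - X2) + (Y1 - Y2)"
    by (simp add: ARr_def X1_def X2_def Y1_def Y2_def ptens_lin sum_subtractf)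
  have 1: "X1 = T1" unfolding X1_def T1_def by (rule sum_swap22)
  have 2: "X2 = Y1" unfolding X2_def Y1_def by (subst sum_swap22) (rule sum.swap)
  have 3: "Y2 = T2" unfolding Y2_def T2_def by (rule sum_swap22)
  show ?thesis using L RR 1 2 3 by simp
qed

lemma dA_append: "dA (x @ y) = tm fmul (dA x) (dA y)"
proof -
  have "dA (x @ y) = (\<Sum>L1\<in>LS (length x). \<Sum>L2\<in>LS (length y). bas (zl x L1 @ zl y L2, zr L1 x @ zr L2 y))"
    unfolding dA_explicit length_append sum_LS_add
    by (rule sum.cong[OF refl], rule sum.cong[OF refl]) (simp add: LS_def zl_append zr_append)
  also have "\<dots> = tm fmul (dA x) (dA y)"
    by (simp add: dA_explicit tm_sum1 tm_sum2 tm_bas, rule sum.swap)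
  finally show ?thesis .
qed

lemma lin_dA_fmul: "lin dA (fmul y y') = tm fmul (lin dA y) (lin dA y')"
proof (rule bilin_eqI2[of "\<lambda>y y'. lin dA (fmul y y')" "\<lambda>y y'. tm fmul (lin dA y) (lin dA y')"])
  show "islin (\<lambda>y'. lin dA (fmul y y'))" for y
    using islin_comp[OF islin_lin[of dA] islin_fmul2[of y]] by simp
  show "islin (\<lambda>ya. lin dA (fmul ya y'))" for y'
    using islin_comp[OF islin_lin[of dA] islin_fmul1[of y']] by simp
  show "islin (\<lambda>y'. tm fmul (lin dA y) (lin dA y'))" for y
    using islin_comp[OF islin_tm2[of fmul "lin dA y"] islin_lin[of dA]] by simp
  show "islin (\<lambda>y. tm fmul (lin dA y) (lin dA y'))" for y'
    using islin_comp[OF islin_tm1[of fmul "lin dA y'"] islin_lin[of dA]] by simp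
qed (simp add: dA_append)

definition JA :: "('n::finite \<Rightarrow> 'n \<Rightarrow> 'n \<Rightarrow> 'n \<Rightarrow> 'k::comm_ring_1) \<Rightarrow> (('n \<times> 'n) list \<times> ('n \<times> 'n) list \<Rightarrow>\<^sub>0 'k) set" where
  "JA R = kspan ({ptens x y | x y. x \<in> AR_ker R} \<union> {ptens x y | x y. y \<in> AR_ker R})"

lemma JA_gen1: "x \<in> AR_ker R \<Longrightarrow> ptens x y \<in> JA R"
  and JA_gen2: "y \<in> AR_ker R \<Longrightarrow> ptens x y \<in> JA R"
  unfolding JA_def by (rule kspan_gen, blast)+

lemma JA_add: "x \<in> JA R \<Longrightarrow> y \<in> JA R \<Longrightarrow> x + y \<in> JA R"
  and JA_sum: "(\<And>a. a \<in> A \<Longrightarrow> f a \<in> JA R) \<Longrightarrow> sum f A \<in> JA R"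
  and JA_lin: "(\<And>x. g x \<in> JA R) \<Longrightarrow> lin g p \<in> JA R"
  unfolding JA_def by (auto intro: kspan.intros kspan_sum kspan_lin)

lemma fmul_islin1: "islin (\<lambda>p. fmul p q)" and fmul_islin2: "islin (\<lambda>q. fmul p q)" by simp_all

lemma JA_tm:
  assumes "Z \<in> JA R"
  shows "tm fmul Z W \<in> JA R" "tm fmul W Z \<in> JA R"
proof -
  have tp: "tm fmul (ptens a b) (ptens c d) = ptens (fmul a c) (fmul b d)" for a b c d :: "('a \<times> 'a) list \<Rightarrow>\<^sub>0 'b"
    by (rule tm_ptens) simp_all
  have g1: "tm fmul X W \<in> JA R" if "X \<in> {ptens x y | x y. x \<in> AR_ker R} \<union> {ptens x y | x y. y \<in> AR_ker R}" for X
  proof -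
    have "tm fmul X W = lin (\<lambda>z. tm fmul X (bas z)) W" by (rule islin_eq_lin) simp
    also have "\<dots> \<in> JA R"
    proof (rule JA_lin)
      fix z :: "('a \<times> 'a) list \<times> ('a \<times> 'a) list"
      obtain a b where z: "z = (a, b)" by (cases z)
      from that obtain x y where X: "X = ptens x y" and xy: "x \<in> AR_ker R \<or> y \<in> AR_ker R" by blast
      have e: "tm fmul X (bas z) = ptens (fmul x (bas a)) (fmul y (bas b))"
        unfolding X z ptens_bas[symmetric] by (rule tp)
      show "tm fmul X (bas z) \<in> JA R"
        unfolding e using xy by (auto intro: JA_gen1 JA_gen2 AR_ker_mul)
    qed
    finally show ?thesis .
  qed
  have g2: "tm fmul W X \<in> JA R" if "X \<in> {ptens x y | x y. x \<in> AR_ker R} \<union> {ptens x y | x y. y \<in> AR_ker R}" for X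
  proof -
    have "tm fmul W X = lin (\<lambda>z. tm fmul (bas z) X) W" by (rule islin_eq_lin) simp
    also have "\<dots> \<in> JA R"
    proof (rule JA_lin)
      fix z :: "('a \<times> 'a) list \<times> ('a \<times> 'a) list"
      obtain a b where z: "z = (a, b)" by (cases z)
      from that obtain x y where X: "X = ptens x y" and xy: "x \<in> AR_ker R \<or> y \<in> AR_ker R" by blast
      have e: "tm fmul (bas z) X = ptens (fmul (bas a) x) (fmul (bas b) y)"
        unfolding X z ptens_bas[symmetric] by (rule tp)
      show "tm fmul (bas z) X \<in> JA R"
        unfolding e using xy by (auto intro: JA_gen1 JA_gen2 AR_ker_mul)
    qed
    finally show ?thesis .
  qed
  show "tm fmul Z W \<in> JA R" using assms unfolding JA_def
    by (rule kspan_islin_image[of "\<lambda>Z. tm fmul Z W", rotated 2]) (simp, use g1[unfolded JA_def] in blast)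
  show "tm fmul W Z \<in> JA R" using assms unfolding JA_def
    by (rule kspan_islin_image[of "\<lambda>Z. tm fmul W Z", rotated 2]) (simp, use g2[unfolded JA_def] in blast)
qed

lemma dA_AR:
  assumes "y \<in> AR_ker R" shows "lin dA y \<in> JA R"
proof -
  have gen: "lin dA g \<in> JA R" if gin: "g \<in> {fmul a (fmul r b) |a r b. r \<in> AR_rel R}" for g
  proof -
    obtain a r b where g: "g = fmul a (fmul r b)" "r \<in> AR_rel R" using gin by blast
    then obtain i j k l where r: "r = ARr R i j k l" by (auto simp: AR_rel_eq)
    have "lin dA r \<in> JA R"
      unfolding r dA_ARr by (intro JA_add JA_sum JA_gen1 JA_gen2 ARr_in)
    then show "lin dA g \<in> JA R" unfolding g lin_dA_fmul by (intro JA_tm)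
  qed
  show ?thesis
    using kspan_islin_image[OF islin_lin gen[unfolded JA_def] assms[unfolded AR_ker_kspan]]
    unfolding JA_def .
qed



section \<open>Elements of AR_ker act by elements of SR_ker\<close>

lemma delta2: "(\<Sum>u\<in>(UNIV::'a::finite set). \<Sum>v\<in>(UNIV::'b::finite set). if u = a \<and> v = b then f u v else 0) = f a b"
proof -
  have "(\<Sum>v\<in>(UNIV::'b set). if u = a \<and> v = b then f u v else 0) = (if u = a then f u b else 0)" for u
    by (cases "u = a") (simp_all add: sum.delta)
  then show ?thesis by (simp add: sum.delta)
qed

lemma lin_Phi_ptens: "lin (\<lambda>(a, b). fmul (act R a p) (act R b q)) (ptens X Y) = fmul (actA R X p) (actA R Y q)"
proof (rule bilin_eqI2[of "\<lambda>X Y. lin (\<lambda>(a, b). fmul (act R a p) (act R b q)) (ptens X Y)"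
      "\<lambda>X Y. fmul (actA R X p) (actA R Y q)"])
  show "islin (\<lambda>X. lin (\<lambda>(a, b). fmul (act R a p) (act R b q)) (ptens X Y))" for Y
    using islin_comp[OF islin_lin islin_ptens1] by blast
  show "islin (\<lambda>Y. lin (\<lambda>(a, b). fmul (act R a p) (act R b q)) (ptens X Y))" for X
    using islin_comp[OF islin_lin islin_ptens2] by blast
  show "islin (\<lambda>X. fmul (actA R X p) (actA R Y q))" for Y
    using islin_comp[OF islin_fmul1 islin_actA1] by blast
  show "islin (\<lambda>Y. fmul (actA R X p) (actA R Y q))" for X
    using islin_comp[OF islin_fmul2 islin_actA1] by blast
qed simp

lemma actA_ARr_fone: "actA R (ARr R i j k l) (bas []) = 0"
proof -
  have "actA R (ARr R i j k l) (bas []) =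
     (\<Sum>u\<in>UNIV. \<Sum>v\<in>UNIV. psmult (R i j v u) (psmult (epsA [(u, k), (v, l)]) (bas [])))
   - (\<Sum>u\<in>UNIV. \<Sum>v\<in>UNIV. psmult (R v u l k) (psmult (epsA [(i, v), (j, u)]) (bas [])))"
    using act_fone[of R, unfolded fone_def]
    by (simp only: ARr_def actA_def lin_diff lin_sum lin_psmult lin_bas)
  also have "\<dots> = psmult (\<Sum>u\<in>UNIV. \<Sum>v\<in>UNIV. R i j v u * epsA [(u, k), (v, l)]) (bas [])
     - psmult (\<Sum>u\<in>UNIV. \<Sum>v\<in>UNIV. R v u l k * epsA [(i, v), (j, u)]) (bas [])"
    by (simp only: pm.scale_scale pm.scale_sum_left)
  also have "\<dots> = 0"
  proof -
    have 1: "(\<Sum>u\<in>UNIV. \<Sum>v\<in>UNIV. R i j v u * epsA [(u, k), (v, l)]) = R i j l k"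
    proof -
      have "(\<Sum>u\<in>UNIV. \<Sum>v\<in>UNIV. R i j v u * epsA [(u, k), (v, l)]) =
         (\<Sum>u\<in>UNIV. \<Sum>v\<in>UNIV. if u = k \<and> v = l then R i j v u else 0)"
        by (intro sum.cong refl) simp
      then show ?thesis by (simp only: delta2)
    qed
    have 2: "(\<Sum>u\<in>UNIV. \<Sum>v\<in>UNIV. R v u l k * epsA [(i, v), (j, u)]) = R i j l k"
    proof -
      have "(\<Sum>u\<in>UNIV. \<Sum>v\<in>UNIV. R v u l k * epsA [(i, v), (j, u)]) =
         (\<Sum>u\<in>UNIV. \<Sum>v\<in>UNIV. if u = j \<and> v = i then R v u l k else 0)"
        by (intro sum.cong refl) auto
      then show ?thesis by (simp only: delta2)
    qed
    show ?thesis by (simp only: 1 2 diff_self)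
  qed
  finally show ?thesis .
qed

lemma actA_ARr_word:
  assumes Q: "QYBE R"
  shows "actA R (ARr R i j k l) (bas w) \<in> SR_ker R"
proof (induct w arbitrary: i j k l)
  case Nil
  then show ?case by (simp add: actA_ARr_fone SR_ker_zero)
next
  case (Cons m w)
  have "actA R (ARr R i j k l) (bas (m # w)) = actA R (ARr R i j k l) (fmul (fgen m) (bas w))"
    by (simp add: fgen_def')
  also have "\<dots> = (\<Sum>a\<in>UNIV. \<Sum>b\<in>UNIV. fmul (actA R (ARr R i j a b) (fgen m)) (actA R (bas [(a, k), (b, l)]) (bas w)))
      + (\<Sum>v\<in>UNIV. \<Sum>u\<in>UNIV. fmul (actA R (bas [(i, v), (j, u)]) (fgen m)) (actA R (ARr R v u k l) (bas w)))"
    by (simp only: actA_fmulS dA_ARr lin_add lin_sum lin_Phi_ptens)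
  also have "\<dots> = (\<Sum>v\<in>UNIV. \<Sum>u\<in>UNIV. fmul (actA R (bas [(i, v), (j, u)]) (fgen m)) (actA R (ARr R v u k l) (bas w)))"
    by (simp add: actA_ARr_gen[OF Q])
  also have "\<dots> \<in> SR_ker R"
    by (intro SR_ker_sum SR_ker_mul Cons)
  finally show ?case .
qed

lemma actA_ARr: "QYBE R \<Longrightarrow> actA R (ARr R i j k l) q \<in> SR_ker R"
  by (subst islin_eq_lin[OF islin_actA2]) (intro SR_ker_lin actA_ARr_word)

lemma actA_AR:
  assumes Q: "QYBE R" and y: "y \<in> AR_ker R"
  shows "actA R y p \<in> SR_ker R"
proof -
  have gen: "actA R g p \<in> SR_ker R" if gin: "g \<in> {fmul a (fmul r b) |a r b. r \<in> AR_rel R}" for g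
  proof -
    obtain a r b where g: "g = fmul a (fmul r b)" "r \<in> AR_rel R" using gin by blast
    then obtain i j k l where r: "r = ARr R i j k l" by (auto simp: AR_rel_eq)
    show ?thesis unfolding g r actA_fmulA
      by (intro actA_SR[OF Q] actA_ARr[OF Q])
  qed
  show ?thesis
    using kspan_islin_image[OF islin_actA1 gen[unfolded SR_ker_kspan] y[unfolded AR_ker_kspan]]
    unfolding SR_ker_kspan .
qed

section \<open>The kernel of the smash product is an ideal\<close>

lemma NH_gen1: "x \<in> SR_ker R \<Longrightarrow> ptens x y \<in> smash_ker R"
  and NH_gen2: "y \<in> AR_ker R \<Longrightarrow> ptens x y \<in> smash_ker R"
  unfolding smash_ker_def by (rule kspan_gen, blast)+

lemma NH_add: "x \<in> smash_ker R \<Longrightarrow> y \<in> smash_ker R \<Longrightarrow> x + y \<in> smash_ker R"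
  and NH_diff: "x \<in> smash_ker R \<Longrightarrow> y \<in> smash_ker R \<Longrightarrow> x - y \<in> smash_ker R"
  and NH_psmult: "x \<in> smash_ker R \<Longrightarrow> psmult c x \<in> smash_ker R"
  and NH_zero: "0 \<in> smash_ker R"
  and NH_sum: "(\<And>a. a \<in> A \<Longrightarrow> f a \<in> smash_ker R) \<Longrightarrow> sum f A \<in> smash_ker R"
  and NH_lin: "(\<And>x. g x \<in> smash_ker R) \<Longrightarrow> lin g p \<in> smash_ker R"
  and NH_uminus: "x \<in> smash_ker R \<Longrightarrow> - x \<in> smash_ker R"
  unfolding smash_ker_def by (auto intro: kspan.intros kspan_diff kspan_sum kspan_lin kspan_uminus)

lemma NH_cong: "a - b \<in> smash_ker R \<Longrightarrow> b - c \<in> smash_ker R \<Longrightarrow> a - c \<in> smash_ker R"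
  unfolding smash_ker_def by (rule kspan_cong_diff)

lemma NH_sym: "a - b \<in> smash_ker R \<Longrightarrow> b - a \<in> smash_ker R"
  using NH_uminus by fastforce

lemma smash_ptens_left: "smash_mul R (ptens p y) (pt q w') = lin (\<lambda>(a, b). pt (fmul p (act R a q)) (b @ w')) (lin dA y)"
proof (rule lin_eqI[of "\<lambda>y. smash_mul R (ptens p y) (pt q w')" "\<lambda>y. lin (\<lambda>(a, b). pt (fmul p (act R a q)) (b @ w')) (lin dA y)"])
  show "islin (\<lambda>y. smash_mul R (ptens p y) (pt q w'))"
    using islin_comp[OF islin_smash1 islin_ptens2] by blast
  show "islin (\<lambda>y. lin (\<lambda>(a, b). pt (fmul p (act R a q)) (b @ w')) (lin dA y))"
    using islin_comp[OF islin_lin islin_lin] by blast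
qed (simp add: pt_def[symmetric] smash_pt lin_dA)

lemma smash_ptens_right: "smash_mul R (pt q w) (ptens p y) =
   (\<Sum>L\<in>LS (length w). ptens (fmul q (act R (zl w L) p)) (fmul (bas (zr L w)) y))"
proof (rule lin_eqI[of "\<lambda>y. smash_mul R (pt q w) (ptens p y)"])
  show "islin (\<lambda>y. smash_mul R (pt q w) (ptens p y))"
    using islin_comp[OF islin_smash2 islin_ptens2] by blast
  show "islin (\<lambda>y. \<Sum>L\<in>LS (length w). ptens (fmul q (act R (zl w L) p)) (fmul (bas (zr L w)) y))"
    by (simp add: islin_def ptens_lin fmul_lin sum.distrib pm.scale_sum_right)
qed (simp add: pt_def[symmetric] smash_pt)

lemma smash_ker_ideal:
  assumes Q: "QYBE R" and x: "x \<in> smash_ker R"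
  shows "smash_mul R x Z \<in> smash_ker R" "smash_mul R Z x \<in> smash_ker R"
proof -
  let ?G = "{ptens x y | x y. x \<in> SR_ker R} \<union> {ptens x y | x y. y \<in> AR_ker R}"
  have right: "smash_mul R g (pt q w') \<in> smash_ker R" if "g \<in> ?G" for g q w'
  proof -
    from that obtain p y where g: "g = ptens p y" and py: "p \<in> SR_ker R \<or> y \<in> AR_ker R" by blast
    show ?thesis
    proof (cases "p \<in> SR_ker R")
      case True
      show ?thesis unfolding g smash_ptens_left
        by (intro NH_lin) (auto simp: pt_def intro!: NH_gen1 SR_ker_mul(1) True)
    next
      case False
      then have y: "y \<in> AR_ker R" using py by blast
      let ?Psi = "lin (\<lambda>(a, b). pt (fmul p (act R a q)) (b @ w'))"
      have psi: "?Psi (ptens Y1 Y2) = ptens (fmul p (actA R Y1 q)) (fmul Y2 (bas w'))" for Y1 Y2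
      proof (rule bilin_eqI2[of "\<lambda>Y1 Y2. ?Psi (ptens Y1 Y2)" "\<lambda>Y1 Y2. ptens (fmul p (actA R Y1 q)) (fmul Y2 (bas w'))"])
        show "islin (\<lambda>Y1. ?Psi (ptens Y1 Y2))" for Y2
          using islin_comp[OF islin_lin islin_ptens1] by blast
        show "islin (\<lambda>Y2. ?Psi (ptens Y1 Y2))" for Y1
          using islin_comp[OF islin_lin islin_ptens2] by blast
        show "islin (\<lambda>Y1. ptens (fmul p (actA R Y1 q)) (fmul Y2 (bas w')))" for Y2
          using islin_comp[OF islin_ptens1 islin_comp[OF islin_fmul2 islin_actA1]] by blast
        show "islin (\<lambda>Y2. ptens (fmul p (actA R Y1 q)) (fmul Y2 (bas w')))" for Y1
          using islin_comp[OF islin_ptens2 islin_fmul1] by blast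
      qed (simp add: pt_def)
      have "?Psi Z \<in> smash_ker R" if "Z \<in> JA R" for Z
      proof -
        have "?Psi g' \<in> smash_ker R" if "g' \<in> {ptens x y | x y. x \<in> AR_ker R} \<union> {ptens x y | x y. y \<in> AR_ker R}" for g'
          using that by (auto simp: psi intro: NH_gen1[OF SR_ker_mul(2)[OF actA_AR[OF Q]]] NH_gen2[OF AR_ker_mul(1)])
        then show ?thesis
          using kspan_islin_image[OF islin_lin, of "{ptens x y | x y. x \<in> AR_ker R} \<union> {ptens x y | x y. y \<in> AR_ker R}" _ ?G Z]
            \<open>Z \<in> JA R\<close> unfolding JA_def smash_ker_def by blast
      qed
      then show ?thesis unfolding g smash_ptens_left using dA_AR[OF y] by blast
    qed
  qed
  have left: "smash_mul R (pt q w) g \<in> smash_ker R" if "g \<in> ?G" for g q w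
  proof -
    from that obtain p y where g: "g = ptens p y" and py: "p \<in> SR_ker R \<or> y \<in> AR_ker R" by blast
    show ?thesis unfolding g smash_ptens_right
      using py by (auto intro!: NH_sum intro: NH_gen1 NH_gen2 SR_ker_mul act_SR[OF Q] AR_ker_mul)
  qed
  have right': "smash_mul R g Z \<in> smash_ker R" if "g \<in> ?G" for g
  proof -
    have "smash_mul R g Z = lin (\<lambda>z. smash_mul R g (bas z)) Z" by (rule islin_eq_lin) simp
    also have "\<dots> \<in> smash_ker R"
    proof (rule NH_lin)
      fix z :: "'a list \<times> ('a \<times> 'a) list"
      obtain q w' where z: "z = (q, w')" by (cases z)
      show "smash_mul R g (bas z) \<in> smash_ker R" using right[OF that, of "bas q" w'] by (simp add: z)
    qed
    finally show ?thesis .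
  qed
  have left': "smash_mul R Z g \<in> smash_ker R" if "g \<in> ?G" for g
  proof -
    have "smash_mul R Z g = lin (\<lambda>z. smash_mul R (bas z) g) Z" by (rule islin_eq_lin) simp
    also have "\<dots> \<in> smash_ker R"
    proof (rule NH_lin)
      fix z :: "'a list \<times> ('a \<times> 'a) list"
      obtain q w' where z: "z = (q, w')" by (cases z)
      show "smash_mul R (bas z) g \<in> smash_ker R" using left[OF that, of "bas q" w'] by (simp add: z)
    qed
    finally show ?thesis .
  qed
  show "smash_mul R x Z \<in> smash_ker R"
    using kspan_islin_image[OF islin_smash1 right'[unfolded smash_ker_def] x[unfolded smash_ker_def]]
    unfolding smash_ker_def .
  show "smash_mul R Z x \<in> smash_ker R"
    using kspan_islin_image[OF islin_smash2 left'[unfolded smash_ker_def] x[unfolded smash_ker_def]]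
    unfolding smash_ker_def .
qed

lemma quot_alg_smash: "QYBE R \<Longrightarrow> quot_alg (smash_mul R) smash_one (smash_ker R)"
  unfolding quot_alg_def
  by (auto simp: smash_lin smash_assoc NH_zero intro: NH_add NH_psmult smash_ker_ideal)

lemma quot_alg_SR: "quot_alg fmul fone (SR_ker R)"
  unfolding SR_ker_def by (rule quot_alg_free)



definition eqH :: "('n::finite \<Rightarrow> 'n \<Rightarrow> 'n \<Rightarrow> 'n \<Rightarrow> 'k::comm_ring_1) \<Rightarrow> ('n list \<times> ('n \<times> 'n) list \<Rightarrow>\<^sub>0 'k) \<Rightarrow> ('n list \<times> ('n \<times> 'n) list \<Rightarrow>\<^sub>0 'k) \<Rightarrow> bool" where
  "eqH R a b \<longleftrightarrow> a - b \<in> smash_ker R"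

definition eqS :: "('n::finite \<Rightarrow> 'n \<Rightarrow> 'n \<Rightarrow> 'n \<Rightarrow> 'k::comm_ring_1) \<Rightarrow> ('n list \<Rightarrow>\<^sub>0 'k) \<Rightarrow> ('n list \<Rightarrow>\<^sub>0 'k) \<Rightarrow> bool" where
  "eqS R a b \<longleftrightarrow> a - b \<in> SR_ker R"

lemma eqH_refl[simp]: "eqH R a a" by (simp add: eqH_def NH_zero)
lemma eqH_eq: "a = b \<Longrightarrow> eqH R a b" by simp
lemma eqH_sym: "eqH R a b \<Longrightarrow> eqH R b a" unfolding eqH_def by (rule NH_sym)
lemma eqH_trans[trans]: "eqH R a b \<Longrightarrow> eqH R b c \<Longrightarrow> eqH R a c" unfolding eqH_def by (rule NH_cong)
lemma eqH_trans_eq1[trans]: "a = b \<Longrightarrow> eqH R b c \<Longrightarrow> eqH R a c" by simp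
lemma eqH_trans_eq2[trans]: "eqH R a b \<Longrightarrow> b = c \<Longrightarrow> eqH R a c" by simp
lemma add_diff_add': "(a + c) - (b + d) = (a - b) + (c - (d::'a::ab_group_add))" by (simp add: algebra_simps)
lemma diff_diff_diff': "(a - c) - (b - d) = (a - b) - (c - (d::'a::ab_group_add))" by (simp add: algebra_simps)
lemma eqH_add: "eqH R a b \<Longrightarrow> eqH R c d \<Longrightarrow> eqH R (a + c) (b + d)"
  unfolding eqH_def add_diff_add' by (rule NH_add)
lemma eqH_diff: "eqH R a b \<Longrightarrow> eqH R c d \<Longrightarrow> eqH R (a - c) (b - d)"
  unfolding eqH_def diff_diff_diff' by (rule NH_diff)
lemma eqH_psmult: "eqH R a b \<Longrightarrow> eqH R (psmult c a) (psmult c b)"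
  unfolding eqH_def using NH_psmult by (metis pm.scale_right_diff_distrib)
lemma eqH_sum: "(\<And>x. x \<in> A \<Longrightarrow> eqH R (f x) (g x)) \<Longrightarrow> eqH R (sum f A) (sum g A)"
  unfolding eqH_def by (simp add: sum_subtractf[symmetric] NH_sum)
lemma eqH_lin: "(\<And>x. eqH R (f x) (g x)) \<Longrightarrow> eqH R (lin f p) (lin g p)"
  unfolding eqH_def by (simp add: lin_diff_fun[symmetric] NH_lin)
lemma eqH_0: "x \<in> smash_ker R \<Longrightarrow> eqH R (a + x) a" by (simp add: eqH_def)
lemma eqH_0': "x \<in> smash_ker R \<Longrightarrow> eqH R a (a + x)" using eqH_0 eqH_sym by blast
lemma eqH_mul1: "QYBE R \<Longrightarrow> eqH R a b \<Longrightarrow> eqH R (smash_mul R a c) (smash_mul R b c)"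
  unfolding eqH_def by (metis smash_diff1 smash_ker_ideal(1))
lemma eqH_mul2: "QYBE R \<Longrightarrow> eqH R a b \<Longrightarrow> eqH R (smash_mul R c a) (smash_mul R c b)"
  unfolding eqH_def by (metis smash_diff2 smash_ker_ideal(2))
lemma eqH_mul: "QYBE R \<Longrightarrow> eqH R a b \<Longrightarrow> eqH R c d \<Longrightarrow> eqH R (smash_mul R a c) (smash_mul R b d)"
  by (meson eqH_mul1 eqH_mul2 eqH_trans)
lemma eqH_ptens1: "eqS R a b \<Longrightarrow> eqH R (ptens a y) (ptens b y)"
  unfolding eqH_def eqS_def by (metis NH_gen1 ptens_diff1)
lemma eqH_ptens2: "b - c \<in> AR_ker R \<Longrightarrow> eqH R (ptens a b) (ptens a c)"
  unfolding eqH_def by (metis NH_gen2 ptens_diff2)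

lemma eqS_refl[simp]: "eqS R a a" by (simp add: eqS_def SR_ker_zero)
lemma SR_ker_uminus: "x \<in> SR_ker R \<Longrightarrow> - x \<in> SR_ker R"
  using SR_ker_psmult[of x R "-1"] by (simp add: psmult_minus1)
lemma eqS_sym: "eqS R a b \<Longrightarrow> eqS R b a" unfolding eqS_def using SR_ker_uminus[of "a - b" R] by simp
lemma eqS_trans[trans]: "eqS R a b \<Longrightarrow> eqS R b c \<Longrightarrow> eqS R a c"
  unfolding eqS_def using SR_ker_add by fastforce
lemma eqS_trans_eq1[trans]: "a = b \<Longrightarrow> eqS R b c \<Longrightarrow> eqS R a c" by simp
lemma eqS_trans_eq2[trans]: "eqS R a b \<Longrightarrow> b = c \<Longrightarrow> eqS R a c" by simp
lemma eqS_add: "eqS R a b \<Longrightarrow> eqS R c d \<Longrightarrow> eqS R (a + c) (b + d)"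
  unfolding eqS_def add_diff_add' by (rule SR_ker_add)
lemma eqS_psmult: "eqS R a b \<Longrightarrow> eqS R (psmult c a) (psmult c b)"
  unfolding eqS_def using SR_ker_psmult by (metis pm.scale_right_diff_distrib)
lemma eqS_sum: "(\<And>x. x \<in> A \<Longrightarrow> eqS R (f x) (g x)) \<Longrightarrow> eqS R (sum f A) (sum g A)"
  unfolding eqS_def by (simp add: sum_subtractf[symmetric] SR_ker_sum)
lemma eqS_mul1: "eqS R a b \<Longrightarrow> eqS R (fmul a c) (fmul b c)"
  unfolding eqS_def by (metis fmul_diff1 SR_ker_mul(1))
lemma eqS_mul2: "eqS R a b \<Longrightarrow> eqS R (fmul c a) (fmul c b)"
  unfolding eqS_def by (metis fmul_diff2 SR_ker_mul(2))
lemma eqS_0: "x \<in> SR_ker R \<Longrightarrow> eqS R (a + x) a" by (simp add: eqS_def)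
lemma eqS_0': "x \<in> SR_ker R \<Longrightarrow> eqS R (a - x) a" by (simp add: eqS_def SR_ker_uminus)

definition sS :: "('n list \<Rightarrow>\<^sub>0 'k::comm_ring_1) \<Rightarrow> ('n list \<times> ('n \<times> 'n) list \<Rightarrow>\<^sub>0 'k)" where
  "sS p = lin (\<lambda>x. bas (x, [])) p"

definition tgen :: "'n::finite \<Rightarrow> ('n list \<times> ('n \<times> 'n) list \<Rightarrow>\<^sub>0 'k::comm_ring_1)" where
  "tgen u = (\<Sum>v\<in>UNIV. bas ([v], [(v, u)]))"

primrec TT :: "('n::finite \<Rightarrow> 'n \<Rightarrow> 'n \<Rightarrow> 'n \<Rightarrow> 'k::comm_ring_1) \<Rightarrow> 'n list \<Rightarrow> ('n list \<times> ('n \<times> 'n) list \<Rightarrow>\<^sub>0 'k)" where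
  "TT R [] = smash_one"
| "TT R (u # x) = smash_mul R (TT R x) (tgen u)"

definition tS :: "('n::finite \<Rightarrow> 'n \<Rightarrow> 'n \<Rightarrow> 'n \<Rightarrow> 'k::comm_ring_1) \<Rightarrow> ('n list \<Rightarrow>\<^sub>0 'k) \<Rightarrow> ('n list \<times> ('n \<times> 'n) list \<Rightarrow>\<^sub>0 'k)" where
  "tS R p = lin (TT R) p"

definition EE :: "('n list \<times> ('n \<times> 'n) list \<Rightarrow>\<^sub>0 'k::comm_ring_1) \<Rightarrow> ('n list \<Rightarrow>\<^sub>0 'k)" where
  "EE h = lin (\<lambda>(x, w). psmult (epsA w) (bas x)) h"

definition DD :: "('n::finite list \<times> ('n \<times> 'n) list \<Rightarrow>\<^sub>0 'k::comm_ring_1) \<Rightarrow> (('n list \<times> ('n \<times> 'n) list) \<times> ('n list \<times> ('n \<times> 'n) list) \<Rightarrow>\<^sub>0 'k)" where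
  "DD h = lin (\<lambda>(x, w). lin (\<lambda>(w1, w2). bas ((x, w1), ([], w2))) (dA w)) h"

lemma islin_sS[simp]: "islin sS" and islin_tS[simp]: "islin (tS R)" and islin_EE[simp]: "islin EE"
  and islin_DD[simp]: "islin DD"
  by (simp_all add: sS_def[abs_def] tS_def[abs_def] EE_def[abs_def] DD_def[abs_def])

lemma sS_pt: "sS p = pt p []"
  by (rule lin_eqI[of sS "\<lambda>p. pt p []"]) (simp_all add: sS_def)

lemma EE_pt: "EE (pt p w) = psmult (epsA w) p"
  by (rule lin_eqI[of "\<lambda>p. EE (pt p w)" "\<lambda>p. psmult (epsA w) p"])
     (simp_all add: EE_def islin_def pt_lin lin_add lin_psmult pm.scale_right_distrib mult.commute)

lemma EE_bas: "EE (bas (x, w)) = psmult (epsA w) (bas x)"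
  by (simp add: EE_def)

lemma sS_mul_pt: "smash_mul R (sS a) (pt q w) = pt (fmul a q) w"
  by (simp add: sS_pt smash_pt)

lemma sS_mul: "smash_mul R (sS a) (sS b) = sS (fmul a b)"
  by (simp add: sS_pt smash_pt)

lemma sS_fone: "sS fone = smash_one"
  by (simp add: sS_pt smash_one_pt)

lemma sS_in: "a \<in> SR_ker R \<Longrightarrow> sS a \<in> smash_ker R"
  by (simp add: sS_pt pt_def NH_gen1)

lemma TT_append: "TT R (x @ y) = smash_mul R (TT R y) (TT R x)"
  by (induct x) (simp_all add: smash_assoc)

lemma tS_fmul: "tS R (fmul p q) = smash_mul R (tS R q) (tS R p)"
proof (rule bilin_eqI2[of "\<lambda>p q. tS R (fmul p q)" "\<lambda>p q. smash_mul R (tS R q) (tS R p)"])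
  show "islin (\<lambda>p. tS R (fmul p q))" for q using islin_comp[OF islin_tS islin_fmul1] by blast
  show "islin (\<lambda>q. tS R (fmul p q))" for p using islin_comp[OF islin_tS islin_fmul2] by blast
  show "islin (\<lambda>p. smash_mul R (tS R q) (tS R p))" for q using islin_comp[OF islin_smash2 islin_tS] by blast
  show "islin (\<lambda>q. smash_mul R (tS R q) (tS R p))" for p using islin_comp[OF islin_smash1 islin_tS] by blast
qed (simp add: tS_def TT_append)

lemma tS_fone: "tS R fone = smash_one" by (simp add: tS_def fone_def)

lemma tS_fgen: "tS R (fgen i) = tgen i" by (simp add: tS_def fgen_def')

lemma sS_fgen: "sS (fgen i) = bas ([i], [])" by (simp add: sS_def fgen_def')

lemma EE_mul_bas_pt: "EE (smash_mul R (bas (x, w)) (pt q w')) = psmult (epsA w') (fmul (bas x) (act R w q))"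
proof -
  have "EE (smash_mul R (bas (x, w)) (pt q w')) =
     (\<Sum>L\<in>LS (length w). psmult (epsA (zr L w)) (psmult (epsA w') (fmul (bas x) (act R (zl w L) q))))"
    using smash_pt[of R "bas x" w q w'] by (simp add: islin_sum[OF islin_EE] EE_pt epsA_append mult.commute)
  also have "\<dots> = psmult (epsA w') (fmul (bas x) (actA R (\<Sum>L\<in>LS (length w). psmult (epsA (zr L w)) (bas (zl w L))) q))"
    by (simp add: islin_sum[OF islin_actA1] fmul_lin pm.scale_sum_right lin_psmult actA_def lin_sum mult.commute)
  also have "\<dots> = psmult (epsA w') (fmul (bas x) (act R w q))"
    by (simp add: counit_r)
  finally show ?thesis .
qed

lemma EE_sS_mul: "EE (smash_mul R (sS a) h) = fmul a (EE h)"
proof (rule bilin_eqI2[of "\<lambda>a h. EE (smash_mul R (sS a) h)" "\<lambda>a h. fmul a (EE h)"])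
  show "islin (\<lambda>a. EE (smash_mul R (sS a) h))" for h
    using islin_comp[OF islin_EE islin_comp[OF islin_smash1 islin_sS]] by blast
  show "islin (\<lambda>h. EE (smash_mul R (sS a) h))" for a
    using islin_comp[OF islin_EE islin_smash2] by blast
  show "islin (\<lambda>a. fmul a (EE h))" for h by simp
  show "islin (\<lambda>h. fmul a (EE h))" for a using islin_comp[OF islin_fmul2 islin_EE] by blast
next
  fix x :: "'a list" and z :: "'a list \<times> ('a \<times> 'a) list"
  obtain y w where z: "z = (y, w)" by (cases z)
  show "EE (smash_mul R (sS (bas x)) (bas z)) = fmul (bas x) (EE (bas z))"
    by (simp add: z sS_mul_pt[of R "bas x" "bas y" w, simplified] EE_bas fmul_psmult2)
qed

lemma EE_ptens: "EE (ptens p y) = fmul p (actA R y fone)"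
proof (rule bilin_eqI2[of "\<lambda>p y. EE (ptens p y)" "\<lambda>p y. fmul p (actA R y fone)"])
  show "islin (\<lambda>p. EE (ptens p y))" for y using islin_comp[OF islin_EE islin_ptens1] by blast
  show "islin (\<lambda>y. EE (ptens p y))" for p using islin_comp[OF islin_EE islin_ptens2] by blast
  show "islin (\<lambda>p. fmul p (actA R y fone))" for y by simp
  show "islin (\<lambda>y. fmul p (actA R y fone))" for p using islin_comp[OF islin_fmul2 islin_actA1] by blast
qed (simp add: EE_bas act_fone fmul_psmult2)

lemma EE_NH:
  assumes Q: "QYBE R" and h: "h \<in> smash_ker R"
  shows "EE h \<in> SR_ker R"
proof -
  have gen: "EE g \<in> SR_ker R" if gin: "g \<in> {ptens x y | x y. x \<in> SR_ker R} \<union> {ptens x y | x y. y \<in> AR_ker R}" for g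
    using gin by (auto simp: EE_ptens[of _ _ R] intro: SR_ker_mul(1) SR_ker_mul(2)[OF actA_AR[OF Q]])
  show ?thesis
    using kspan_islin_image[OF islin_EE gen[unfolded SR_ker_kspan] h[unfolded smash_ker_def]]
    unfolding SR_ker_kspan .
qed

lemma eqS_EE: "QYBE R \<Longrightarrow> eqH R a b \<Longrightarrow> eqS R (EE a) (EE b)"
  unfolding eqH_def eqS_def by (metis EE_NH islin_EE islin_minus)



lemma eqS_lin: "(\<And>x. eqS R (f x) (g x)) \<Longrightarrow> eqS R (lin f p) (lin g p)"
  unfolding eqS_def by (simp add: lin_diff_fun[symmetric] SR_ker_lin)

lemma eqS_islin: "islin F \<Longrightarrow> islin G \<Longrightarrow> (\<And>x. eqS R (F (bas x)) (G (bas x))) \<Longrightarrow> eqS R (F p) (G p)"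
  by (subst (1 2) islin_eq_lin[where p=p]) (auto intro: eqS_lin)

lemma eqH_islin: "islin F \<Longrightarrow> islin G \<Longrightarrow> (\<And>x. eqH R (F (bas x)) (G (bas x))) \<Longrightarrow> eqH R (F p) (G p)"
  by (subst (1 2) islin_eq_lin[where p=p]) (auto intro: eqH_lin)

lemma EE_mul_bas_bas: "EE (smash_mul R (bas (x, w)) (bas (y, w'))) = psmult (epsA w') (fmul (bas x) (act R w (bas y)))"
  using EE_mul_bas_pt[of R x w "bas y" w'] by simp

section \<open>Braided commutation in S_R and the counit\<close>

lemma SRr_expand: "bas [m, l] - SRr R m l = (\<Sum>u\<in>UNIV. \<Sum>p\<in>UNIV. psmult (R p u m l) (bas [u, p]))"
  by (simp add: SRr_def)

lemma BCw: "eqS R (\<Sum>u\<in>UNIV. fmul (fgen u) (acg R (u, i) y)) (fmul (bas y) (fgen i))"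
proof (induct y)
  case Nil
  have "(\<Sum>u\<in>UNIV. fmul (fgen u) (acg R (u, i) [])) = fgen i"
    by (simp add: if_distrib[of "fmul _"] cong: if_cong)
  then show ?case by (simp add: fgen_def')
next
  case (Cons m y)
  have "(\<Sum>u\<in>UNIV. fmul (fgen u) (acg R (u, i) (m # y)))
     = (\<Sum>u\<in>UNIV. \<Sum>l\<in>UNIV. \<Sum>p\<in>UNIV. fmul (psmult (R p u m l) (bas [u, p])) (acg R (l, i) y))"
    by (simp add: fmul_sum2 fmul_psmult2 fmul_psmult1 fmul_assoc[symmetric] fgen_def')
  also have "\<dots> = (\<Sum>l\<in>UNIV. fmul (bas [m, l] - SRr R m l) (acg R (l, i) y))"
    unfolding SRr_expand fmul_sum1 by (rule sum.swap)
  also have "eqS R \<dots> (\<Sum>l\<in>UNIV. fmul (bas [m, l]) (acg R (l, i) y))"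
    by (intro eqS_sum) (simp add: fmul_diff1 eqS_0' SR_ker_mul(1) SRr_in)
  also have "\<dots> = fmul (fgen m) (\<Sum>l\<in>UNIV. fmul (fgen l) (acg R (l, i) y))"
    by (simp add: fmul_sum2 fmul_assoc[symmetric] fgen_def')
  also have "eqS R \<dots> (fmul (fgen m) (fmul (bas y) (fgen i)))"
    by (rule eqS_mul2[OF Cons])
  also have "\<dots> = fmul (bas (m # y)) (fgen i)"
    by (simp add: fmul_assoc[symmetric] fgen_def')
  finally show ?case .
qed

lemma EE_tgen: "eqS R (EE (smash_mul R (tgen i) h)) (fmul (EE h) (fgen i))"
proof (rule eqS_islin[of "\<lambda>h. EE (smash_mul R (tgen i) h)" "\<lambda>h. fmul (EE h) (fgen i)"])
  show "islin (\<lambda>h. EE (smash_mul R (tgen i) h))" using islin_comp[OF islin_EE islin_smash2] by blast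
  show "islin (\<lambda>h. fmul (EE h) (fgen i))" using islin_comp[OF islin_fmul1 islin_EE] by blast
next
  fix z :: "'a list \<times> ('a \<times> 'a) list"
  obtain y w where z: "z = (y, w)" by (cases z)
  have "EE (smash_mul R (tgen i) (bas z)) = (\<Sum>u\<in>UNIV. psmult (epsA w) (fmul (fgen u) (acg R (u, i) y)))"
    unfolding tgen_def smash_sum1 islin_sum[OF islin_EE] z EE_mul_bas_bas
    by (simp add: fgen_def')
  also have "\<dots> = psmult (epsA w) (\<Sum>u\<in>UNIV. fmul (fgen u) (acg R (u, i) y))"
    by (simp add: pm.scale_sum_right)
  also have "eqS R \<dots> (psmult (epsA w) (fmul (bas y) (fgen i)))"
    by (rule eqS_psmult[OF BCw])
  also have "\<dots> = fmul (EE (bas z)) (fgen i)"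
    by (simp add: z EE_bas fmul_psmult1)
  finally show "eqS R (EE (smash_mul R (tgen i) (bas z))) (fmul (EE (bas z)) (fgen i))" .
qed

lemma EE_TT: "QYBE R \<Longrightarrow> eqS R (EE (smash_mul R (TT R b) h)) (fmul (EE h) (bas b))"
proof (induct b arbitrary: h)
  case Nil
  then show ?case by (simp add: fone_def[symmetric])
next
  case (Cons i b)
  have "EE (smash_mul R (TT R (i # b)) h) = EE (smash_mul R (TT R b) (smash_mul R (tgen i) h))"
    by (simp add: smash_assoc)
  also have "eqS R \<dots> (fmul (EE (smash_mul R (tgen i) h)) (bas b))"
    by (rule Cons(1)[OF Cons(2)])
  also have "eqS R \<dots> (fmul (fmul (EE h) (fgen i)) (bas b))"
    by (rule eqS_mul1[OF EE_tgen])
  also have "\<dots> = fmul (EE h) (bas (i # b))"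
    by (simp add: fmul_assoc fgen_def')
  finally show ?case .
qed

lemma EE_tS: "QYBE R \<Longrightarrow> eqS R (EE (smash_mul R (tS R b) h)) (fmul (EE h) b)"
proof (rule eqS_islin[of "\<lambda>b. EE (smash_mul R (tS R b) h)" "\<lambda>b. fmul (EE h) b"])
  show "islin (\<lambda>b. EE (smash_mul R (tS R b) h))"
    using islin_comp[OF islin_EE islin_comp[OF islin_smash1 islin_tS]] by blast
qed (simp_all add: tS_def EE_TT)

section \<open>Source and target commute\<close>

definition comm :: "('n::finite \<Rightarrow> 'n \<Rightarrow> 'n \<Rightarrow> 'n \<Rightarrow> 'k::comm_ring_1) \<Rightarrow> _ \<Rightarrow> _ \<Rightarrow> bool" where
  "comm R a b \<longleftrightarrow> eqH R (smash_mul R a b) (smash_mul R b a)"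

lemma comm_one[simp]: "comm R smash_one a" "comm R a smash_one" by (simp_all add: comm_def)

lemma comm_mul_right:
  assumes Q: "QYBE R" and "comm R x a" "comm R x b"
  shows "comm R x (smash_mul R a b)"
proof -
  have "smash_mul R x (smash_mul R a b) = smash_mul R (smash_mul R x a) b" by (simp add: smash_assoc)
  also have "eqH R \<dots> (smash_mul R (smash_mul R a x) b)"
    using assms by (simp add: comm_def eqH_mul1)
  also have "\<dots> = smash_mul R a (smash_mul R x b)" by (simp add: smash_assoc)
  also have "eqH R \<dots> (smash_mul R a (smash_mul R b x))"
    using assms by (simp add: comm_def eqH_mul2)
  also have "\<dots> = smash_mul R (smash_mul R a b) x" by (simp add: smash_assoc)
  finally show ?thesis unfolding comm_def .
qed

lemma comm_mul_left:
  assumes Q: "QYBE R" and "comm R a x" "comm R b x"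
  shows "comm R (smash_mul R a b) x"
proof -
  have "smash_mul R (smash_mul R a b) x = smash_mul R a (smash_mul R b x)" by (simp add: smash_assoc)
  also have "eqH R \<dots> (smash_mul R a (smash_mul R x b))"
    using assms by (simp add: comm_def eqH_mul2)
  also have "\<dots> = smash_mul R (smash_mul R a x) b" by (simp add: smash_assoc)
  also have "eqH R \<dots> (smash_mul R (smash_mul R x a) b)"
    using assms by (simp add: comm_def eqH_mul1)
  also have "\<dots> = smash_mul R x (smash_mul R a b)" by (simp add: smash_assoc)
  finally show ?thesis unfolding comm_def .
qed

lemma comm_gen: "comm R (sS (fgen i)) (tgen j)"
proof -
  have L: "smash_mul R (sS (fgen i)) (tgen j) = (\<Sum>l\<in>UNIV. pt (bas [i, l]) [(l, j)])"
    unfolding tgen_def smash_sum2 pt_bas[symmetric] sS_mul_pt by (simp add: fgen_def')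
  have "smash_mul R (tgen j) (sS (fgen i)) =
      (\<Sum>u\<in>UNIV. \<Sum>l\<in>UNIV. pt (fmul (bas [u]) (act R [(u, l)] (fgen i))) [(l, j)])"
    unfolding tgen_def smash_sum1 pt_bas[symmetric] sS_pt smash_pt
    by (simp add: sum_LS_Suc)
  also have "\<dots> = (\<Sum>l\<in>UNIV. pt (\<Sum>u\<in>UNIV. \<Sum>m\<in>UNIV. psmult (R m u i l) (bas [u, m])) [(l, j)])"
    by (subst sum.swap) (simp del: acg.simps add: acg_single fmul_sum2 fmul_psmult2 pt_lin fgen_def')
  also have "\<dots> = (\<Sum>l\<in>UNIV. pt (bas [i, l] - SRr R i l) [(l, j)])"
    by (simp only: SRr_expand)
  finally have "smash_mul R (sS (fgen i)) (tgen j) = smash_mul R (tgen j) (sS (fgen i)) + (\<Sum>l\<in>UNIV. pt (SRr R i l) [(l, j)])"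
    unfolding L by (simp add: pt_diff sum_subtractf)
  then show ?thesis unfolding comm_def
    by (simp add: eqH_0 pt_def NH_sum NH_gen1 SRr_in)
qed

lemma comm_sS_TT: "QYBE R \<Longrightarrow> comm R (sS (fgen i)) (TT R y)"
  by (induct y) (auto intro: comm_mul_right comm_gen)

lemma sS_cons: "sS (bas (i # x)) = smash_mul R (sS (fgen i)) (sS (bas x))"
  by (simp add: sS_mul fgen_def')

lemma comm_sS_TT': "QYBE R \<Longrightarrow> comm R (sS (bas x)) (TT R y)"
proof (induct x)
  case Nil
  then show ?case by (simp add: sS_fone[unfolded fone_def])
next
  case (Cons i x)
  then show ?case unfolding sS_cons[of _ _ R] by (intro comm_mul_left comm_sS_TT)
qed

lemma st_comm: "QYBE R \<Longrightarrow> smash_mul R (sS a) (tS R b) - smash_mul R (tS R b) (sS a) \<in> smash_ker R"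
proof -
  assume Q: "QYBE R"
  have "eqH R (smash_mul R (sS a) (tS R b)) (smash_mul R (tS R b) (sS a))"
  proof (rule eqH_islin[of "\<lambda>a. smash_mul R (sS a) (tS R b)" "\<lambda>a. smash_mul R (tS R b) (sS a)"])
    show "islin (\<lambda>a. smash_mul R (sS a) (tS R b))" using islin_comp[OF islin_smash1 islin_sS] by blast
    show "islin (\<lambda>a. smash_mul R (tS R b) (sS a))" using islin_comp[OF islin_smash2 islin_sS] by blast
    fix x
    show "eqH R (smash_mul R (sS (bas x)) (tS R b)) (smash_mul R (tS R b) (sS (bas x)))"
    proof (rule eqH_islin[of "\<lambda>b. smash_mul R (sS (bas x)) (tS R b)" "\<lambda>b. smash_mul R (tS R b) (sS (bas x))"])
      show "islin (\<lambda>b. smash_mul R (sS (bas x)) (tS R b))" using islin_comp[OF islin_smash2 islin_tS] by blast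
      show "islin (\<lambda>b. smash_mul R (tS R b) (sS (bas x)))" using islin_comp[OF islin_smash1 islin_tS] by blast
    qed (use comm_sS_TT'[OF Q] in \<open>simp add: tS_def comm_def\<close>)
  qed
  then show ?thesis by (simp add: eqH_def)
qed

lemma comm_sS_tS: "QYBE R \<Longrightarrow> comm R (sS a) (tS R b)"
  using st_comm by (simp add: comm_def eqH_def)

lemma EE_mul_tgen: "EE (smash_mul R X (tgen i)) = EE (smash_mul R X (sS (fgen i)))"
proof (rule lin_eqI[of "\<lambda>X. EE (smash_mul R X (tgen i))" "\<lambda>X. EE (smash_mul R X (sS (fgen i)))"])
  show "islin (\<lambda>X. EE (smash_mul R X (tgen i)))" using islin_comp[OF islin_EE islin_smash1] by blast
  show "islin (\<lambda>X. EE (smash_mul R X (sS (fgen i))))" using islin_comp[OF islin_EE islin_smash1] by blast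
next
  fix z :: "'a list \<times> ('a \<times> 'a) list"
  obtain x w where z: "z = (x, w)" by (cases z)
  have "EE (smash_mul R (bas z) (tgen i)) = (\<Sum>u\<in>UNIV. psmult (epsA [(u, i)]) (fmul (bas x) (act R w (bas [u]))))"
    unfolding tgen_def smash_sum2 islin_sum[OF islin_EE] z EE_mul_bas_bas by simp
  also have "\<dots> = fmul (bas x) (act R w (bas [i]))"
    by (simp add: if_distrib[of "\<lambda>c. psmult c _"] cong: if_cong)
  also have "\<dots> = EE (smash_mul R (bas z) (sS (fgen i)))"
    by (simp add: z sS_fgen EE_mul_bas_bas)
  finally show "EE (smash_mul R (bas z) (tgen i)) = EE (smash_mul R (bas z) (sS (fgen i)))" .
qed

lemma EE_mul_TT: "QYBE R \<Longrightarrow> eqS R (EE (smash_mul R g (TT R a))) (EE (smash_mul R g (sS (bas a))))"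
proof (induct a arbitrary: g)
  case Nil
  then show ?case by (simp add: sS_fone[unfolded fone_def])
next
  case (Cons i a)
  have "EE (smash_mul R g (TT R (i # a))) = EE (smash_mul R g (smash_mul R (TT R a) (sS (fgen i))))"
    using EE_mul_tgen[of R "smash_mul R g (TT R a)" i] by (simp add: smash_assoc)
  also have "eqS R \<dots> (EE (smash_mul R g (smash_mul R (sS (fgen i)) (TT R a))))"
  proof -
    have c: "eqH R (smash_mul R (TT R a) (sS (fgen i))) (smash_mul R (sS (fgen i)) (TT R a))"
      using comm_sS_TT[OF Cons(2), of i a] unfolding comm_def by (rule eqH_sym)
    show ?thesis by (rule eqS_EE[OF Cons(2) eqH_mul2[OF Cons(2) c]])
  qed
  also have "\<dots> = EE (smash_mul R (smash_mul R g (sS (fgen i))) (TT R a))" by (simp add: smash_assoc)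
  also have "eqS R \<dots> (EE (smash_mul R (smash_mul R g (sS (fgen i))) (sS (bas a))))"
    by (rule Cons(1)[OF Cons(2)])
  also have "\<dots> = EE (smash_mul R g (sS (bas (i # a))))" by (simp add: smash_assoc sS_cons[of _ _ R])
  finally show ?case .
qed

lemma EE_mul_tS: "QYBE R \<Longrightarrow> eqS R (EE (smash_mul R g (tS R a))) (EE (smash_mul R g (sS a)))"
proof (rule eqS_islin[of "\<lambda>a. EE (smash_mul R g (tS R a))" "\<lambda>a. EE (smash_mul R g (sS a))"])
  show "islin (\<lambda>a. EE (smash_mul R g (tS R a)))"
    using islin_comp[OF islin_EE islin_comp[OF islin_smash2 islin_tS]] by blast
  show "islin (\<lambda>a. EE (smash_mul R g (sS a)))"
    using islin_comp[OF islin_EE islin_comp[OF islin_smash2 islin_sS]] by blast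
qed (simp add: tS_def EE_mul_TT)

lemma EE_mul_sEE: "EE (smash_mul R g h) = EE (smash_mul R g (sS (EE h)))"
proof (rule bilin_eqI2[of "\<lambda>g h. EE (smash_mul R g h)" "\<lambda>g h. EE (smash_mul R g (sS (EE h)))"])
  show "islin (\<lambda>g. EE (smash_mul R g h))" for h using islin_comp[OF islin_EE islin_smash1] by blast
  show "islin (\<lambda>h. EE (smash_mul R g h))" for g using islin_comp[OF islin_EE islin_smash2] by blast
  show "islin (\<lambda>g. EE (smash_mul R g (sS (EE h))))" for h using islin_comp[OF islin_EE islin_smash1] by blast
  show "islin (\<lambda>h. EE (smash_mul R g (sS (EE h))))" for g
    using islin_comp[OF islin_EE islin_comp[OF islin_smash2 islin_comp[OF islin_sS islin_EE]]] by blast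
next
  fix z z' :: "'a list \<times> ('a \<times> 'a) list"
  obtain x w where z: "z = (x, w)" by (cases z)
  obtain y w' where z': "z' = (y, w')" by (cases z')
  show "EE (smash_mul R (bas z) (bas z')) = EE (smash_mul R (bas z) (sS (EE (bas z'))))"
    using EE_mul_bas_pt[of R x w "bas y" w'] EE_mul_bas_pt[of R x w "bas y" "[]"]
    by (simp add: z z' EE_bas sS_pt pt_psmult smash_psmult2 lin_psmult islin_EE[unfolded islin_def])
qed



definition Yf :: "'n::finite \<Rightarrow> 'n \<Rightarrow> ('n list \<times> ('n \<times> 'n) list \<Rightarrow>\<^sub>0 'k::comm_ring_1)" where
  "Yf b l = (\<Sum>a\<in>UNIV. \<Sum>m\<in>UNIV. bas ([a, m], [(m, b), (a, l)]))"

lemma tgen_tgen: "smash_mul R (tgen v) (tgen u) =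
  (\<Sum>a\<in>UNIV. \<Sum>b\<in>UNIV. \<Sum>l\<in>UNIV. \<Sum>m\<in>UNIV. psmult (R m a b l) (bas ([a, m], [(l, v), (b, u)])))"
  unfolding tgen_def smash_sum1 smash_sum2
  by (simp del: acg.simps add: smash_bas sum_LS_Suc acg_single fmul_sum2 fmul_psmult2 pt_lin fgen_def', rule sum.swap)

lemma tgen_tgen_eq:
  fixes R :: "'n::finite \<Rightarrow> 'n \<Rightarrow> 'n \<Rightarrow> 'n \<Rightarrow> 'k::comm_ring_1"
  shows "eqH R (smash_mul R (tgen v) (tgen u)) (\<Sum>b\<in>UNIV. \<Sum>l\<in>UNIV. psmult (R b l u v) (Yf b l))"
proof -
  define P1 where "P1 = (\<Sum>a\<in>(UNIV::'n set). \<Sum>m\<in>(UNIV::'n set). \<Sum>l\<in>(UNIV::'n set). \<Sum>b\<in>(UNIV::'n set).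
      psmult (R m a b l) (bas ([a, m], [(l, v), (b, u)])))"
  define N1 where "N1 = (\<Sum>a\<in>(UNIV::'n set). \<Sum>m\<in>(UNIV::'n set). \<Sum>l\<in>(UNIV::'n set). \<Sum>b\<in>(UNIV::'n set).
      psmult (R b l u v) (bas ([a, m], [(m, b), (a, l)])))"
  define Q where "Q = (\<Sum>b\<in>(UNIV::'n set). \<Sum>l\<in>(UNIV::'n set). \<Sum>a\<in>(UNIV::'n set). \<Sum>m\<in>(UNIV::'n set).
      psmult (R b l u v) (bas ([a, m], [(m, b), (a, l)])))"
  have A: "(\<Sum>a\<in>UNIV. \<Sum>m\<in>UNIV. ptens (bas [a, m]) (ARr R m a v u)) = P1 - N1"
    by (simp add: ARr_def P1_def N1_def ptens_lin sum_subtractf)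
  have B: "(\<Sum>b\<in>UNIV. \<Sum>l\<in>UNIV. psmult (R b l u v) (Yf b l)) = Q"
    by (simp add: Yf_def Q_def pm.scale_sum_right)
  have C: "smash_mul R (tgen v) (tgen u) = P1"
    unfolding tgen_tgen P1_def by (rule sum.cong[OF refl]) (rule sum_rev3)
  have D: "N1 = Q" unfolding N1_def Q_def by (subst sum_swap22) (rule sum.swap)
  have "smash_mul R (tgen v) (tgen u) = Q + (\<Sum>a\<in>UNIV. \<Sum>m\<in>UNIV. ptens (bas [a, m]) (ARr R m a v u))"
    unfolding A C D[symmetric] by simp
  also have "eqH R \<dots> Q"
    by (rule eqH_0) (intro NH_sum NH_gen2 ARr_in)
  finally show ?thesis unfolding B .
qed

lemma Yf_eq:
  fixes R :: "'n::finite \<Rightarrow> 'n \<Rightarrow> 'n \<Rightarrow> 'n \<Rightarrow> 'k::comm_ring_1"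
  shows "eqH R (Yf b l) (\<Sum>u\<in>UNIV. \<Sum>v\<in>UNIV. psmult (R v u l b) (Yf v u))"
proof -
  define W1 where "W1 = (\<Sum>a\<in>(UNIV::'n set). \<Sum>m\<in>(UNIV::'n set). \<Sum>i\<in>(UNIV::'n set). \<Sum>p\<in>(UNIV::'n set).
      psmult (R p i a m) (bas ([i, p], [(m, b), (a, l)])))"
  define W2 where "W2 = (\<Sum>i\<in>(UNIV::'n set). \<Sum>p\<in>(UNIV::'n set). \<Sum>m\<in>(UNIV::'n set). \<Sum>a\<in>(UNIV::'n set).
      psmult (R p i a m) (bas ([i, p], [(m, b), (a, l)])))"
  define W3 where "W3 = (\<Sum>i\<in>(UNIV::'n set). \<Sum>p\<in>(UNIV::'n set). \<Sum>u\<in>(UNIV::'n set). \<Sum>v\<in>(UNIV::'n set).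
      psmult (R v u l b) (bas ([i, p], [(p, v), (i, u)])))"
  define T where "T = (\<Sum>u\<in>(UNIV::'n set). \<Sum>v\<in>(UNIV::'n set). \<Sum>a\<in>(UNIV::'n set). \<Sum>m\<in>(UNIV::'n set).
      psmult (R v u l b) (bas ([a, m], [(m, v), (a, u)])))"
  have y: "Yf b l = (\<Sum>a\<in>UNIV. \<Sum>m\<in>UNIV. ptens (bas [a, m] - SRr R a m) (bas [(m, b), (a, l)]))
      + (\<Sum>a\<in>UNIV. \<Sum>m\<in>UNIV. ptens (SRr R a m) (bas [(m, b), (a, l)]))"
    by (simp add: Yf_def ptens_diff1 sum_subtractf)
  have 1: "(\<Sum>a\<in>UNIV. \<Sum>m\<in>UNIV. ptens (bas [a, m] - SRr R a m) (bas [(m, b), (a, l)])) = W1"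
    unfolding SRr_expand W1_def by (simp add: ptens_lin)
  have 2: "W1 = W2" unfolding W1_def W2_def by (subst sum_swap22) (rule sum.cong[OF refl], rule sum.cong[OF refl], rule sum.swap)
  have 3: "(\<Sum>i\<in>UNIV. \<Sum>p\<in>UNIV. ptens (bas [i, p]) (ARr R p i b l)) = W2 - W3"
    by (simp add: ARr_def W2_def W3_def ptens_lin sum_subtractf)
  have 4: "W3 = T" unfolding W3_def T_def by (rule sum_swap22)
  have 5: "(\<Sum>u\<in>UNIV. \<Sum>v\<in>UNIV. psmult (R v u l b) (Yf v u)) = T"
    by (simp add: Yf_def T_def pm.scale_sum_right)
  have "Yf b l = (T + (\<Sum>i\<in>UNIV. \<Sum>p\<in>UNIV. ptens (bas [i, p]) (ARr R p i b l)))
     + (\<Sum>a\<in>UNIV. \<Sum>m\<in>UNIV. ptens (SRr R a m) (bas [(m, b), (a, l)]))"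
    unfolding y 1 2 3 4 by simp
  also have "eqH R \<dots> (T + (\<Sum>i\<in>UNIV. \<Sum>p\<in>UNIV. ptens (bas [i, p]) (ARr R p i b l)))"
    by (rule eqH_0) (intro NH_sum NH_gen1 SRr_in)
  also have "eqH R \<dots> T"
    by (rule eqH_0) (intro NH_sum NH_gen2 ARr_in)
  finally show ?thesis unfolding 5 .
qed

lemma TT_two: "TT R [x, y] = smash_mul R (tgen y) (tgen x)"
  by simp

lemma tS_SRr:
  fixes R :: "'n::finite \<Rightarrow> 'n \<Rightarrow> 'n \<Rightarrow> 'n \<Rightarrow> 'k::comm_ring_1"
  shows "tS R (SRr R u v) \<in> smash_ker R"
proof -
  have Z: "eqH R (\<Sum>b\<in>UNIV. \<Sum>l'\<in>UNIV. psmult (R b l' i l) (Yf b l')) (Yf l i)" for i l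
  proof -
    have "(\<Sum>b\<in>UNIV. \<Sum>l'\<in>UNIV. psmult (R b l' i l) (Yf b l')) = (\<Sum>u\<in>UNIV. \<Sum>v\<in>UNIV. psmult (R v u i l) (Yf v u))"
      by (rule sum.swap)
    then show ?thesis using Yf_eq[of R l i] by (simp add: eqH_sym)
  qed
  have "tS R (SRr R u v) = smash_mul R (tgen v) (tgen u) - (\<Sum>i\<in>UNIV. \<Sum>l\<in>UNIV. psmult (R l i u v) (smash_mul R (tgen l) (tgen i)))"
    by (simp add: SRr_def tS_def lin_diff lin_sum lin_psmult)
  also have "eqH R \<dots> ((\<Sum>b\<in>UNIV. \<Sum>l\<in>UNIV. psmult (R b l u v) (Yf b l))
      - (\<Sum>i\<in>UNIV. \<Sum>l\<in>UNIV. psmult (R l i u v) (\<Sum>b\<in>UNIV. \<Sum>l'\<in>UNIV. psmult (R b l' i l) (Yf b l'))))"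
    by (intro eqH_diff tgen_tgen_eq eqH_sum eqH_psmult)
  also have "eqH R \<dots> ((\<Sum>b\<in>UNIV. \<Sum>l\<in>UNIV. psmult (R b l u v) (Yf b l))
      - (\<Sum>i\<in>UNIV. \<Sum>l\<in>UNIV. psmult (R l i u v) (Yf l i)))"
    by (intro eqH_diff eqH_refl eqH_sum eqH_psmult Z)
  also have "\<dots> = 0"
    by (subst (2) sum.swap) simp
  finally show ?thesis by (simp add: eqH_def)
qed

lemma tS_NA:
  assumes Q: "QYBE R" and x: "x \<in> SR_ker R"
  shows "tS R x \<in> smash_ker R"
proof -
  have gen: "tS R g \<in> smash_ker R" if gin: "g \<in> {fmul a (fmul r b) |a r b. r \<in> SR_rel R}" for g
  proof -
    obtain a r b where g: "g = fmul a (fmul r b)" "r \<in> SR_rel R" using gin by blast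
    then obtain u v where r: "r = SRr R u v" by (auto simp: SR_rel_eq)
    show ?thesis unfolding g r tS_fmul
      by (intro smash_ker_ideal[OF Q] tS_SRr)
  qed
  show ?thesis
    using kspan_islin_image[OF islin_tS gen[unfolded smash_ker_def] x[unfolded SR_ker_kspan]]
    unfolding smash_ker_def .
qed



lemma DD_bas: "DD (bas (x, w)) = (\<Sum>L\<in>LS (length w). bas ((x, zl w L), ([], zr L w)))"
  by (simp add: DD_def lin_dA)

lemma DD_pt: "DD (pt p w) = (\<Sum>L\<in>LS (length w). ptens (pt p (zl w L)) (bas ([], zr L w)))"
proof (rule lin_eqI[of "\<lambda>p. DD (pt p w)"])
  show "islin (\<lambda>p. DD (pt p w))" using islin_comp[OF islin_DD islin_pt] by blast
  show "islin (\<lambda>p. \<Sum>L\<in>LS (length w). ptens (pt p (zl w L)) (bas ([], zr L w)))"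
    by (simp add: islin_def pt_lin ptens_lin sum.distrib pm.scale_sum_right)
qed (simp add: DD_bas)

lemma DD_ptens: "DD (ptens p y) = lin (\<lambda>(a, b). ptens (pt p a) (pt fone b)) (lin dA y)"
proof (rule lin_eqI[of "\<lambda>y. DD (ptens p y)"])
  show "islin (\<lambda>y. DD (ptens p y))" using islin_comp[OF islin_DD islin_ptens2] by blast
  show "islin (\<lambda>y. lin (\<lambda>(a, b). ptens (pt p a) (pt fone b)) (lin dA y))"
    using islin_comp[OF islin_lin islin_lin] by blast
qed (simp add: pt_def[symmetric] DD_pt lin_dA fone_def)

abbreviation K2 :: "('n::finite \<Rightarrow> 'n \<Rightarrow> 'n \<Rightarrow> 'n \<Rightarrow> 'k::comm_ring_1) \<Rightarrow> _" where
  "K2 R \<equiv> tker2 (smash_mul R) (smash_ker R) sS (tS R)"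

lemma K2_gen1: "x \<in> smash_ker R \<Longrightarrow> ptens x y \<in> K2 R"
  and K2_gen2: "y \<in> smash_ker R \<Longrightarrow> ptens x y \<in> K2 R"
  and K2_rel: "ptens (smash_mul R (tS R a) g) h - ptens g (smash_mul R (sS a) h) \<in> K2 R"
  unfolding tker2_def by (rule kspan_gen, blast)+

lemma K2_add: "x \<in> K2 R \<Longrightarrow> y \<in> K2 R \<Longrightarrow> x + y \<in> K2 R"
  and K2_diff: "x \<in> K2 R \<Longrightarrow> y \<in> K2 R \<Longrightarrow> x - y \<in> K2 R"
  and K2_psmult: "x \<in> K2 R \<Longrightarrow> psmult c x \<in> K2 R"
  and K2_zero: "0 \<in> K2 R"
  and K2_sum: "(\<And>a. a \<in> A \<Longrightarrow> f a \<in> K2 R) \<Longrightarrow> sum f A \<in> K2 R"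
  and K2_lin: "(\<And>x. g x \<in> K2 R) \<Longrightarrow> lin g p \<in> K2 R"
  and K2_uminus: "x \<in> K2 R \<Longrightarrow> - x \<in> K2 R"
  unfolding tker2_def by (auto intro: kspan.intros kspan_diff kspan_sum kspan_lin kspan_uminus)

lemma DD_NH:
  assumes Q: "QYBE R" and x: "x \<in> smash_ker R"
  shows "DD x \<in> K2 R"
proof -
  have gen: "DD g \<in> K2 R" if gin: "g \<in> {ptens x y | x y. x \<in> SR_ker R} \<union> {ptens x y | x y. y \<in> AR_ker R}" for g
  proof -
    from gin obtain p y where g: "g = ptens p y" and py: "p \<in> SR_ker R \<or> y \<in> AR_ker R" by blast
    show ?thesis
    proof (cases "p \<in> SR_ker R")
      case True
      show ?thesis unfolding g DD_ptens
        by (intro K2_lin) (auto simp: pt_def intro!: K2_gen1 NH_gen1 True)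
    next
      case False
      then have y: "y \<in> AR_ker R" using py by blast
      let ?Om = "lin (\<lambda>(a, b). ptens (pt p a) (pt fone b))"
      have om: "?Om (ptens Y1 Y2) = ptens (ptens p Y1) (ptens fone Y2)" for Y1 Y2
      proof (rule bilin_eqI2[of "\<lambda>Y1 Y2. ?Om (ptens Y1 Y2)" "\<lambda>Y1 Y2. ptens (ptens p Y1) (ptens fone Y2)"])
        show "islin (\<lambda>Y1. ?Om (ptens Y1 Y2))" for Y2 using islin_comp[OF islin_lin islin_ptens1] by blast
        show "islin (\<lambda>Y2. ?Om (ptens Y1 Y2))" for Y1 using islin_comp[OF islin_lin islin_ptens2] by blast
        show "islin (\<lambda>Y1. ptens (ptens p Y1) (ptens fone Y2))" for Y2
          using islin_comp[OF islin_ptens1 islin_ptens2] by blast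
        show "islin (\<lambda>Y2. ptens (ptens p Y1) (ptens fone Y2))" for Y1
          using islin_comp[OF islin_ptens2 islin_ptens2] by blast
      qed (simp add: pt_def)
      have gen2: "?Om g' \<in> K2 R" if "g' \<in> {ptens x y | x y. x \<in> AR_ker R} \<union> {ptens x y | x y. y \<in> AR_ker R}" for g'
        using that by (auto simp: om intro: K2_gen1[OF NH_gen2] K2_gen2[OF NH_gen2])
      show ?thesis unfolding g DD_ptens
        using kspan_islin_image[OF islin_lin gen2[unfolded tker2_def] dA_AR[OF y, unfolded JA_def]]
        unfolding tker2_def .
    qed
  qed
  show ?thesis
    using kspan_islin_image[OF islin_DD gen[unfolded tker2_def] x[unfolded smash_ker_def]]
    unfolding tker2_def .
qed

lemma DD_smash_one: "DD smash_one = ptens smash_one smash_one"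
  by (simp add: smash_one_def DD_bas)

lemma DD_gen: "DD (bas ([i], [(u, v)])) = (\<Sum>l\<in>UNIV. ptens (bas ([i], [(u, l)])) (bas ([], [(l, v)])))"
  by (simp add: DD_bas sum_LS_Suc)

lemma EE_gen: "EE (bas ([i], [(u, v)])) = (if u = v then fgen i else 0)"
  by (simp add: EE_bas fgen_def')

section \<open>Coassociativity and counit\<close>

lemma coassoc: "lin (\<lambda>(x, y). lin (\<lambda>(p, q). bas (p, q, y)) (DD (bas x))) (DD h)
      - lin (\<lambda>(x, y). ptens (bas x) (DD (bas y))) (DD h) = 0"
proof -
  have "lin (\<lambda>(x, y). lin (\<lambda>(p, q). bas (p, q, y)) (DD (bas x))) (DD h)
      = lin (\<lambda>(x, y). ptens (bas x) (DD (bas y))) (DD h)"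
  proof (rule lin_eqI[of "\<lambda>h. lin (\<lambda>(x, y). lin (\<lambda>(p, q). bas (p, q, y)) (DD (bas x))) (DD h)"
        "\<lambda>h. lin (\<lambda>(x, y). ptens (bas x) (DD (bas y))) (DD h)"])
    show "islin (\<lambda>h. lin (\<lambda>(x, y). lin (\<lambda>(p, q). bas (p, q, y)) (DD (bas x))) (DD h))"
      using islin_comp[OF islin_lin islin_DD] by blast
    show "islin (\<lambda>h. lin (\<lambda>(x, y). ptens (bas x) (DD (bas y))) (DD h))"
      using islin_comp[OF islin_lin islin_DD] by blast
  next
    fix z :: "'a list \<times> ('a \<times> 'a) list"
    obtain x w where z: "z = (x, w)" by (cases z)
    have "lin (\<lambda>(x, y). lin (\<lambda>(p, q). bas (p, q, y)) (DD (bas x))) (DD (bas z))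
        = (\<Sum>L\<in>LS (length w). \<Sum>M\<in>LS (length w). bas ((x, zl w M), ([], zip M L), ([], zr L w)))"
      unfolding z DD_bas lin_sum
      by (rule sum.cong[OF refl]) (auto simp: LS_def DD_bas lin_sum zl_zl zr_zl intro!: sum.cong)
    also have "\<dots> = (\<Sum>M\<in>LS (length w). \<Sum>L\<in>LS (length w). bas ((x, zl w M), ([], zip M L), ([], zr L w)))"
      by (rule sum.swap)
    also have "\<dots> = lin (\<lambda>(x, y). ptens (bas x) (DD (bas y))) (DD (bas z))"
      unfolding z DD_bas lin_sum
      by (rule sum.cong[OF refl]) (auto simp: LS_def DD_bas ptens_sum2 zl_zr zr_zr intro!: sum.cong)
    finally show "lin (\<lambda>(x, y). lin (\<lambda>(p, q). bas (p, q, y)) (DD (bas x))) (DD (bas z))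
        = lin (\<lambda>(x, y). ptens (bas x) (DD (bas y))) (DD (bas z))" .
  qed
  then show ?thesis by simp
qed

lemma counit1: "lin (\<lambda>(x, y). smash_mul R (sS (EE (bas x))) (bas y)) (DD h) = h"
proof (rule lin_eqI[of "\<lambda>h. lin (\<lambda>(x, y). smash_mul R (sS (EE (bas x))) (bas y)) (DD h)" "\<lambda>h. h"])
  show "islin (\<lambda>h. lin (\<lambda>(x, y). smash_mul R (sS (EE (bas x))) (bas y)) (DD h))"
    using islin_comp[OF islin_lin islin_DD] by blast
next
  fix z :: "'a list \<times> ('a \<times> 'a) list"
  obtain x w where z: "z = (x, w)" by (cases z)
  have "lin (\<lambda>(x, y). smash_mul R (sS (EE (bas x))) (bas y)) (DD (bas z))
      = (\<Sum>L\<in>LS (length w). psmult (epsA (zl w L)) (pt (bas x) (zr L w)))"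
    unfolding z DD_bas lin_sum
    by (simp add: EE_bas sS_def lin_psmult smash_psmult1 smash_bas)
  also have "\<dots> = ptens (bas x) (\<Sum>L\<in>LS (length w). psmult (epsA (zl w L)) (bas (zr L w)))"
    by (simp add: pt_def ptens_lin)
  also have "\<dots> = bas z" by (simp add: counit_l z)
  finally show "lin (\<lambda>(x, y). smash_mul R (sS (EE (bas x))) (bas y)) (DD (bas z)) = bas z" .
qed simp

lemma counit2: "lin (\<lambda>(x, y). smash_mul R (tS R (EE (bas y))) (bas x)) (DD h) = h"
proof (rule lin_eqI[of "\<lambda>h. lin (\<lambda>(x, y). smash_mul R (tS R (EE (bas y))) (bas x)) (DD h)" "\<lambda>h. h"])
  show "islin (\<lambda>h. lin (\<lambda>(x, y). smash_mul R (tS R (EE (bas y))) (bas x)) (DD h))"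
    using islin_comp[OF islin_lin islin_DD] by blast
next
  fix z :: "'a list \<times> ('a \<times> 'a) list"
  obtain x w where z: "z = (x, w)" by (cases z)
  have "lin (\<lambda>(x, y). smash_mul R (tS R (EE (bas y))) (bas x)) (DD (bas z))
      = (\<Sum>L\<in>LS (length w). psmult (epsA (zr L w)) (bas (x, zl w L)))"
    unfolding z DD_bas lin_sum
    by (simp add: EE_bas tS_def lin_psmult smash_psmult1)
  also have "\<dots> = ptens (bas x) (\<Sum>L\<in>LS (length w). psmult (epsA (zr L w)) (bas (zl w L)))"
    by (simp add: ptens_lin)
  also have "\<dots> = bas z" by (simp add: counit_r z)
  finally show "lin (\<lambda>(x, y). smash_mul R (tS R (EE (bas y))) (bas x)) (DD (bas z)) = bas z" .
qed simp



lemma epsA_zip: "length N = length Q \<Longrightarrow> epsA (zip N Q) = (if N = Q then 1 else 0)"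
  by (induct N Q rule: list_induct2) auto

lemma tmH_ptens: "tm (smash_mul R) (ptens a b) (ptens c d) = ptens (smash_mul R a c) (smash_mul R b d)"
  by (rule tm_ptens) simp_all

lemma tmH_assoc: "tm (smash_mul R) (tm (smash_mul R) X Y) Z = tm (smash_mul R) X (tm (smash_mul R) Y Z)"
  by (rule tm_assoc) (simp_all add: smash_assoc)

lemma smash_bas_empty: 
  fixes R :: "'n::finite \<Rightarrow> 'n \<Rightarrow> 'n \<Rightarrow> 'n \<Rightarrow> 'k::comm_ring_1" and w w' :: "('n \<times> 'n) list"
  shows "smash_mul R (bas ([], w)) (bas ([], w')) = bas ([], w @ w')"
proof -
  have "smash_mul R (bas ([], w)) (bas ([], w')) =
     (\<Sum>L\<in>(LS (length w) :: 'n list set). psmult (epsA (zl w L)) (pt (bas []) (zr L w @ w')))"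
    using act_fone[of R, unfolded fone_def] by (simp add: smash_bas pt_psmult fmul_psmult2)
  also have "\<dots> = lin (\<lambda>v. bas ([], v @ w')) (\<Sum>L\<in>(LS (length w) :: 'n list set). psmult (epsA (zl w L)) (bas (zr L w)))"
    by (simp add: lin_sum lin_psmult)
  also have "\<dots> = bas ([], w @ w')" by (simp add: counit_l)
  finally show ?thesis .
qed

lemma DD_mul_bas:
  fixes R :: "'n::finite \<Rightarrow> 'n \<Rightarrow> 'n \<Rightarrow> 'n \<Rightarrow> 'k::comm_ring_1" and w w' :: "('n \<times> 'n) list"
  shows "DD (smash_mul R (bas (x, w)) (bas (y, w'))) = tm (smash_mul R) (DD (bas (x, w))) (DD (bas (y, w')))"
proof -
  let ?m = "length w" and ?m' = "length w'"
  define X where "X L = fmul (bas x) (act R (zl w L) (bas y))" for L :: "'n list"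
  define F where "F L M1 M2 = ptens (pt (X L) (zip L M1 @ zl w' M2)) (bas (([]::'n list), zr M1 w @ zr M2 w'))" for L M1 M2 :: "'n list"
  have "DD (smash_mul R (bas (x, w)) (bas (y, w'))) =
     (\<Sum>L\<in>(LS ?m :: 'n list set). \<Sum>M\<in>(LS (length (zr L w @ w')) :: 'n list set).
        ptens (pt (X L) (zl (zr L w @ w') M)) (bas ([], zr M (zr L w @ w'))))"
    by (simp add: smash_bas islin_sum[OF islin_DD] DD_pt X_def)
  also have "\<dots> = (\<Sum>L\<in>(LS ?m :: 'n list set). \<Sum>M1\<in>(LS ?m :: 'n list set). \<Sum>M2\<in>(LS ?m' :: 'n list set). F L M1 M2)"
  proof (rule sum.cong[OF refl])
    fix L :: "'n list" assume L: "L \<in> LS ?m"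
    then have len: "length (zr L w @ w') = ?m + ?m'" by (simp add: LS_def)
    show "(\<Sum>M\<in>(LS (length (zr L w @ w')) :: 'n list set).
        ptens (pt (X L) (zl (zr L w @ w') M)) (bas ([], zr M (zr L w @ w')))) =
        (\<Sum>M1\<in>(LS ?m :: 'n list set). \<Sum>M2\<in>(LS ?m' :: 'n list set). F L M1 M2)"
      unfolding len sum_LS_add F_def
      by (rule sum.cong[OF refl], rule sum.cong[OF refl])
         (use L in \<open>simp add: LS_def zl_append zr_append zl_zr zr_zr\<close>)
  qed
  also have "\<dots> = (\<Sum>M1\<in>(LS ?m :: 'n list set). \<Sum>M2\<in>(LS ?m' :: 'n list set). \<Sum>L\<in>(LS ?m :: 'n list set). F L M1 M2)"
    by (rule sum_rot3')
  also have "\<dots> = tm (smash_mul R) (DD (bas (x, w))) (DD (bas (y, w')))"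
  proof -
    have e: "smash_mul R (bas (x, zl w N)) (bas (y, zl w' K)) = (\<Sum>L\<in>(LS ?m :: 'n list set). pt (X L) (zip L N @ zl w' K))"
      if "N \<in> LS ?m" for N K :: "'n list"
      unfolding smash_bas X_def
      by (rule sum.cong) (use that in \<open>auto simp: LS_def zl_zl zr_zl\<close>)
    show ?thesis
      unfolding DD_bas tm_sum1 tm_sum2 tm_bas smash_bas_empty F_def
      apply (rule trans[OF _ sum.swap])
      apply (rule sum.cong[OF refl], rule sum.cong[OF refl])
      apply (simp add: e ptens_sum1)
      done
  qed
  finally show ?thesis .
qed

lemma DD_mul: "DD (smash_mul R g h) = tm (smash_mul R) (DD g) (DD h)"
proof (rule bilin_eqI2[of "\<lambda>g h. DD (smash_mul R g h)" "\<lambda>g h. tm (smash_mul R) (DD g) (DD h)"])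
  show "islin (\<lambda>g. DD (smash_mul R g h))" for h using islin_comp[OF islin_DD islin_smash1] by blast
  show "islin (\<lambda>h. DD (smash_mul R g h))" for g using islin_comp[OF islin_DD islin_smash2] by blast
  show "islin (\<lambda>g. tm (smash_mul R) (DD g) (DD h))" for h using islin_comp[OF islin_tm1 islin_DD] by blast
  show "islin (\<lambda>h. tm (smash_mul R) (DD g) (DD h))" for g using islin_comp[OF islin_tm2 islin_DD] by blast
next
  fix z z' :: "'a list \<times> ('a \<times> 'a) list"
  obtain x w where z: "z = (x, w)" by (cases z)
  obtain y w' where z': "z' = (y, w')" by (cases z')
  show "DD (smash_mul R (bas z) (bas z')) = tm (smash_mul R) (DD (bas z)) (DD (bas z'))"
    unfolding z z' by (rule DD_mul_bas)
qed



definition eqK :: "('n::finite \<Rightarrow> 'n \<Rightarrow> 'n \<Rightarrow> 'n \<Rightarrow> 'k::comm_ring_1) \<Rightarrow> _ \<Rightarrow> _ \<Rightarrow> bool" where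
  "eqK R A B \<longleftrightarrow> A - B \<in> K2 R"

lemma eqK_refl[simp]: "eqK R a a" by (simp add: eqK_def K2_zero)
lemma eqK_sym: "eqK R a b \<Longrightarrow> eqK R b a" unfolding eqK_def using K2_uminus by fastforce
lemma eqK_trans[trans]: "eqK R a b \<Longrightarrow> eqK R b c \<Longrightarrow> eqK R a c"
  unfolding eqK_def using K2_add by fastforce
lemma eqK_trans_eq1[trans]: "a = b \<Longrightarrow> eqK R b c \<Longrightarrow> eqK R a c" by simp
lemma eqK_trans_eq2[trans]: "eqK R a b \<Longrightarrow> b = c \<Longrightarrow> eqK R a c" by simp
lemma eqK_add: "eqK R a b \<Longrightarrow> eqK R c d \<Longrightarrow> eqK R (a + c) (b + d)"
  unfolding eqK_def add_diff_add' by (rule K2_add)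
lemma eqK_diff: "eqK R a b \<Longrightarrow> eqK R c d \<Longrightarrow> eqK R (a - c) (b - d)"
  unfolding eqK_def diff_diff_diff' by (rule K2_diff)
lemma eqK_sum: "(\<And>x. x \<in> A \<Longrightarrow> eqK R (f x) (g x)) \<Longrightarrow> eqK R (sum f A) (sum g A)"
  unfolding eqK_def by (simp add: sum_subtractf[symmetric] K2_sum)
lemma eqK_lin: "(\<And>x. eqK R (f x) (g x)) \<Longrightarrow> eqK R (lin f p) (lin g p)"
  unfolding eqK_def by (simp add: lin_diff_fun[symmetric] K2_lin)
lemma eqK_psmult: "eqK R a b \<Longrightarrow> eqK R (psmult c a) (psmult c b)"
  unfolding eqK_def using K2_psmult by (metis pm.scale_right_diff_distrib)
lemma eqK_islin: "islin F \<Longrightarrow> islin G \<Longrightarrow> (\<And>x. eqK R (F (bas x)) (G (bas x))) \<Longrightarrow> eqK R (F p) (G p)"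
  by (subst (1 2) islin_eq_lin[where p=p]) (auto intro: eqK_lin)
lemma eqK_ptens1: "eqH R a b \<Longrightarrow> eqK R (ptens a y) (ptens b y)"
  unfolding eqK_def eqH_def by (metis K2_gen1 ptens_diff1)
lemma eqK_ptens2: "eqH R a b \<Longrightarrow> eqK R (ptens y a) (ptens y b)"
  unfolding eqK_def eqH_def by (metis K2_gen2 ptens_diff2)
lemma eqK_rel: "eqK R (ptens (smash_mul R (tS R a) g) h) (ptens g (smash_mul R (sS a) h))"
  unfolding eqK_def by (rule K2_rel)

abbreviation tmH :: "('n::finite \<Rightarrow> 'n \<Rightarrow> 'n \<Rightarrow> 'n \<Rightarrow> 'k::comm_ring_1) \<Rightarrow> _" where
  "tmH R \<equiv> tm (smash_mul R)"

lemma tmH_left_lin: "tmH R X (ptens x y) = lin (\<lambda>(p, q). ptens (smash_mul R (bas p) x) (smash_mul R (bas q) y)) X"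
proof (rule lin_eqI[of "\<lambda>X. tmH R X (ptens x y)"])
  fix z :: "('a list \<times> ('a \<times> 'a) list) \<times> ('a list \<times> ('a \<times> 'a) list)"
  obtain p q where z: "z = (p, q)" by (cases z)
  show "tmH R (bas z) (ptens x y) = lin (\<lambda>(p, q). ptens (smash_mul R (bas p) x) (smash_mul R (bas q) y)) (bas z)"
    unfolding z ptens_bas[symmetric] tmH_ptens by simp
qed simp_all

lemma tmH_right_lin: "tmH R (ptens x y) X = lin (\<lambda>(p, q). ptens (smash_mul R x (bas p)) (smash_mul R y (bas q))) X"
proof (rule lin_eqI[of "\<lambda>X. tmH R (ptens x y) X"])
  fix z :: "('a list \<times> ('a \<times> 'a) list) \<times> ('a list \<times> ('a \<times> 'a) list)"
  obtain p q where z: "z = (p, q)" by (cases z)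
  show "tmH R (ptens x y) (bas z) = lin (\<lambda>(p, q). ptens (smash_mul R x (bas p)) (smash_mul R y (bas q))) (bas z)"
    unfolding z ptens_bas[symmetric] tmH_ptens by simp
qed simp_all

lemma K2_image:
  assumes "islin F" "\<And>x y. x \<in> smash_ker R \<Longrightarrow> F (ptens x y) \<in> K2 R"
    "\<And>x y. y \<in> smash_ker R \<Longrightarrow> F (ptens x y) \<in> K2 R"
    "\<And>a g h. F (ptens (smash_mul R (tS R a) g) h - ptens g (smash_mul R (sS a) h)) \<in> K2 R"
    "Z \<in> K2 R"
  shows "F Z \<in> K2 R"
proof -
  have gen: "F g \<in> K2 R" if "g \<in> {ptens x y | x y. x \<in> smash_ker R} \<union> {ptens x y | x y. y \<in> smash_ker R}
     \<union> {ptens (smash_mul R (tS R a) x) y - ptens x (smash_mul R (sS a) y) | a x y. True}" for g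
    using that assms(2-4) by blast
  show ?thesis
    using kspan_islin_image[OF assms(1) gen[unfolded tker2_def] assms(5)[unfolded tker2_def]]
    unfolding tker2_def .
qed

lemma K2_right:
  assumes Q: "QYBE R" and Z: "Z \<in> K2 R"
  shows "tmH R Z Y \<in> K2 R"
proof -
  have "tmH R Z (bas y) \<in> K2 R" for y
  proof -
    obtain P Q' where yy: "y = (P, Q')" by (cases y)
    have y: "bas y = ptens (bas P) (bas Q')" by (simp add: yy)
    show ?thesis unfolding y
    proof (rule K2_image[of "\<lambda>Z. tmH R Z (ptens (bas P) (bas Q'))", OF _ _ _ _ Z])
      show "islin (\<lambda>Z. tmH R Z (ptens (bas P) (bas Q')))" by simp
      show "tmH R (ptens x y) (ptens (bas P) (bas Q')) \<in> K2 R" if "x \<in> smash_ker R" for x y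
        unfolding tmH_ptens by (intro K2_gen1 smash_ker_ideal[OF Q] that)
      show "tmH R (ptens x y) (ptens (bas P) (bas Q')) \<in> K2 R" if "y \<in> smash_ker R" for x y
        unfolding tmH_ptens by (intro K2_gen2 smash_ker_ideal[OF Q] that)
      show "tmH R (ptens (smash_mul R (tS R a) g) h - ptens g (smash_mul R (sS a) h)) (ptens (bas P) (bas Q')) \<in> K2 R" for a g h
        unfolding tm_diff1 tmH_ptens smash_assoc by (rule K2_rel)
    qed
  qed
  then have "lin (\<lambda>y. tmH R Z (bas y)) Y \<in> K2 R" by (intro K2_lin)
  moreover have "tmH R Z Y = lin (\<lambda>y. tmH R Z (bas y)) Y" by (rule islin_eq_lin) simp
  ultimately show ?thesis by simp
qed

lemma eqK_right: "QYBE R \<Longrightarrow> eqK R A B \<Longrightarrow> eqK R (tmH R A Y) (tmH R B Y)"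
  unfolding eqK_def by (metis K2_right tm_diff1)

lemma K2_left_s:
  assumes Q: "QYBE R" and Z: "Z \<in> K2 R"
  shows "tmH R (ptens (sS a) smash_one) Z \<in> K2 R"
proof (rule K2_image[of "tmH R (ptens (sS a) smash_one)", OF _ _ _ _ Z])
  show "islin (tmH R (ptens (sS a) smash_one))" by simp
  show "tmH R (ptens (sS a) smash_one) (ptens x y) \<in> K2 R" if "x \<in> smash_ker R" for x y
    unfolding tmH_ptens by (intro K2_gen1 smash_ker_ideal[OF Q] that)
  show "tmH R (ptens (sS a) smash_one) (ptens x y) \<in> K2 R" if "y \<in> smash_ker R" for x y
    unfolding tmH_ptens using that by (simp add: K2_gen2)
  fix b g h
  have "tmH R (ptens (sS a) smash_one) (ptens (smash_mul R (tS R b) g) h - ptens g (smash_mul R (sS b) h))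
     = ptens (smash_mul R (smash_mul R (sS a) (tS R b)) g) h - ptens (smash_mul R (sS a) g) (smash_mul R (sS b) h)"
    unfolding tm_diff2 tmH_ptens by (simp add: smash_assoc)
  also have "eqK R \<dots> (ptens (smash_mul R (smash_mul R (tS R b) (sS a)) g) h - ptens (smash_mul R (sS a) g) (smash_mul R (sS b) h))"
    using comm_sS_tS[OF Q, of a b] unfolding comm_def
    by (intro eqK_diff eqK_refl eqK_ptens1 eqH_mul1[OF Q])
  also have "eqK R \<dots> 0"
    unfolding smash_assoc eqK_def by (simp add: K2_rel)
  finally show "tmH R (ptens (sS a) smash_one) (ptens (smash_mul R (tS R b) g) h - ptens g (smash_mul R (sS b) h)) \<in> K2 R"
    by (simp add: eqK_def)
qed

definition Th :: "('n::finite \<Rightarrow> 'n \<Rightarrow> 'n \<Rightarrow> 'n \<Rightarrow> 'k::comm_ring_1) \<Rightarrow> ('n list \<Rightarrow>\<^sub>0 'k) \<Rightarrow> _" where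
  "Th R a = ptens (tS R a) smash_one - ptens smash_one (sS a)"

definition Tak :: "('n::finite \<Rightarrow> 'n \<Rightarrow> 'n \<Rightarrow> 'n \<Rightarrow> 'k::comm_ring_1) \<Rightarrow> _ \<Rightarrow> bool" where
  "Tak R g \<longleftrightarrow> (\<forall>a. tmH R (DD g) (Th R a) \<in> K2 R)"

lemma K2_left_D:
  assumes Q: "QYBE R" and T: "Tak R g" and Z: "Z \<in> K2 R"
  shows "tmH R (DD g) Z \<in> K2 R"
proof (rule K2_image[of "tmH R (DD g)", OF _ _ _ _ Z])
  show "islin (tmH R (DD g))" by simp
  show "tmH R (DD g) (ptens x y) \<in> K2 R" if "x \<in> smash_ker R" for x y
    unfolding tmH_left_lin by (intro K2_lin) (auto intro: K2_gen1 smash_ker_ideal[OF Q] that)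
  show "tmH R (DD g) (ptens x y) \<in> K2 R" if "y \<in> smash_ker R" for x y
    unfolding tmH_left_lin by (intro K2_lin) (auto intro: K2_gen2 smash_ker_ideal[OF Q] that)
  fix b G H
  have "tmH R (DD g) (ptens (smash_mul R (tS R b) G) H - ptens G (smash_mul R (sS b) H))
     = tmH R (tmH R (DD g) (Th R b)) (ptens G H)"
    unfolding Th_def tm_diff1 tm_diff2 tmH_assoc tmH_ptens by simp
  also have "\<dots> \<in> K2 R"
  proof -
    have "tmH R (DD g) (Th R b) \<in> K2 R" using T unfolding Tak_def by blast
    then show ?thesis by (rule K2_right[OF Q])
  qed
  finally show "tmH R (DD g) (ptens (smash_mul R (tS R b) G) H - ptens G (smash_mul R (sS b) H)) \<in> K2 R" .
qed

lemma Tak_mul: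
  assumes Q: "QYBE R" and Tg: "Tak R g" and Th: "Tak R h"
  shows "Tak R (smash_mul R g h)"
  unfolding Tak_def[of R "smash_mul R g h"] DD_mul tmH_assoc
proof
  fix a
  have "tmH R (DD h) (Th R a) \<in> K2 R" using Th unfolding Tak_def by blast
  then show "tmH R (DD g) (tmH R (DD h) (Th R a)) \<in> K2 R" by (rule K2_left_D[OF Q Tg])
qed

lemma Tak_lin: "(\<And>x. Tak R (f x)) \<Longrightarrow> Tak R (lin f p)"
proof -
  assume T: "\<And>x. Tak R (f x)"
  show "Tak R (lin f p)" unfolding Tak_def
  proof
    fix a
    have I: "islin (\<lambda>X. tmH R (DD X) (Th R a))" using islin_comp[OF islin_tm1 islin_DD] by blast
    have "tmH R (DD (lin f p)) (Th R a) = lin (\<lambda>x. tmH R (DD (f x)) (Th R a)) p"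
      by (rule lin_comp_islin[OF I])
    also have "\<dots> \<in> K2 R" using T unfolding Tak_def by (intro K2_lin) blast
    finally show "tmH R (DD (lin f p)) (Th R a) \<in> K2 R" .
  qed
qed

lemma DD_sS: "DD (sS a) = ptens (sS a) smash_one"
proof (rule lin_eqI[of "\<lambda>a. DD (sS a)" "\<lambda>a. ptens (sS a) smash_one"])
  show "islin (\<lambda>a. DD (sS a))" using islin_comp[OF islin_DD islin_sS] by blast
  show "islin (\<lambda>a. ptens (sS a) smash_one)" using islin_comp[OF islin_ptens1 islin_sS] by blast
qed (simp add: sS_def DD_bas smash_one_def)

lemma Tak_sS: "QYBE R \<Longrightarrow> Tak R (sS x)"
  unfolding Tak_def
proof
  fix a assume Q: "QYBE R"
  have "tmH R (DD (sS x)) (Th R a) = ptens (smash_mul R (sS x) (tS R a)) smash_one - ptens (sS x) (sS a)"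
    by (simp add: DD_sS Th_def tm_diff2 tmH_ptens)
  also have "eqK R \<dots> (ptens (smash_mul R (tS R a) (sS x)) smash_one - ptens (sS x) (smash_mul R (sS a) smash_one))"
    using comm_sS_tS[OF Q, of x a] unfolding comm_def by (intro eqK_diff eqK_ptens1) simp_all
  also have "eqK R \<dots> 0" unfolding eqK_def using K2_rel[of R a "sS x" smash_one] by simp
  finally show "tmH R (DD (sS x)) (Th R a) \<in> K2 R" by (simp add: eqK_def)
qed

lemma Tak_one: "Tak R smash_one"
  unfolding Tak_def DD_smash_one Th_def
  by (auto simp: tm_diff2 tmH_ptens intro: K2_rel[of R _ smash_one smash_one, simplified])



lemma eqK_left_s: "QYBE R \<Longrightarrow> eqK R A B \<Longrightarrow> eqK R (tmH R (ptens (sS a) smash_one) A) (tmH R (ptens (sS a) smash_one) B)"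
  unfolding eqK_def by (metis K2_left_s tm_diff2)

section \<open>Takeuchi property\<close>

lemma tgen_gen_eq:
  fixes R :: "'n::finite \<Rightarrow> 'n \<Rightarrow> 'n \<Rightarrow> 'n \<Rightarrow> 'k::comm_ring_1"
  shows "eqH R (smash_mul R (bas ([], [(p, m)])) (tgen i))
     (\<Sum>l\<in>UNIV. \<Sum>r\<in>UNIV. psmult (R r l i m) (smash_mul R (tgen r) (bas ([], [(p, l)]))))"
proof -
  have L: "smash_mul R (bas ([], [(p, m)])) (tgen i) =
      (\<Sum>u\<in>UNIV. \<Sum>y\<in>UNIV. \<Sum>z\<in>UNIV. psmult (R z p u y) (bas ([z], [(y, m), (u, i)])))"
    unfolding tgen_def smash_sum2
    by (simp del: acg.simps add: smash_bas sum_LS_Suc acg_single pt_lin fgen_def' fone_fmul[unfolded fone_def])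
  have Rt: "smash_mul R (tgen r) (bas ([], [(p, l)])) = (\<Sum>z\<in>UNIV. bas ([z], [(z, r), (p, l)]))" for r l
    unfolding tgen_def smash_sum1
    using act_fone[of R, unfolded fone_def]
    by (simp add: smash_bas sum_LS_Suc fmul_psmult2 pt_psmult if_distrib[of "\<lambda>c. psmult c _"] cong: if_cong)
  have A: "(\<Sum>z\<in>UNIV. ptens (bas [z]) (ARr R z p m i)) =
     (\<Sum>z\<in>(UNIV::'n set). \<Sum>y\<in>(UNIV::'n set). \<Sum>u\<in>(UNIV::'n set). psmult (R z p u y) (bas ([z], [(y, m), (u, i)])))
   - (\<Sum>z\<in>(UNIV::'n set). \<Sum>l\<in>(UNIV::'n set). \<Sum>r\<in>(UNIV::'n set). psmult (R r l i m) (bas ([z], [(z, r), (p, l)])))"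
    by (simp add: ARr_def ptens_lin sum_subtractf)
  have "smash_mul R (bas ([], [(p, m)])) (tgen i) =
      (\<Sum>l\<in>UNIV. \<Sum>r\<in>UNIV. psmult (R r l i m) (smash_mul R (tgen r) (bas ([], [(p, l)]))))
      + (\<Sum>z\<in>UNIV. ptens (bas [z]) (ARr R z p m i))"
    unfolding A L Rt pm.scale_sum_right
    by (subst sum_rev3, subst (2) sum_rot3) simp
  also have "eqH R \<dots> (\<Sum>l\<in>UNIV. \<Sum>r\<in>UNIV. psmult (R r l i m) (smash_mul R (tgen r) (bas ([], [(p, l)]))))"
    by (rule eqH_0) (intro NH_sum NH_gen2 ARr_in)
  finally show ?thesis .
qed

lemma Tak_gen_step:
  fixes R :: "'n::finite \<Rightarrow> 'n \<Rightarrow> 'n \<Rightarrow> 'n \<Rightarrow> 'k::comm_ring_1"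
  shows "eqK R (tmH R (DD (bas ([], [(p, q)]))) (ptens (tgen i) smash_one))
              (tmH R (DD (bas ([], [(p, q)]))) (ptens smash_one (sS (fgen i))))"
proof -
  have X: "DD (bas ([], [(p, q)])) = (\<Sum>l\<in>UNIV. ptens (bas ([]::'n list, [(p, l)])) (bas ([], [(l, q)])))"
    by (simp add: DD_bas sum_LS_Suc)
  have s: "smash_mul R (bas ([], [(l, q)])) (sS (fgen i)) =
      (\<Sum>m\<in>UNIV. \<Sum>r\<in>UNIV. psmult (R r l i m) (smash_mul R (sS (fgen r)) (bas ([], [(m, q)]))))" for l
    unfolding sS_mul_pt pt_bas[symmetric] sS_pt smash_pt
    by (simp del: acg.simps add: sum_LS_Suc lin_acg_single pt_lin fone_def[symmetric] del: pt_bas)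
  have "tmH R (DD (bas ([], [(p, q)]))) (ptens (tgen i) smash_one) =
      (\<Sum>m\<in>UNIV. ptens (smash_mul R (bas ([], [(p, m)])) (tgen i)) (bas ([], [(m, q)])))"
    unfolding X tm_sum1 tmH_ptens by simp
  also have "eqK R \<dots> (\<Sum>m\<in>UNIV. ptens (\<Sum>l\<in>UNIV. \<Sum>r\<in>UNIV. psmult (R r l i m) (smash_mul R (tgen r) (bas ([], [(p, l)])))) (bas ([], [(m, q)])))"
    by (intro eqK_sum eqK_ptens1 tgen_gen_eq)
  also have "\<dots> = (\<Sum>l\<in>UNIV. \<Sum>m\<in>UNIV. \<Sum>r\<in>UNIV. psmult (R r l i m) (ptens (smash_mul R (tS R (fgen r)) (bas ([], [(p, l)]))) (bas ([], [(m, q)]))))"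
    by (simp add: ptens_lin tS_fgen) (rule sum.swap)
  also have "eqK R \<dots> (\<Sum>l\<in>UNIV. \<Sum>m\<in>UNIV. \<Sum>r\<in>UNIV. psmult (R r l i m) (ptens (bas ([], [(p, l)])) (smash_mul R (sS (fgen r)) (bas ([], [(m, q)])))))"
    by (intro eqK_sum eqK_psmult eqK_rel)
  also have "\<dots> = tmH R (DD (bas ([], [(p, q)]))) (ptens smash_one (sS (fgen i)))"
    unfolding X tm_sum1 tmH_ptens by (simp add: s ptens_lin)
  finally show ?thesis .
qed

lemma Tak_gen:
  assumes Q: "QYBE R"
  shows "Tak R (bas ([], [(p, q)]))"
proof -
  let ?X = "DD (bas ([], [(p, q)]))"
  have w: "eqK R (tmH R ?X (ptens (tS R (bas a)) smash_one)) (tmH R ?X (ptens smash_one (sS (bas a))))" for a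
  proof (induct a)
    case Nil
    then show ?case by (simp add: tS_def sS_fone[unfolded fone_def])
  next
    case (Cons i a)
    have e1: "tS R (bas (i # a)) = smash_mul R (tS R (bas a)) (tgen i)" by (simp add: tS_def)
    have e2: "sS (bas (i # a)) = smash_mul R (sS (fgen i)) (sS (bas a))" by (rule sS_cons)
    have "tmH R ?X (ptens (tS R (bas (i # a))) smash_one) = tmH R (tmH R ?X (ptens (tS R (bas a)) smash_one)) (ptens (tgen i) smash_one)"
      unfolding e1 tmH_assoc tmH_ptens by simp
    also have "eqK R \<dots> (tmH R (tmH R ?X (ptens smash_one (sS (bas a)))) (ptens (tgen i) smash_one))"
      by (rule eqK_right[OF Q Cons])
    also have "\<dots> = tmH R (tmH R ?X (ptens (tgen i) smash_one)) (ptens smash_one (sS (bas a)))"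
      unfolding tmH_assoc tmH_ptens by simp
    also have "eqK R \<dots> (tmH R (tmH R ?X (ptens smash_one (sS (fgen i)))) (ptens smash_one (sS (bas a))))"
      by (rule eqK_right[OF Q Tak_gen_step])
    also have "\<dots> = tmH R ?X (ptens smash_one (sS (bas (i # a))))"
      unfolding e2 tmH_assoc tmH_ptens by simp
    finally show ?case .
  qed
  have "eqK R (tmH R ?X (ptens (tS R a) smash_one)) (tmH R ?X (ptens smash_one (sS a)))" for a
  proof (rule eqK_islin[of "\<lambda>a. tmH R ?X (ptens (tS R a) smash_one)" "\<lambda>a. tmH R ?X (ptens smash_one (sS a))"])
    show "islin (\<lambda>a. tmH R ?X (ptens (tS R a) smash_one))"
      using islin_comp[OF islin_tm2 islin_comp[OF islin_ptens1 islin_tS]] by blast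
    show "islin (\<lambda>a. tmH R ?X (ptens smash_one (sS a)))"
      using islin_comp[OF islin_tm2 islin_comp[OF islin_ptens2 islin_sS]] by blast
  qed (rule w)
  then show ?thesis unfolding Tak_def Th_def tm_diff2 eqK_def by blast
qed

lemma bas_empty_cons: "bas ([], g # w) = smash_mul R (bas ([], [g])) (bas ([], w))"
  by (simp add: smash_bas_empty)

lemma Tak_all:
  assumes Q: "QYBE R"
  shows "Tak R h"
proof -
  have e: "Tak R (bas ([], w))" for w
  proof (induct w)
    case Nil
    then show ?case using Tak_one[of R] by (simp add: smash_one_def)
  next
    case (Cons g w)
    obtain p q where g: "g = (p, q)" by (cases g)
    show ?case
      by (subst bas_empty_cons[of _ _ R], unfold g, rule Tak_mul[OF Q Tak_gen[OF Q] Cons])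
  qed
  have "Tak R (bas z)" for z
  proof -
    obtain x w where z: "z = (x, w)" by (cases z)
    have "bas z = smash_mul R (sS (bas x)) (bas ([], w))"
      using sS_mul_pt[of R "bas x" "bas []" w] by (simp add: z)
    then show ?thesis by (simp add: Tak_mul[OF Q Tak_sS[OF Q] e])
  qed
  then have "Tak R (lin bas h)" by (intro Tak_lin)
  then show ?thesis by (simp add: lin_expand)
qed

lemma takeuchi:
  assumes Q: "QYBE R"
  shows "lin (\<lambda>(x, y). ptens (smash_mul R (bas x) (tS R a)) (bas y)) (DD h)
      - lin (\<lambda>(x, y). ptens (bas x) (smash_mul R (bas y) (sS a))) (DD h) \<in> K2 R"
proof -
  have "lin (\<lambda>(x, y). ptens (smash_mul R (bas x) (tS R a)) (bas y)) (DD h)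
      - lin (\<lambda>(x, y). ptens (bas x) (smash_mul R (bas y) (sS a))) (DD h) = tmH R (DD h) (Th R a)"
    unfolding Th_def tm_diff2 tmH_left_lin by simp
  then show ?thesis using Tak_all[OF Q] unfolding Tak_def by simp
qed

lemma DD_tgen: "DD (tgen u) = (\<Sum>l\<in>UNIV. ptens (tgen l) (bas ([], [(l, u)])))"
  unfolding tgen_def islin_sum[OF islin_DD]
  by (simp add: DD_bas sum_LS_Suc ptens_sum1) (rule sum.swap)

lemma DD_TT:
  assumes Q: "QYBE R"
  shows "eqK R (DD (TT R b)) (ptens smash_one (TT R b))"
proof (induct b)
  case Nil
  then show ?case by (simp add: DD_smash_one)
next
  case (Cons u b)
  have "DD (TT R (u # b)) = tmH R (DD (TT R b)) (DD (tgen u))" by (simp add: DD_mul)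
  also have "eqK R \<dots> (tmH R (ptens smash_one (TT R b)) (DD (tgen u)))"
    by (rule eqK_right[OF Q Cons])
  also have "\<dots> = (\<Sum>l\<in>UNIV. ptens (smash_mul R (tS R (fgen l)) smash_one) (smash_mul R (TT R b) (bas ([], [(l, u)]))))"
    unfolding DD_tgen tm_sum2 tmH_ptens by (simp add: tS_fgen)
  also have "eqK R \<dots> (\<Sum>l\<in>UNIV. ptens smash_one (smash_mul R (sS (fgen l)) (smash_mul R (TT R b) (bas ([], [(l, u)])))))"
    by (intro eqK_sum eqK_rel)
  also have "eqK R \<dots> (\<Sum>l\<in>UNIV. ptens smash_one (smash_mul R (TT R b) (smash_mul R (sS (fgen l)) (bas ([], [(l, u)])))))"
  proof (intro eqK_sum eqK_ptens2)
    fix l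
    show "eqH R (smash_mul R (sS (fgen l)) (smash_mul R (TT R b) (bas ([], [(l, u)]))))
        (smash_mul R (TT R b) (smash_mul R (sS (fgen l)) (bas ([], [(l, u)]))))"
      using eqH_mul1[OF Q comm_sS_TT[OF Q, of l b, unfolded comm_def], of "bas ([], [(l, u)])"]
      by (simp add: smash_assoc)
  qed
  also have "\<dots> = ptens smash_one (TT R (u # b))"
    by (simp add: ptens_sum2[symmetric] smash_sum2[symmetric] tgen_def sS_fgen smash_bas)
  finally show ?case .
qed

lemma DD_tS: "QYBE R \<Longrightarrow> eqK R (DD (tS R b)) (ptens smash_one (tS R b))"
  by (rule eqK_islin[of "\<lambda>b. DD (tS R b)" "\<lambda>b. ptens smash_one (tS R b)"])
     (auto simp: tS_def DD_TT intro: islin_comp)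

lemma cond_st:
  assumes Q: "QYBE R"
  shows "DD (smash_mul R (sS a) (smash_mul R (tS R b) h))
      - lin (\<lambda>(x, y). ptens (smash_mul R (sS a) (bas x)) (smash_mul R (tS R b) (bas y))) (DD h) \<in> K2 R"
proof -
  have "DD (smash_mul R (sS a) (smash_mul R (tS R b) h)) = tmH R (ptens (sS a) smash_one) (tmH R (DD (tS R b)) (DD h))"
    by (simp add: DD_mul DD_sS)
  also have "eqK R \<dots> (tmH R (ptens (sS a) smash_one) (tmH R (ptens smash_one (tS R b)) (DD h)))"
    by (rule eqK_left_s[OF Q eqK_right[OF Q DD_tS[OF Q]]])
  also have "\<dots> = lin (\<lambda>(x, y). ptens (smash_mul R (sS a) (bas x)) (smash_mul R (tS R b) (bas y))) (DD h)"
  proof (rule lin_eqI[of "\<lambda>Y. tmH R (ptens (sS a) smash_one) (tmH R (ptens smash_one (tS R b)) Y)"])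
    show "islin (\<lambda>Y. tmH R (ptens (sS a) smash_one) (tmH R (ptens smash_one (tS R b)) Y))"
      using islin_comp[OF islin_tm2 islin_tm2] by blast
  next
    fix z :: "('a list \<times> ('a \<times> 'a) list) \<times> ('a list \<times> ('a \<times> 'a) list)"
    obtain x y where z: "z = (x, y)" by (cases z)
    show "tmH R (ptens (sS a) smash_one) (tmH R (ptens smash_one (tS R b)) (bas z)) =
      lin (\<lambda>(x, y). ptens (smash_mul R (sS a) (bas x)) (smash_mul R (tS R b) (bas y))) (bas z)"
      unfolding z ptens_bas[symmetric] tmH_ptens by simp
  qed simp
  finally show ?thesis by (simp add: eqK_def)
qed



lemma lin_mod_islin: "islin f \<Longrightarrow> (\<forall>x\<in>N. f x \<in> N') \<Longrightarrow> 0 \<in> N' \<Longrightarrow> lin_mod N f N'"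
  unfolding lin_mod_def islin_def by simp

theorem proposition4p3:
  fixes R :: "'n::finite \<Rightarrow> 'n \<Rightarrow> 'n \<Rightarrow> 'n \<Rightarrow> 'k::comm_ring_1"
  assumes "QYBE R"
  shows "\<exists>s t D E.
    bialgebroid fmul fone (SR_ker R) (smash_mul R) smash_one (smash_ker R) s t D E \<and>
    (\<forall>i. s (fgen i) - bas ([i], []) \<in> smash_ker R) \<and>
    (\<forall>i. t (fgen i) - (\<Sum>u\<in>UNIV. bas ([u], [(u, i)])) \<in> smash_ker R) \<and>
    (\<forall>i u v. D (bas ([i], [(u, v)]))
       - (\<Sum>l\<in>UNIV. ptens (bas ([i], [(u, l)])) (bas ([], [(l, v)])))
       \<in> tker2 (smash_mul R) (smash_ker R) s t) \<and>
    (\<forall>i u v. E (bas ([i], [(u, v)])) - (if u = v then fgen i else 0) \<in> SR_ker R)"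
proof -
  note Q = assms
  have NH0: "0 \<in> smash_ker R" by (rule NH_zero)
  have NA0: "0 \<in> SR_ker R" by (rule SR_ker_zero)
  have K0: "0 \<in> K2 R" by (rule K2_zero)
  have B: "bialgebroid fmul fone (SR_ker R) (smash_mul R) smash_one (smash_ker R) sS (tS R) DD EE"
    unfolding bialgebroid_def
  proof (intro conjI allI)
    show "quot_alg fmul fone (SR_ker R)" by (rule quot_alg_SR)
    show "quot_alg (smash_mul R) smash_one (smash_ker R)" by (rule quot_alg_smash[OF Q])
    show "lin_mod (SR_ker R) sS (smash_ker R)"
      by (rule lin_mod_islin) (auto intro: sS_in NH0)
    show "sS (fmul a b) - smash_mul R (sS a) (sS b) \<in> smash_ker R" for a b
      by (simp add: sS_mul NH0)
    show "sS fone - smash_one \<in> smash_ker R" by (simp add: sS_fone NH0)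
    show "lin_mod (SR_ker R) (tS R) (smash_ker R)"
      by (rule lin_mod_islin) (auto intro: tS_NA[OF Q] NH0)
    show "tS R (fmul a b) - smash_mul R (tS R b) (tS R a) \<in> smash_ker R" for a b
      by (simp add: tS_fmul NH0)
    show "tS R fone - smash_one \<in> smash_ker R" by (simp add: tS_fone NH0)
    show "smash_mul R (sS a) (tS R b) - smash_mul R (tS R b) (sS a) \<in> smash_ker R" for a b
      by (rule st_comm[OF Q])
    show "lin_mod (smash_ker R) DD (K2 R)"
      by (rule lin_mod_islin) (auto intro: DD_NH[OF Q] K0)
    show "lin_mod (smash_ker R) EE (SR_ker R)"
      by (rule lin_mod_islin) (auto intro: EE_NH[OF Q] NA0)
    show "DD (smash_mul R (sS a) (smash_mul R (tS R b) h)) -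
        lin (\<lambda>(x, y). ptens (smash_mul R (sS a) (bas x)) (smash_mul R (tS R b) (bas y))) (DD h) \<in> K2 R" for a b h
      by (rule cond_st[OF Q])
    show "EE (smash_mul R (sS a) (smash_mul R (tS R b) h)) - fmul a (fmul (EE h) b) \<in> SR_ker R" for a b h
      unfolding EE_sS_mul fmul_diff2[symmetric]
      using EE_tS[OF Q, of b h] unfolding eqS_def by (rule SR_ker_mul(2))
    show "lin (\<lambda>(x, y). lin (\<lambda>(p, q). bas (p, q, y)) (DD (bas x))) (DD h) -
        lin (\<lambda>(x, y). ptens (bas x) (DD (bas y))) (DD h) \<in> tker3 (smash_mul R) (smash_ker R) sS (tS R)" for h
      unfolding coassoc tker3_def by (rule kspan_zero)
    show "lin (\<lambda>(x, y). smash_mul R (sS (EE (bas x))) (bas y)) (DD h) - h \<in> smash_ker R" for h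
      by (simp add: counit1 NH0)
    show "lin (\<lambda>(x, y). smash_mul R (tS R (EE (bas y))) (bas x)) (DD h) - h \<in> smash_ker R" for h
      by (simp add: counit2 NH0)
    show "lin (\<lambda>(x, y). ptens (smash_mul R (bas x) (tS R a)) (bas y)) (DD h) -
        lin (\<lambda>(x, y). ptens (bas x) (smash_mul R (bas y) (sS a))) (DD h) \<in> K2 R" for h a
      by (rule takeuchi[OF Q])
    show "DD (smash_mul R g h) -
        bilin (\<lambda>(x, y) (x', y'). ptens (smash_mul R (bas x) (bas x')) (smash_mul R (bas y) (bas y'))) (DD g) (DD h)
        \<in> K2 R" for g h
      using DD_mul[of R g h] unfolding tm_def by (simp add: K0)
    show "DD smash_one - ptens smash_one smash_one \<in> K2 R" by (simp add: DD_smash_one K0)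
    show "EE smash_one - fone \<in> SR_ker R" by (simp add: smash_one_def EE_bas fone_def NA0)
    show "EE (smash_mul R g h) - EE (smash_mul R g (sS (EE h))) \<in> SR_ker R" for g h
      by (simp add: EE_mul_sEE[of R g h] NA0)
    show "EE (smash_mul R g h) - EE (smash_mul R g (tS R (EE h))) \<in> SR_ker R" for g h
      using EE_mul_tS[OF Q, of g "EE h"] EE_mul_sEE[of R g h]
      by (simp add: eqS_def eqS_sym[unfolded eqS_def])
  qed
  show ?thesis
  proof (intro exI conjI allI)
    show "bialgebroid fmul fone (SR_ker R) (smash_mul R) smash_one (smash_ker R) sS (tS R) DD EE" by (rule B)
    show "sS (fgen i) - bas ([i], []) \<in> smash_ker R" for i by (simp add: sS_fgen NH0)
    show "tS R (fgen i) - (\<Sum>u\<in>UNIV. bas ([u], [(u, i)])) \<in> smash_ker R" for i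
      by (simp add: tS_fgen tgen_def NH0)
    show "DD (bas ([i], [(u, v)])) - (\<Sum>l\<in>UNIV. ptens (bas ([i], [(u, l)])) (bas ([], [(l, v)])))
       \<in> tker2 (smash_mul R) (smash_ker R) sS (tS R)" for i u v
      by (simp add: DD_gen K0 del: ptens_bas)
    show "EE (bas ([i], [(u, v)])) - (if u = v then fgen i else 0) \<in> SR_ker R" for i u v
      by (simp add: EE_gen NA0)
  qed
qed

end
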